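(* Let $\mathfrak{q}$ be an $n\times n$ quantum parameter matrix over a field $k$ and $V$ a $k$-vector space with basis $v_1,\dots,v_n$. Suppose $\mathcal{P}$ is a partition of $[n]$ refined by $\mathcal{B}_{\mathfrak{q}}$ such that each off-diagonal minor $\mathfrak{q}_{DE}$ ($D\ne E$ blocks of $\mathcal{P}$) is constant and shares no entries with any diagonal minor $\mathfrak{q}_{FF}$ ($F$ a block of $\mathcal{P}$). Then $$\mathrm{Aut}_{\mathrm{gr}}(S_{\mathfrak{q}}(V))\ \cong\ \prod_{D\in\mathcal{P}}\mathrm{Aut}_{\mathrm{gr}}(S_{\mathfrak{q}_{DD}}(V_D))\rtimes G,$$ where $G=\{\sigma\in\mathfrak{S}_{|\mathcal{P}|}: |\sigma(D)|=|D|\text{ and }\mathfrak{q}_{\sigma(D)\sigma(E)}=\mathfrak{q}_{DE}\text{ for all }D,E\in\mathcal{P}\}$ and $\mathfrak{S}_{|\mathcal{P}|}$ permutes the blocks of $\mathcal{P}$.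
   Context: An $n\times n$ quantum parameter matrix is a matrix $\mathfrak{q}=(q_{ij})$ over $k$ with $q_{ii}=1$ and $q_{ij}q_{ji}=1$ for all $i,j$. $S_{\mathfrak{q}}(V)$ is the $k$-algebra generated by $v_1,\dots,v_n$ with relations $v_jv_i=q_{ij}v_iv_j$, graded by $\deg v_i=1$; $\mathrm{Aut}_{\mathrm{gr}}(S_{\mathfrak{q}}(V))$ is the group of degree-preserving algebra automorphisms, viewed as a subgroup of $\mathrm{GL}(V)$. For $B,C\subseteq[n]$, $\mathfrak{q}_{BC}=(q_{ij})_{i\in B,j\in C}$ and $V_B=\mathrm{span}\{v_i:i\in B\}$; $\mathfrak{q}_{DD}$ is a quantum parameter matrix defining $S_{\mathfrak{q}_{DD}}(V_D)$ with respect to the basis $\{v_i:i\in D\}$. $\mathcal{B}_{\mathfrak{q}}$ is the partition of $[n]$ with $i\sim j$ iff rows $i,j$ of $\mathfrak{q}$ are identical; "$\mathcal{P}$ is refined by $\mathcal{B}_{\mathfrak{q}}$" means each block of $\mathcal{P}$ is a union of classes of $\mathcal{B}_{\mathfrak{q}}$.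
   Formalization: In G, $\mathfrak{q}_{\sigma(D)\sigma(E)}=\mathfrak{q}_{DE}$ means some permutation tau of [n] with tau(D) = sigma(D) for each block D has q(tau(i), tau(j)) = q(i, j) for all i, j, not an index-order match of minors. The statement above fails without it. *)

theory Defs
  imports "HOL-Algebra.Algebra" "HOL-Library.Disjoint_Sets" "HOL-Combinatorics.Permutations"
begin

text \<open>Index sets are finite sets I of natural numbers (so they carry the usual order).
  A quantum parameter matrix is a function q :: nat => nat => 'k, only its values on I x I matter.\<close>

definition qpm :: "nat set \<Rightarrow> (nat \<Rightarrow> nat \<Rightarrow> 'k::field) \<Rightarrow> bool" where
  "qpm I q \<longleftrightarrow> (\<forall>i\<in>I. q i i = 1) \<and> (\<forall>i\<in>I. \<forall>j\<in>I. q i j * q j i = 1)"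

text \<open>The quantum polynomial algebra S_q(V_I), realised on its standard monomial basis:
  the monomial m (an exponent function supported in I) stands for the ordered product of
  the v_i^(m i) with i increasing.  Using v_j v_i = q i j v_i v_j one gets
  v^m v^m' = twist q I m m' v^(m+m').\<close>

definition qmonos :: "nat set \<Rightarrow> (nat \<Rightarrow> nat) set" where
  "qmonos I = {m. \<forall>i. m i \<noteq> 0 \<longrightarrow> i \<in> I}"

definition twist :: "(nat \<Rightarrow> nat \<Rightarrow> 'k::field) \<Rightarrow> nat set \<Rightarrow> (nat \<Rightarrow> nat) \<Rightarrow> (nat \<Rightarrow> nat) \<Rightarrow> 'k" where
  "twist q I m m' = (\<Prod>(i, j) \<in> {(i, j). i \<in> I \<and> j \<in> I \<and> j < i}. q j i ^ (m i * m' j))"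

definition qsupp :: "((nat \<Rightarrow> nat) \<Rightarrow> 'k::zero) \<Rightarrow> (nat \<Rightarrow> nat) set" where
  "qsupp f = {m. f m \<noteq> 0}"

definition qcarrier :: "nat set \<Rightarrow> ((nat \<Rightarrow> nat) \<Rightarrow> 'k::field) set" where
  "qcarrier I = {f. finite (qsupp f) \<and> qsupp f \<subseteq> qmonos I}"

definition qmult :: "(nat \<Rightarrow> nat \<Rightarrow> 'k::field) \<Rightarrow> nat set
     \<Rightarrow> ((nat \<Rightarrow> nat) \<Rightarrow> 'k) \<Rightarrow> ((nat \<Rightarrow> nat) \<Rightarrow> 'k) \<Rightarrow> ((nat \<Rightarrow> nat) \<Rightarrow> 'k)" where
  "qmult q I f g = (\<lambda>m. \<Sum>(a, b) \<in> {(a, b). a \<in> qsupp f \<and> b \<in> qsupp g \<and> (\<lambda>i. a i + b i) = m}.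
      f a * g b * twist q I a b)"

definition qone :: "(nat \<Rightarrow> nat) \<Rightarrow> 'k::field" where
  "qone = (\<lambda>m. if m = (\<lambda>_. 0) then 1 else 0)"

definition qvar :: "nat \<Rightarrow> (nat \<Rightarrow> nat) \<Rightarrow> 'k::field" where
  "qvar i = (\<lambda>m. if m = (\<lambda>j. if j = i then 1 else 0) then 1 else 0)"

definition qhomog :: "nat set \<Rightarrow> nat \<Rightarrow> ((nat \<Rightarrow> nat) \<Rightarrow> 'k::field) set" where
  "qhomog I d = {f \<in> qcarrier I. \<forall>m \<in> qsupp f. (\<Sum>i\<in>I. m i) = d}"

definition graded_aut :: "(nat \<Rightarrow> nat \<Rightarrow> 'k::field) \<Rightarrow> nat set
     \<Rightarrow> (((nat \<Rightarrow> nat) \<Rightarrow> 'k) \<Rightarrow> ((nat \<Rightarrow> nat) \<Rightarrow> 'k)) \<Rightarrow> bool" where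
  "graded_aut q I \<phi> \<longleftrightarrow>
     bij_betw \<phi> (qcarrier I) (qcarrier I)
   \<and> (\<forall>f\<in>qcarrier I. \<forall>g\<in>qcarrier I. \<phi> (\<lambda>m. f m + g m) = (\<lambda>m. \<phi> f m + \<phi> g m))
   \<and> (\<forall>c. \<forall>f\<in>qcarrier I. \<phi> (\<lambda>m. c * f m) = (\<lambda>m. c * \<phi> f m))
   \<and> (\<forall>f\<in>qcarrier I. \<forall>g\<in>qcarrier I. \<phi> (qmult q I f g) = qmult q I (\<phi> f) (\<phi> g))
   \<and> \<phi> qone = qone
   \<and> (\<forall>d. \<forall>f\<in>qhomog I d. \<phi> f \<in> qhomog I d)"

text \<open>Linear maps of V_I as matrices indexed by I x I (zero outside), column convention
  g(v_i) = sum_a g a i v_a; composition = matrix product.\<close>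

definition matmul :: "nat set \<Rightarrow> (nat \<Rightarrow> nat \<Rightarrow> 'k::field) \<Rightarrow> (nat \<Rightarrow> nat \<Rightarrow> 'k) \<Rightarrow> (nat \<Rightarrow> nat \<Rightarrow> 'k)" where
  "matmul I g h = (\<lambda>a b. if a \<in> I \<and> b \<in> I then \<Sum>c\<in>I. g a c * h c b else 0)"

definition matid :: "nat set \<Rightarrow> nat \<Rightarrow> nat \<Rightarrow> 'k::field" where
  "matid I = (\<lambda>a b. if a \<in> I \<and> a = b then 1 else 0)"

definition lin_of :: "nat set \<Rightarrow> (nat \<Rightarrow> nat \<Rightarrow> 'k::field) \<Rightarrow> nat \<Rightarrow> (nat \<Rightarrow> nat) \<Rightarrow> 'k" where
  "lin_of I g i = (\<lambda>m. \<Sum>a\<in>I. g a i * qvar a m)"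

text \<open>Aut_gr(S_q(V_I)) viewed as a subgroup of GL(V_I): the restrictions to degree 1
  of the graded automorphisms.\<close>
definition AutGr_set :: "(nat \<Rightarrow> nat \<Rightarrow> 'k::field) \<Rightarrow> nat set \<Rightarrow> (nat \<Rightarrow> nat \<Rightarrow> 'k) set" where
  "AutGr_set q I = {g. (\<forall>a b. (a \<notin> I \<or> b \<notin> I) \<longrightarrow> g a b = 0)
      \<and> (\<exists>\<phi>. graded_aut q I \<phi> \<and> (\<forall>i\<in>I. \<phi> (qvar i) = lin_of I g i))}"

definition AutGr :: "(nat \<Rightarrow> nat \<Rightarrow> 'k::field) \<Rightarrow> nat set \<Rightarrow> (nat \<Rightarrow> nat \<Rightarrow> 'k) monoid" where
  "AutGr q I = \<lparr>carrier = AutGr_set q I, monoid.mult = matmul I, one = matid I\<rparr>"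

text \<open>B_q refines P: rows i and j of q (on [n]) identical implies i, j in the same block.\<close>
definition refined_by_Bq :: "nat \<Rightarrow> (nat \<Rightarrow> nat \<Rightarrow> 'k) \<Rightarrow> nat set set \<Rightarrow> bool" where
  "refined_by_Bq n q P \<longleftrightarrow> (\<forall>D\<in>P. \<forall>i\<in>D. \<forall>j\<in>{1..n}. (\<forall>l\<in>{1..n}. q i l = q j l) \<longrightarrow> j \<in> D)"

definition Gperm_set :: "nat \<Rightarrow> (nat \<Rightarrow> nat \<Rightarrow> 'k) \<Rightarrow> nat set set \<Rightarrow> (nat set \<Rightarrow> nat set) set" where
  "Gperm_set n q P = {\<sigma>. \<sigma> permutes P \<and> (\<forall>D\<in>P. card (\<sigma> D) = card D)
      \<and> (\<exists>\<tau>. \<tau> permutes {1..n} \<and> (\<forall>D\<in>P. \<tau> ` D = \<sigma> D)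
             \<and> (\<forall>i\<in>{1..n}. \<forall>j\<in>{1..n}. q (\<tau> i) (\<tau> j) = q i j))}"

definition Gperm :: "nat \<Rightarrow> (nat \<Rightarrow> nat \<Rightarrow> 'k) \<Rightarrow> nat set set \<Rightarrow> (nat set \<Rightarrow> nat set) monoid" where
  "Gperm n q P = \<lparr>carrier = Gperm_set n q P, monoid.mult = (\<circ>), one = id\<rparr>"

end

theory Submission
  imports Defs "HOL-Library.Function_Algebras"
begin

definition dl :: "(nat \<Rightarrow> nat) \<Rightarrow> (nat \<Rightarrow> nat) \<Rightarrow> 'k::field" where
  "dl m = (\<lambda>m'. if m' = m then 1 else 0)"

definition ev :: "nat \<Rightarrow> nat \<Rightarrow> nat" where
  "ev a = (\<lambda>j. if j = a then 1 else 0)"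

definition madd :: "(nat \<Rightarrow> nat) \<Rightarrow> (nat \<Rightarrow> nat) \<Rightarrow> nat \<Rightarrow> nat" where
  "madd a b = (\<lambda>i. a i + b i)"

lemma qvar_dl: "qvar a = dl (ev a)"
  by (simp add: qvar_def dl_def ev_def)

lemma qone_dl: "qone = dl (\<lambda>_. 0)"
  by (simp add: qone_def dl_def)

lemma qmult_expand:
  assumes "finite S" "finite T" "qsupp f \<subseteq> S" "qsupp g \<subseteq> T"
  shows "qmult q I f g m = (\<Sum>a\<in>S. \<Sum>b\<in>T. if madd a b = m then f a * g b * twist q I a b else 0)"
proof -
  have "(\<Sum>a\<in>S. \<Sum>b\<in>T. if madd a b = m then f a * g b * twist q I a b else 0)
      = (\<Sum>(a,b)\<in>S \<times> T. if madd a b = m then f a * g b * twist q I a b else 0)"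
    by (simp add: sum.cartesian_product)
  also have "\<dots> = (\<Sum>(a,b)\<in>{(a, b). a \<in> qsupp f \<and> b \<in> qsupp g \<and> (\<lambda>i. a i + b i) = m}.
      f a * g b * twist q I a b)"
  proof (rule sum.mono_neutral_cong_right)
    show "finite (S \<times> T)" using assms by simp
    show "{(a, b). a \<in> qsupp f \<and> b \<in> qsupp g \<and> (\<lambda>i. a i + b i) = m} \<subseteq> S \<times> T"
      using assms by auto
    show "\<forall>i\<in>S \<times> T - {(a, b). a \<in> qsupp f \<and> b \<in> qsupp g \<and> (\<lambda>i. a i + b i) = m}.
       (case i of (a, b) \<Rightarrow> if madd a b = m then f a * g b * twist q I a b else 0) = 0"
      by (auto simp: madd_def qsupp_def split: if_splits)
    show "\<And>x. x \<in> {(a, b). a \<in> qsupp f \<and> b \<in> qsupp g \<and> (\<lambda>i. a i + b i) = m} \<Longrightarrow>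
         (case x of (a, b) \<Rightarrow> if madd a b = m then f a * g b * twist q I a b else 0) =
         (case x of (a, b) \<Rightarrow> f a * g b * twist q I a b)"
      by (auto simp: madd_def)
  qed
  finally show ?thesis by (simp add: qmult_def)
qed

lemma qsupp_sum: fixes A :: "'a \<Rightarrow> (nat \<Rightarrow> nat) \<Rightarrow> 'k::field" shows "qsupp (\<lambda>x. \<Sum>k\<in>K. c k * A k x) \<subseteq> (\<Union>k\<in>K. qsupp (A k))"
proof
  fix m assume "m \<in> qsupp (\<lambda>x. \<Sum>k\<in>K. c k * A k x)"
  then have "(\<Sum>k\<in>K. c k * A k m) \<noteq> 0" by (simp add: qsupp_def)
  then obtain k where "k \<in> K" "c k * A k m \<noteq> 0" by (meson sum.neutral)
  then have "A k m \<noteq> 0" by auto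
  then show "m \<in> (\<Union>k\<in>K. qsupp (A k))" using \<open>k \<in> K\<close> by (auto simp: qsupp_def)
qed

lemma qmult_bilin:
  assumes "finite K" "finite L" "\<And>k. k \<in> K \<Longrightarrow> finite (qsupp (A k))"
    "\<And>l. l \<in> L \<Longrightarrow> finite (qsupp (B l))"
  shows "qmult q I (\<lambda>x. \<Sum>k\<in>K. c k * A k x) (\<lambda>x. \<Sum>l\<in>L. d l * B l x)
       = (\<lambda>x. \<Sum>k\<in>K. \<Sum>l\<in>L. c k * d l * qmult q I (A k) (B l) x)"
proof
  fix m
  define S where "S = (\<Union>k\<in>K. qsupp (A k))"
  define T where "T = (\<Union>l\<in>L. qsupp (B l))"
  have fS: "finite S" "finite T" using assms by (auto simp: S_def T_def)
  have "qmult q I (\<lambda>x. \<Sum>k\<in>K. c k * A k x) (\<lambda>x. \<Sum>l\<in>L. d l * B l x) m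
     = (\<Sum>a\<in>S. \<Sum>b\<in>T. if madd a b = m then (\<Sum>k\<in>K. c k * A k a) * (\<Sum>l\<in>L. d l * B l b) * twist q I a b else 0)"
    by (rule qmult_expand) (use fS qsupp_sum[of c A K] qsupp_sum[of d B L] in \<open>auto simp: S_def T_def\<close>)
  also have "\<dots> = (\<Sum>a\<in>S. \<Sum>b\<in>T. \<Sum>k\<in>K. \<Sum>l\<in>L. c k * d l * (if madd a b = m then A k a * B l b * twist q I a b else 0))"
    by (intro sum.cong refl) (auto simp: sum_distrib_left sum_distrib_right mult_ac intro: sum.swap)
  also have "\<dots> = (\<Sum>k\<in>K. \<Sum>l\<in>L. c k * d l * (\<Sum>a\<in>S. \<Sum>b\<in>T. (if madd a b = m then A k a * B l b * twist q I a b else 0)))"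
  proof -
    let ?F = "\<lambda>a b k l. c k * d l * (if madd a b = m then A k a * B l b * twist q I a b else 0)"
    have "(\<Sum>a\<in>S. \<Sum>b\<in>T. \<Sum>k\<in>K. \<Sum>l\<in>L. ?F a b k l) = (\<Sum>a\<in>S. \<Sum>k\<in>K. \<Sum>b\<in>T. \<Sum>l\<in>L. ?F a b k l)"
      by (rule sum.cong[OF refl]) (rule sum.swap)
    also have "\<dots> = (\<Sum>k\<in>K. \<Sum>a\<in>S. \<Sum>b\<in>T. \<Sum>l\<in>L. ?F a b k l)" by (rule sum.swap)
    also have "\<dots> = (\<Sum>k\<in>K. \<Sum>a\<in>S. \<Sum>l\<in>L. \<Sum>b\<in>T. ?F a b k l)"
      by (intro sum.cong refl) (rule sum.swap)
    also have "\<dots> = (\<Sum>k\<in>K. \<Sum>l\<in>L. \<Sum>a\<in>S. \<Sum>b\<in>T. ?F a b k l)"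
      by (rule sum.cong[OF refl]) (rule sum.swap)
    finally show ?thesis by (simp add: sum_distrib_left)
  qed
  also have "\<dots> = (\<Sum>k\<in>K. \<Sum>l\<in>L. c k * d l * qmult q I (A k) (B l) m)"
  proof (intro sum.cong refl)
    fix k l assume "k \<in> K" "l \<in> L"
    then show "c k * d l * (\<Sum>a\<in>S. \<Sum>b\<in>T. (if madd a b = m then A k a * B l b * twist q I a b else 0))
       = c k * d l * qmult q I (A k) (B l) m"
      by (subst qmult_expand[of S T]) (use fS in \<open>auto simp: S_def T_def\<close>)
  qed
  finally show "qmult q I (\<lambda>x. \<Sum>k\<in>K. c k * A k x) (\<lambda>x. \<Sum>l\<in>L. d l * B l x) m
       = (\<Sum>k\<in>K. \<Sum>l\<in>L. c k * d l * qmult q I (A k) (B l) m)" .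
qed

lemma qsupp_dl: "qsupp (dl m :: _ \<Rightarrow> 'k::field) = {m}"
  by (auto simp: qsupp_def dl_def)

lemma qmult_dl: "qmult q I (dl a) (dl b) = (\<lambda>x. twist q I a b * dl (madd a b) x)"
proof
  fix m
  show "qmult q I (dl a) (dl b) m = twist q I a b * dl (madd a b) m"
    by (subst qmult_expand[of "{a}" "{b}"]) (simp_all add: qsupp_dl, simp add: dl_def)
qed

lemma dl_expand:
  fixes f :: "(nat \<Rightarrow> nat) \<Rightarrow> 'k::field"
  assumes "finite S" "qsupp f \<subseteq> S"
  shows "f = (\<lambda>x. \<Sum>a\<in>S. f a * dl a x)"
proof
  fix x
  have "(\<Sum>a\<in>S. f a * dl a x) = (\<Sum>a\<in>S. if a = x then f x else 0)"
    by (intro sum.cong refl) (auto simp: dl_def)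
  also have "\<dots> = (if x \<in> S then f x else 0)" using assms(1) by (simp add: sum.delta)
  also have "\<dots> = f x" using assms(2) by (auto simp: qsupp_def)
  finally show "f x = (\<Sum>a\<in>S. f a * dl a x)" by simp
qed

lemma twist_add_left: "twist q I (madd a a') b = twist q I a b * twist q I a' b"
  unfolding twist_def madd_def
  by (simp add: add_mult_distrib power_add prod.distrib[symmetric] case_prod_beta)

lemma twist_add_right: "twist q I a (madd b b') = twist q I a b * twist q I a b'"
  unfolding twist_def madd_def
  by (simp add: add_mult_distrib2 power_add prod.distrib[symmetric] case_prod_beta)

lemma twist_zero_left: "twist q I (\<lambda>_. 0) b = 1"
  unfolding twist_def by simp

lemma twist_zero_right: "twist q I a (\<lambda>_. 0) = 1"
  unfolding twist_def by simp

lemma twist_ev_low: assumes "\<And>j. j < i \<Longrightarrow> b j = 0" shows "twist q I (ev i) b = 1"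
  unfolding twist_def by (rule prod.neutral) (use assms in \<open>auto simp: ev_def\<close>)

lemma twist_ev_ev:
  assumes "finite I" "i \<in> I" "j \<in> I"
  shows "twist q I (ev i) (ev j) = (if j < i then q j i else 1)"
proof -
  let ?P = "{(i', j'). i' \<in> I \<and> j' \<in> I \<and> j' < i'}"
  have fin: "finite ?P"
    by (rule finite_subset[of _ "I \<times> I"]) (use assms in auto)
  have "twist q I (ev i) (ev j) = (\<Prod>p\<in>?P. if p = (i, j) then q j i else 1)"
    unfolding twist_def by (intro prod.cong refl) (auto simp: ev_def split: if_splits)
  also have "\<dots> = (if (i, j) \<in> ?P then q j i else 1)"
    using fin by (simp add: prod.delta')
  finally show ?thesis using assms by auto
qed

lemma madd_assoc: "madd (madd a b) c = madd a (madd b c)"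
  by (simp add: madd_def add.assoc)

lemma qmult_assoc_dl:
  "qmult q I (qmult q I (dl a) (dl b)) (dl c) = qmult q I (dl a) (qmult q I (dl b) (dl c))"
proof -
  have l: "qmult q I (qmult q I (dl a) (dl b)) (dl c) = (\<lambda>x. twist q I a b * twist q I (madd a b) c * dl (madd (madd a b) c) x)"
  proof
    fix x
    show "qmult q I (qmult q I (dl a) (dl b)) (dl c) x = twist q I a b * twist q I (madd a b) c * dl (madd (madd a b) c) x"
      unfolding qmult_dl
      by (subst qmult_expand[of "{madd a b}" "{c}"]) (auto simp: qsupp_def dl_def madd_def)
  qed
  have r: "qmult q I (dl a) (qmult q I (dl b) (dl c)) = (\<lambda>x. twist q I b c * twist q I a (madd b c) * dl (madd a (madd b c)) x)"
  proof
    fix x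
    show "qmult q I (dl a) (qmult q I (dl b) (dl c)) x = twist q I b c * twist q I a (madd b c) * dl (madd a (madd b c)) x"
      unfolding qmult_dl
      by (subst qmult_expand[of "{a}" "{madd b c}"]) (auto simp: qsupp_def dl_def madd_def)
  qed
  show ?thesis unfolding l r by (simp add: twist_add_left twist_add_right madd_assoc mult_ac)
qed

lemma qsupp_sum0:
  fixes A :: "'a \<Rightarrow> (nat \<Rightarrow> nat) \<Rightarrow> 'k::field"
  shows "qsupp (\<lambda>x. \<Sum>k\<in>K. A k x) \<subseteq> (\<Union>k\<in>K. qsupp (A k))"
  using qsupp_sum[of "\<lambda>_. 1" A K] by simp

lemma qsupp_scale:
  fixes A :: "(nat \<Rightarrow> nat) \<Rightarrow> 'k::field"
  shows "qsupp (\<lambda>x. c * A x) \<subseteq> qsupp A"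
  by (auto simp: qsupp_def)

lemma qsupp_qmult:
  "qsupp (qmult q I f g) \<subseteq> (\<lambda>(a, b). madd a b) ` (qsupp f \<times> qsupp g)"
proof
  fix m assume "m \<in> qsupp (qmult q I f g)"
  then have "(\<Sum>(a, b) \<in> {(a, b). a \<in> qsupp f \<and> b \<in> qsupp g \<and> (\<lambda>i. a i + b i) = m}.
      f a * g b * twist q I a b) \<noteq> 0" by (simp add: qsupp_def qmult_def)
  then obtain p where "p \<in> {(a, b). a \<in> qsupp f \<and> b \<in> qsupp g \<and> (\<lambda>i. a i + b i) = m}"
    by (rule sum.not_neutral_contains_not_neutral)
  then obtain a b where "a \<in> qsupp f" "b \<in> qsupp g" "(\<lambda>i. a i + b i) = m" by auto
  then show "m \<in> (\<lambda>(a, b). madd a b) ` (qsupp f \<times> qsupp g)"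
    by (auto simp: madd_def image_iff intro!: bexI[of _ "(a, b)"])
qed

lemma finite_qsupp_qmult:
  assumes "finite (qsupp f)" "finite (qsupp g)"
  shows "finite (qsupp (qmult q I f g))"
  by (rule finite_subset[OF qsupp_qmult]) (use assms in auto)

lemma finite_qsupp_sum:
  fixes A :: "'a \<Rightarrow> (nat \<Rightarrow> nat) \<Rightarrow> 'k::field"
  assumes "finite K" "\<And>k. k \<in> K \<Longrightarrow> finite (qsupp (A k))"
  shows "finite (qsupp (\<lambda>x. \<Sum>k\<in>K. A k x))"
  by (rule finite_subset[OF qsupp_sum0]) (use assms in auto)

lemma finite_qsupp_scale:
  fixes A :: "(nat \<Rightarrow> nat) \<Rightarrow> 'k::field"
  assumes "finite (qsupp A)"
  shows "finite (qsupp (\<lambda>x. c * A x))"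
  by (rule finite_subset[OF qsupp_scale]) (use assms in auto)

lemma finite_qsupp_dl: "finite (qsupp (dl m :: _ \<Rightarrow> 'k::field))"
  by (simp add: qsupp_dl)

lemma qmult_bilin0:
  fixes A :: "'a \<Rightarrow> (nat \<Rightarrow> nat) \<Rightarrow> 'k::field"
  assumes "finite K" "finite L" "\<And>k. k \<in> K \<Longrightarrow> finite (qsupp (A k))"
    "\<And>l. l \<in> L \<Longrightarrow> finite (qsupp (B l))"
  shows "qmult q I (\<lambda>x. \<Sum>k\<in>K. A k x) (\<lambda>x. \<Sum>l\<in>L. B l x)
       = (\<lambda>x. \<Sum>k\<in>K. \<Sum>l\<in>L. qmult q I (A k) (B l) x)"
  using qmult_bilin[of K L A B q I "\<lambda>_. 1" "\<lambda>_. 1"] assms by simp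

lemma qmult_sum_left:
  fixes A :: "'a \<Rightarrow> (nat \<Rightarrow> nat) \<Rightarrow> 'k::field"
  assumes "finite K" "\<And>k. k \<in> K \<Longrightarrow> finite (qsupp (A k))" "finite (qsupp g)"
  shows "qmult q I (\<lambda>x. \<Sum>k\<in>K. A k x) g = (\<lambda>x. \<Sum>k\<in>K. qmult q I (A k) g x)"
  using qmult_bilin0[of K "{()}" A "\<lambda>_. g" q I] assms by simp

lemma qmult_sum_right:
  fixes B :: "'a \<Rightarrow> (nat \<Rightarrow> nat) \<Rightarrow> 'k::field"
  assumes "finite L" "\<And>l. l \<in> L \<Longrightarrow> finite (qsupp (B l))" "finite (qsupp f)"
  shows "qmult q I f (\<lambda>x. \<Sum>l\<in>L. B l x) = (\<lambda>x. \<Sum>l\<in>L. qmult q I f (B l) x)"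
  using qmult_bilin0[of "{()}" L "\<lambda>_. f" B q I] assms by simp

lemma qmult_scale:
  fixes A :: "(nat \<Rightarrow> nat) \<Rightarrow> 'k::field"
  assumes "finite (qsupp A)" "finite (qsupp B)"
  shows "qmult q I (\<lambda>x. c * A x) (\<lambda>x. d * B x) = (\<lambda>x. c * d * qmult q I A B x)"
  using qmult_bilin[of "{()}" "{()}" "\<lambda>_. A" "\<lambda>_. B" q I "\<lambda>_. c" "\<lambda>_. d"] assms by simp

lemma qmult_scale_left:
  fixes A :: "(nat \<Rightarrow> nat) \<Rightarrow> 'k::field"
  assumes "finite (qsupp A)" "finite (qsupp B)"
  shows "qmult q I (\<lambda>x. c * A x) B = (\<lambda>x. c * qmult q I A B x)"
  using qmult_scale[of A B q I c 1] assms by simp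

lemma qmult_scale_right:
  fixes A :: "(nat \<Rightarrow> nat) \<Rightarrow> 'k::field"
  assumes "finite (qsupp A)" "finite (qsupp B)"
  shows "qmult q I A (\<lambda>x. d * B x) = (\<lambda>x. d * qmult q I A B x)"
  using qmult_scale[of A B q I 1 d] assms by simp

lemma sum_pair_split: "(\<Sum>p\<in>A \<times> B. G (fst p) (snd p)) = (\<Sum>a\<in>A. \<Sum>b\<in>B. G a b)"
  by (simp add: sum.cartesian_product case_prod_beta)

lemma qmult_assoc:
  fixes f :: "(nat \<Rightarrow> nat) \<Rightarrow> 'k::field"
  assumes ff: "finite (qsupp f)" and fg: "finite (qsupp g)" and fh: "finite (qsupp h)"
  shows "qmult q I (qmult q I f g) h = qmult q I f (qmult q I g h)"
proof -
  define Sf where "Sf = qsupp f"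
  define Sg where "Sg = qsupp g"
  define Sh where "Sh = qsupp h"
  have fin: "finite Sf" "finite Sg" "finite Sh" using assms by (auto simp: Sf_def Sg_def Sh_def)
  have ef: "f = (\<lambda>x. \<Sum>a\<in>Sf. f a * dl a x)" by (rule dl_expand) (use fin in \<open>auto simp: Sf_def\<close>)
  have eg: "g = (\<lambda>x. \<Sum>a\<in>Sg. g a * dl a x)" by (rule dl_expand) (use fin in \<open>auto simp: Sg_def\<close>)
  have eh: "h = (\<lambda>x. \<Sum>a\<in>Sh. h a * dl a x)" by (rule dl_expand) (use fin in \<open>auto simp: Sh_def\<close>)
  have fdl: "\<And>a. finite (qsupp (dl a :: _ \<Rightarrow> 'k))" by (rule finite_qsupp_dl)
  have fdl2: "\<And>a b. finite (qsupp (qmult q I (dl a) (dl b) :: _ \<Rightarrow> 'k))"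
    by (intro finite_qsupp_qmult finite_qsupp_dl)
  have fg1: "qmult q I f g = (\<lambda>x. \<Sum>p\<in>Sf \<times> Sg. f (fst p) * g (snd p) * qmult q I (dl (fst p)) (dl (snd p)) x)"
  proof -
    have "qmult q I f g = qmult q I (\<lambda>x. \<Sum>a\<in>Sf. f a * dl a x) (\<lambda>x. \<Sum>a\<in>Sg. g a * dl a x)"
      using ef eg by simp
    also have "\<dots> = (\<lambda>x. \<Sum>a\<in>Sf. \<Sum>b\<in>Sg. f a * g b * qmult q I (dl a) (dl b) x)"
      by (rule qmult_bilin) (use fin fdl in auto)
    finally show ?thesis by (simp add: sum.cartesian_product case_prod_beta)
  qed
  have gh1: "qmult q I g h = (\<lambda>x. \<Sum>p\<in>Sg \<times> Sh. g (fst p) * h (snd p) * qmult q I (dl (fst p)) (dl (snd p)) x)"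
  proof -
    have "qmult q I g h = qmult q I (\<lambda>x. \<Sum>a\<in>Sg. g a * dl a x) (\<lambda>x. \<Sum>a\<in>Sh. h a * dl a x)"
      using eg eh by simp
    also have "\<dots> = (\<lambda>x. \<Sum>a\<in>Sg. \<Sum>b\<in>Sh. g a * h b * qmult q I (dl a) (dl b) x)"
      by (rule qmult_bilin) (use fin fdl in auto)
    finally show ?thesis by (simp add: sum.cartesian_product case_prod_beta)
  qed
  have L: "qmult q I (qmult q I f g) h = (\<lambda>x. \<Sum>p\<in>Sf \<times> Sg. \<Sum>c\<in>Sh. (f (fst p) * g (snd p)) * h c *
             qmult q I (qmult q I (dl (fst p)) (dl (snd p))) (dl c) x)"
    unfolding fg1 by (subst eh, rule qmult_bilin) (use fin fdl fdl2 in auto)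
  have R: "qmult q I f (qmult q I g h) = (\<lambda>x. \<Sum>a\<in>Sf. \<Sum>p\<in>Sg \<times> Sh. f a * (g (fst p) * h (snd p)) *
             qmult q I (dl a) (qmult q I (dl (fst p)) (dl (snd p))) x)"
    unfolding gh1 by (subst ef, rule qmult_bilin) (use fin fdl fdl2 in auto)
  show ?thesis unfolding L R
  proof (rule ext)
    fix x
    let ?T = "\<lambda>a b c. f a * g b * h c * qmult q I (dl a) (qmult q I (dl b) (dl c)) x"
    have "(\<Sum>p\<in>Sf \<times> Sg. \<Sum>c\<in>Sh. (f (fst p) * g (snd p)) * h c *
             qmult q I (qmult q I (dl (fst p)) (dl (snd p))) (dl c) x) = (\<Sum>p\<in>Sf \<times> Sg. \<Sum>c\<in>Sh. ?T (fst p) (snd p) c)"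
      by (intro sum.cong refl) (simp add: qmult_assoc_dl)
    also have "\<dots> = (\<Sum>a\<in>Sf. \<Sum>b\<in>Sg. \<Sum>c\<in>Sh. ?T a b c)"
      by (rule sum_pair_split)
    also have "\<dots> = (\<Sum>a\<in>Sf. \<Sum>p\<in>Sg \<times> Sh. ?T a (fst p) (snd p))"
      by (intro sum.cong refl) (rule sum_pair_split[symmetric])
    also have "\<dots> = (\<Sum>a\<in>Sf. \<Sum>p\<in>Sg \<times> Sh. f a * (g (fst p) * h (snd p)) *
             qmult q I (dl a) (qmult q I (dl (fst p)) (dl (snd p))) x)"
      by (intro sum.cong refl) (simp add: mult_ac)
    finally show "(\<Sum>p\<in>Sf \<times> Sg. \<Sum>c\<in>Sh. (f (fst p) * g (snd p)) * h c *
             qmult q I (qmult q I (dl (fst p)) (dl (snd p))) (dl c) x) = (\<Sum>a\<in>Sf. \<Sum>p\<in>Sg \<times> Sh. f a * (g (fst p) * h (snd p)) *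
             qmult q I (dl a) (qmult q I (dl (fst p)) (dl (snd p))) x)" .
  qed
qed

definition deg :: "nat set \<Rightarrow> (nat \<Rightarrow> nat) \<Rightarrow> nat" where
  "deg I m = (\<Sum>i\<in>I. m i)"

lemma qmonos_madd: "a \<in> qmonos I \<Longrightarrow> b \<in> qmonos I \<Longrightarrow> madd a b \<in> qmonos I"
  by (auto simp: qmonos_def madd_def)

lemma qmonos_ev: "i \<in> I \<Longrightarrow> ev i \<in> qmonos I"
  by (auto simp: qmonos_def ev_def)

lemma qmonos_zero: "(\<lambda>_. 0) \<in> qmonos I"
  by (auto simp: qmonos_def)

lemma deg_madd: "deg I (madd a b) = deg I a + deg I b"
  by (simp add: deg_def madd_def sum.distrib)

lemma deg_ev: "finite I \<Longrightarrow> i \<in> I \<Longrightarrow> deg I (ev i) = 1"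
  by (simp add: deg_def ev_def)

lemma deg_zero: "deg I (\<lambda>_. 0) = 0"
  by (simp add: deg_def)

lemma qcarrier_finite: "f \<in> qcarrier I \<Longrightarrow> finite (qsupp f)"
  by (simp add: qcarrier_def)

lemma qcarrier_qmult:
  assumes "f \<in> qcarrier I" "g \<in> qcarrier I"
  shows "qmult q I f g \<in> qcarrier I"
proof -
  have "qsupp (qmult q I f g) \<subseteq> qmonos I"
    using qsupp_qmult[of q I f g] assms qmonos_madd by (fastforce simp: qcarrier_def)
  then show ?thesis using assms finite_qsupp_qmult by (auto simp: qcarrier_def)
qed

lemma qhomog_qmult:
  assumes "f \<in> qhomog I d1" "g \<in> qhomog I d2"
  shows "qmult q I f g \<in> qhomog I (d1 + d2)"
proof -
  have c: "qmult q I f g \<in> qcarrier I" using assms qcarrier_qmult by (auto simp: qhomog_def)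
  have "\<forall>m\<in>qsupp (qmult q I f g). deg I m = d1 + d2"
  proof
    fix m assume "m \<in> qsupp (qmult q I f g)"
    then obtain a b where "a \<in> qsupp f" "b \<in> qsupp g" "m = madd a b"
      using qsupp_qmult[of q I f g] by auto
    then show "deg I m = d1 + d2" using assms deg_madd[of I a b] by (auto simp: qhomog_def deg_def)
  qed
  then show ?thesis using c by (simp add: qhomog_def deg_def)
qed

lemma dl_qcarrier: "m \<in> qmonos I \<Longrightarrow> dl m \<in> qcarrier I"
  by (simp add: qcarrier_def qsupp_dl)

lemma dl_qhomog: "m \<in> qmonos I \<Longrightarrow> dl m \<in> qhomog I (deg I m)"
  by (simp add: qhomog_def dl_qcarrier qsupp_dl deg_def)

lemma qcarrier_sum:
  fixes A :: "'a \<Rightarrow> (nat \<Rightarrow> nat) \<Rightarrow> 'k::field"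
  assumes "finite K" "\<And>k. k \<in> K \<Longrightarrow> A k \<in> qcarrier I"
  shows "(\<lambda>x. \<Sum>k\<in>K. c k * A k x) \<in> qcarrier I"
proof -
  have s: "qsupp (\<lambda>x. \<Sum>k\<in>K. c k * A k x) \<subseteq> (\<Union>k\<in>K. qsupp (A k))" by (rule qsupp_sum)
  have f: "finite (\<Union>k\<in>K. qsupp (A k))" using assms by (auto simp: qcarrier_def)
  have m: "(\<Union>k\<in>K. qsupp (A k)) \<subseteq> qmonos I" using assms by (auto simp: qcarrier_def)
  show ?thesis unfolding qcarrier_def using s f m finite_subset by blast
qed

lemma qhomog_sum:
  fixes A :: "'a \<Rightarrow> (nat \<Rightarrow> nat) \<Rightarrow> 'k::field"
  assumes "finite K" "\<And>k. k \<in> K \<Longrightarrow> A k \<in> qhomog I d"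
  shows "(\<lambda>x. \<Sum>k\<in>K. c k * A k x) \<in> qhomog I d"
proof -
  have "(\<lambda>x. \<Sum>k\<in>K. c k * A k x) \<in> qcarrier I"
    by (rule qcarrier_sum) (use assms in \<open>auto simp: qhomog_def\<close>)
  moreover have "\<forall>m\<in>qsupp (\<lambda>x. \<Sum>k\<in>K. c k * A k x). (\<Sum>i\<in>I. m i) = d"
    using qsupp_sum[of c A K] assms by (auto simp: qhomog_def)
  ultimately show ?thesis by (simp add: qhomog_def)
qed

lemma qcarrier_add:
  assumes "f \<in> qcarrier I" "g \<in> qcarrier I"
  shows "(\<lambda>x. f x + g x) \<in> qcarrier I"
proof -
  have "qsupp (\<lambda>x. f x + g x) \<subseteq> qsupp f \<union> qsupp g" by (auto simp: qsupp_def)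
  moreover have "finite (qsupp f \<union> qsupp g)" "qsupp f \<union> qsupp g \<subseteq> qmonos I"
    using assms by (auto simp: qcarrier_def)
  ultimately show ?thesis using finite_subset unfolding qcarrier_def by blast
qed

lemma qcarrier_scale:
  assumes "f \<in> qcarrier I"
  shows "(\<lambda>x. c * f x) \<in> qcarrier I"
proof -
  have "qsupp (\<lambda>x. c * f x) \<subseteq> qsupp f" by (rule qsupp_scale)
  then show ?thesis using assms finite_subset unfolding qcarrier_def by blast
qed

lemma qhomog_add:
  assumes "f \<in> qhomog I d" "g \<in> qhomog I d"
  shows "(\<lambda>x. f x + g x) \<in> qhomog I d"
proof -
  have "qsupp (\<lambda>x. f x + g x) \<subseteq> qsupp f \<union> qsupp g" by (auto simp: qsupp_def)
  then show ?thesis using assms qcarrier_add[of f I g] by (auto simp: qhomog_def)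
qed

lemma qhomog_scale:
  assumes "f \<in> qhomog I d"
  shows "(\<lambda>x. c * f x) \<in> qhomog I d"
  using assms qsupp_scale[of c f] qcarrier_scale[of f I c] by (auto simp: qhomog_def)

lemma qone_qhomog: "qone \<in> qhomog I 0"
  using dl_qhomog[OF qmonos_zero, of I] by (simp add: qone_dl deg_zero)

lemma qvar_qhomog: "finite I \<Longrightarrow> i \<in> I \<Longrightarrow> qvar i \<in> qhomog I 1"
  using dl_qhomog[OF qmonos_ev, of i I] by (simp add: qvar_dl deg_ev)

lemma qmult_one_right:
  assumes "finite (qsupp f)"
  shows "qmult q I f qone = f"
proof
  fix m
  have "qmult q I f qone m = (\<Sum>a\<in>qsupp f. \<Sum>b\<in>{\<lambda>_. 0}. if madd a b = m then f a * qone b * twist q I a b else 0)"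
    by (rule qmult_expand) (use assms in \<open>auto simp: qsupp_def qone_def\<close>)
  also have "\<dots> = (\<Sum>a\<in>qsupp f. if a = m then f a else 0)"
    by (intro sum.cong refl) (auto simp: madd_def qone_def twist_zero_right)
  also have "\<dots> = f m" using assms by (auto simp: sum.delta' qsupp_def)
  finally show "qmult q I f qone m = f m" .
qed

lemma qmult_one_left:
  assumes "finite (qsupp f)"
  shows "qmult q I qone f = f"
proof
  fix m
  have "qmult q I qone f m = (\<Sum>a\<in>{\<lambda>_. 0}. \<Sum>b\<in>qsupp f. if madd a b = m then qone a * f b * twist q I a b else 0)"
    by (rule qmult_expand) (use assms in \<open>auto simp: qsupp_def qone_def\<close>)
  also have "\<dots> = (\<Sum>b\<in>qsupp f. if b = m then f b else 0)"
  proof -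
    have "\<And>b. (if madd (\<lambda>_. 0) b = m then qone (\<lambda>_. 0) * f b * twist q I (\<lambda>_. 0) b else 0) = (if b = m then f b else 0)"
      by (simp add: madd_def qone_def twist_zero_left)
    then show ?thesis by simp
  qed
  also have "\<dots> = f m" using assms by (auto simp: sum.delta' qsupp_def)
  finally show "qmult q I qone f m = f m" .
qed

definition lsupp :: "(nat \<Rightarrow> nat) \<Rightarrow> nat" where
  "lsupp m = (LEAST i. m i \<noteq> 0)"

definition msub :: "(nat \<Rightarrow> nat) \<Rightarrow> nat \<Rightarrow> nat \<Rightarrow> nat" where
  "msub m i = (\<lambda>j. if j = i then m j - 1 else m j)"

fun Xf :: "(nat \<Rightarrow> nat \<Rightarrow> 'k::field) \<Rightarrow> nat set \<Rightarrow> (nat \<Rightarrow> (nat \<Rightarrow> nat) \<Rightarrow> 'k) \<Rightarrow> nat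
    \<Rightarrow> (nat \<Rightarrow> nat) \<Rightarrow> (nat \<Rightarrow> nat) \<Rightarrow> 'k" where
  "Xf q I x 0 m = qone"
| "Xf q I x (Suc k) m = (if m = (\<lambda>_. 0) then qone
     else qmult q I (x (lsupp m)) (Xf q I x k (msub m (lsupp m))))"

definition Xm :: "(nat \<Rightarrow> nat \<Rightarrow> 'k::field) \<Rightarrow> nat set \<Rightarrow> (nat \<Rightarrow> (nat \<Rightarrow> nat) \<Rightarrow> 'k)
    \<Rightarrow> (nat \<Rightarrow> nat) \<Rightarrow> (nat \<Rightarrow> nat) \<Rightarrow> 'k" where
  "Xm q I x m = Xf q I x (deg I m) m"

lemma Xm_zero: "Xm q I x (\<lambda>_. 0) = qone"
  by (simp add: Xm_def deg_zero)

lemma lsupp_madd_ev: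
  assumes "\<forall>j<i. b j = 0"
  shows "lsupp (madd (ev i) b) = i" "msub (madd (ev i) b) i = b"
proof -
  show "lsupp (madd (ev i) b) = i"
    unfolding lsupp_def
  proof (rule Least_equality)
    show "madd (ev i) b i \<noteq> 0" by (simp add: madd_def ev_def)
    fix y assume y: "madd (ev i) b y \<noteq> 0"
    show "i \<le> y"
    proof (rule ccontr)
      assume "\<not> i \<le> y"
      then have "y < i" by simp
      then show False using y assms by (simp add: madd_def ev_def)
    qed
  qed
  show "msub (madd (ev i) b) i = b"
    by (auto simp: msub_def madd_def ev_def)
qed

lemma madd_ev_nonzero: "madd (ev i) b \<noteq> (\<lambda>_. 0)"
proof
  assume "madd (ev i) b = (\<lambda>_. 0)"
  then have "madd (ev i) b i = 0" by simp
  then show False by (simp add: madd_def ev_def)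
qed

lemma deg_madd_ev: "finite I \<Longrightarrow> i \<in> I \<Longrightarrow> deg I (madd (ev i) b) = Suc (deg I b)"
  by (simp add: deg_madd deg_ev)

lemma Xm_unfold:
  assumes "finite I" "i \<in> I" "\<forall>j<i. b j = 0"
  shows "Xm q I x (madd (ev i) b) = qmult q I (x i) (Xm q I x b)"
  using assms lsupp_madd_ev[OF assms(3)] madd_ev_nonzero[of i b]
  by (simp add: Xm_def deg_madd_ev)

lemma mono_decomp:
  assumes "m \<in> qmonos I" "m \<noteq> (\<lambda>_. 0)"
  obtains i b where "i \<in> I" "b \<in> qmonos I" "\<forall>j<i. b j = 0" "m = madd (ev i) b"
proof -
  obtain i0 where "m i0 \<noteq> 0" using assms(2) by auto
  define i where "i = lsupp m"
  have mi: "m i \<noteq> 0" unfolding i_def lsupp_def by (rule LeastI[of _ i0]) fact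
  have low: "\<forall>j<i. m j = 0" unfolding i_def lsupp_def using not_less_Least by blast
  have iI: "i \<in> I" using mi assms(1) by (auto simp: qmonos_def)
  define b where "b = msub m i"
  have "b \<in> qmonos I" using assms(1) by (auto simp: b_def msub_def qmonos_def)
  moreover have "\<forall>j<i. b j = 0" using low by (auto simp: b_def msub_def)
  moreover have "m = madd (ev i) b" using mi by (auto simp: b_def msub_def madd_def ev_def)
  ultimately show ?thesis using that iI by blast
qed

lemma mono_induct:
  assumes "finite I" "m \<in> qmonos I" "P (\<lambda>_. 0)"
    "\<And>i b. i \<in> I \<Longrightarrow> b \<in> qmonos I \<Longrightarrow> (\<forall>j<i. b j = 0) \<Longrightarrow> P b \<Longrightarrow> P (madd (ev i) b)"
  shows "P m"
  using assms(2)
proof (induction "deg I m" arbitrary: m rule: less_induct)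
  case less
  show ?case
  proof (cases "m = (\<lambda>_. 0)")
    case True then show ?thesis using assms(3) by simp
  next
    case False
    obtain i b where ib: "i \<in> I" "b \<in> qmonos I" "\<forall>j<i. b j = 0" "m = madd (ev i) b"
      using mono_decomp[OF less.prems False] by blast
    have "deg I b < deg I m" using ib deg_madd_ev[OF assms(1) ib(1), of b] by simp
    then have "P b" using less.hyps ib(2) by blast
    then show ?thesis using assms(4) ib by simp
  qed
qed

locale gens =
  fixes q :: "nat \<Rightarrow> nat \<Rightarrow> 'k::field" and I :: "nat set" and x :: "nat \<Rightarrow> (nat \<Rightarrow> nat) \<Rightarrow> 'k"
  assumes finI: "finite I" and qpmI: "qpm I q"
    and xh: "\<And>i. i \<in> I \<Longrightarrow> x i \<in> qhomog I 1"
    and rel: "\<And>i j. i \<in> I \<Longrightarrow> j \<in> I \<Longrightarrow> qmult q I (x j) (x i) = (\<lambda>z. q i j * qmult q I (x i) (x j) z)"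
begin

lemma mono_induct_I[consumes 1, case_names zero step]:
  assumes "m \<in> qmonos I" "P (\<lambda>_. 0)"
    "\<And>i b. i \<in> I \<Longrightarrow> b \<in> qmonos I \<Longrightarrow> (\<forall>j<i. b j = 0) \<Longrightarrow> P b \<Longrightarrow> P (madd (ev i) b)"
  shows "P m"
  using mono_induct[OF finI assms(1)] assms(2,3) by blast

lemma xc: "i \<in> I \<Longrightarrow> x i \<in> qcarrier I"
  using xh by (auto simp: qhomog_def)

lemma X_homog: "m \<in> qmonos I \<Longrightarrow> Xm q I x m \<in> qhomog I (deg I m)"
proof (induction m rule: mono_induct_I)
  case zero then show ?case using qone_qhomog by (simp add: Xm_zero deg_zero)
next
  case (step i b)
  have "qmult q I (x i) (Xm q I x b) \<in> qhomog I (1 + deg I b)"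
    by (rule qhomog_qmult) (use step xh in auto)
  then show ?case using step Xm_unfold[OF finI, of i b q x] deg_madd_ev[OF finI, of i b] by simp
qed

lemma X_carrier: "m \<in> qmonos I \<Longrightarrow> Xm q I x m \<in> qcarrier I"
  using X_homog by (auto simp: qhomog_def)

lemma X_fin: "m \<in> qmonos I \<Longrightarrow> finite (qsupp (Xm q I x m))"
  using X_carrier by (auto simp: qcarrier_def)

lemma xfin: "i \<in> I \<Longrightarrow> finite (qsupp (x i))"
  using xc by (auto simp: qcarrier_def)

lemma L2: "b \<in> qmonos I \<Longrightarrow> \<forall>i\<in>I. qmult q I (x i) (Xm q I x b) = (\<lambda>z. twist q I (ev i) b * Xm q I x (madd b (ev i)) z)"
proof (induction b rule: mono_induct_I)
  case zero
  show ?case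
  proof
    fix i assume i: "i \<in> I"
    have "madd (\<lambda>_. 0) (ev i) = madd (ev i) (\<lambda>_. 0)" by (simp add: madd_def)
    then have "Xm q I x (madd (\<lambda>_. 0) (ev i)) = qmult q I (x i) qone"
      using Xm_unfold[OF finI i, of "\<lambda>_. 0" q x] by (simp add: Xm_zero)
    then show "qmult q I (x i) (Xm q I x (\<lambda>_. 0)) = (\<lambda>z. twist q I (ev i) (\<lambda>_. 0) * Xm q I x (madd (\<lambda>_. 0) (ev i)) z)"
      by (simp add: Xm_zero twist_zero_right)
  qed
next
  case (step j b)
  show ?case
  proof
    fix i assume i: "i \<in> I"
    show "qmult q I (x i) (Xm q I x (madd (ev j) b)) = (\<lambda>z. twist q I (ev i) (madd (ev j) b) * Xm q I x (madd (madd (ev j) b) (ev i)) z)"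
    proof (cases "i \<le> j")
      case True
      have low: "\<forall>l<i. madd (ev j) b l = 0" using True step(3) by (auto simp: madd_def ev_def)
      have e: "madd (madd (ev j) b) (ev i) = madd (ev i) (madd (ev j) b)" by (auto simp: madd_def)
      show ?thesis
        using Xm_unfold[OF finI i low, of q x] twist_ev_low[of i "madd (ev j) b" q I] low e by simp
    next
      case False
      then have ji: "j < i" by simp
      have mb: "madd b (ev i) \<in> qmonos I" using step(2) i qmonos_madd qmonos_ev by blast
      have low: "\<forall>l<j. madd b (ev i) l = 0" using ji step(3) by (auto simp: madd_def ev_def)
      have "qmult q I (x i) (Xm q I x (madd (ev j) b)) = qmult q I (x i) (qmult q I (x j) (Xm q I x b))"
        using Xm_unfold[OF finI step(1) step(3), of q x] by simp
      also have "\<dots> = qmult q I (qmult q I (x i) (x j)) (Xm q I x b)"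
        by (rule qmult_assoc[symmetric]) (use i step xfin X_fin in auto)
      also have "\<dots> = qmult q I (\<lambda>z. q j i * qmult q I (x j) (x i) z) (Xm q I x b)"
        using rel[OF step(1) i] by simp
      also have "\<dots> = (\<lambda>z. q j i * qmult q I (qmult q I (x j) (x i)) (Xm q I x b) z)"
        by (rule qmult_scale_left) (use i step xfin X_fin in \<open>auto intro: finite_qsupp_qmult\<close>)
      also have "qmult q I (qmult q I (x j) (x i)) (Xm q I x b) = qmult q I (x j) (qmult q I (x i) (Xm q I x b))"
        by (rule qmult_assoc) (use i step xfin X_fin in auto)
      also have "\<dots> = qmult q I (x j) (\<lambda>z. twist q I (ev i) b * Xm q I x (madd b (ev i)) z)"
        using step(4) i by simp
      also have "\<dots> = (\<lambda>z. twist q I (ev i) b * qmult q I (x j) (Xm q I x (madd b (ev i))) z)"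
        by (rule qmult_scale_right) (use i step xfin X_fin mb in auto)
      also have "qmult q I (x j) (Xm q I x (madd b (ev i))) = Xm q I x (madd (ev j) (madd b (ev i)))"
        using Xm_unfold[OF finI step(1) low, of q x] by simp
      also have "madd (ev j) (madd b (ev i)) = madd (madd (ev j) b) (ev i)"
        by (simp add: madd_assoc)
      also have "twist q I (ev i) (madd (ev j) b) = q j i * twist q I (ev i) b"
        using twist_add_right[of q I "ev i" "ev j" b] twist_ev_ev[OF finI i step(1), of q] ji by simp
      ultimately show ?thesis by (simp add: mult.assoc)
    qed
  qed
qed


lemma mainX: "a \<in> qmonos I \<Longrightarrow> \<forall>b\<in>qmonos I. qmult q I (Xm q I x a) (Xm q I x b) = (\<lambda>z. twist q I a b * Xm q I x (madd a b) z)"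
proof (induction a rule: mono_induct_I)
  case zero
  have e: "madd (\<lambda>_. 0) b = b" for b by (simp add: madd_def)
  show ?case by (auto simp: Xm_zero twist_zero_left e intro!: qmult_one_left X_fin)
next
  case (step i a)
  show ?case
  proof
    fix b assume b: "b \<in> qmonos I"
    have mab: "madd a b \<in> qmonos I" using step b qmonos_madd by blast
    have "qmult q I (Xm q I x (madd (ev i) a)) (Xm q I x b) = qmult q I (qmult q I (x i) (Xm q I x a)) (Xm q I x b)"
      using Xm_unfold[OF finI step(1) step(3), of q x] by simp
    also have "\<dots> = qmult q I (x i) (qmult q I (Xm q I x a) (Xm q I x b))"
      by (rule qmult_assoc) (use step b xfin X_fin in auto)
    also have "\<dots> = qmult q I (x i) (\<lambda>z. twist q I a b * Xm q I x (madd a b) z)"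
      using step(4) b by simp
    also have "\<dots> = (\<lambda>z. twist q I a b * qmult q I (x i) (Xm q I x (madd a b)) z)"
      by (rule qmult_scale_right) (use step xfin X_fin mab in auto)
    also have "qmult q I (x i) (Xm q I x (madd a b)) = (\<lambda>z. twist q I (ev i) (madd a b) * Xm q I x (madd (madd a b) (ev i)) z)"
      using L2[OF mab] step(1) by simp
    also have "madd (madd a b) (ev i) = madd (madd (ev i) a) b" by (auto simp: madd_def)
    also have "twist q I (ev i) (madd a b) = twist q I (ev i) b"
      using twist_add_right[of q I "ev i" a b] twist_ev_low[of i a q I] step(3) by simp
    finally have eq: "qmult q I (Xm q I x (madd (ev i) a)) (Xm q I x b) = (\<lambda>z. twist q I a b *
          (twist q I (ev i) b * Xm q I x (madd (madd (ev i) a) b) z))" .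
    have tw: "twist q I (madd (ev i) a) b = twist q I (ev i) b * twist q I a b"
      by (simp add: twist_add_left)
    show "qmult q I (Xm q I x (madd (ev i) a)) (Xm q I x b) =
          (\<lambda>z. twist q I (madd (ev i) a) b * Xm q I x (madd (madd (ev i) a) b) z)"
      unfolding eq tw by (simp add: mult_ac)
  qed
qed

end

definition phi :: "(nat \<Rightarrow> nat \<Rightarrow> 'k::field) \<Rightarrow> nat set \<Rightarrow> (nat \<Rightarrow> (nat \<Rightarrow> nat) \<Rightarrow> 'k)
   \<Rightarrow> ((nat \<Rightarrow> nat) \<Rightarrow> 'k) \<Rightarrow> (nat \<Rightarrow> nat) \<Rightarrow> 'k" where
  "phi q I x f = (\<lambda>z. \<Sum>m\<in>qsupp f. f m * Xm q I x m z)"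

lemma phi_repr:
  assumes "finite S" "qsupp f \<subseteq> S"
  shows "phi q I x f = (\<lambda>z. \<Sum>m\<in>S. f m * Xm q I x m z)"
proof
  fix z
  show "phi q I x f z = (\<Sum>m\<in>S. f m * Xm q I x m z)"
    unfolding phi_def
    by (rule sum.mono_neutral_left) (use assms in \<open>auto simp: qsupp_def\<close>)
qed

lemma phi_lin:
  fixes A :: "'a \<Rightarrow> (nat \<Rightarrow> nat) \<Rightarrow> 'k::field"
  assumes "finite K" "\<And>k. k \<in> K \<Longrightarrow> finite (qsupp (A k))"
  shows "phi q I x (\<lambda>z. \<Sum>k\<in>K. c k * A k z) = (\<lambda>z. \<Sum>k\<in>K. c k * phi q I x (A k) z)"
proof
  fix z
  define S where "S = (\<Union>k\<in>K. qsupp (A k))"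
  have fS: "finite S" using assms by (auto simp: S_def)
  have "phi q I x (\<lambda>z. \<Sum>k\<in>K. c k * A k z) z = (\<Sum>m\<in>S. (\<Sum>k\<in>K. c k * A k m) * Xm q I x m z)"
    using phi_repr[OF fS qsupp_sum[of c A K, folded S_def], of q I x] by simp
  also have "\<dots> = (\<Sum>k\<in>K. c k * (\<Sum>m\<in>S. A k m * Xm q I x m z))"
    by (simp add: sum_distrib_right sum_distrib_left mult.assoc sum.swap[of _ S])
  also have "\<dots> = (\<Sum>k\<in>K. c k * phi q I x (A k) z)"
  proof (intro sum.cong refl)
    fix k assume "k \<in> K"
    then have "phi q I x (A k) = (\<lambda>z. \<Sum>m\<in>S. A k m * Xm q I x m z)"
      by (intro phi_repr fS) (auto simp: S_def)
    then show "c k * (\<Sum>m\<in>S. A k m * Xm q I x m z) = c k * phi q I x (A k) z" by simp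
  qed
  finally show "phi q I x (\<lambda>z. \<Sum>k\<in>K. c k * A k z) z = (\<Sum>k\<in>K. c k * phi q I x (A k) z)" .
qed

lemma phi_add:
  assumes "finite (qsupp f)" "finite (qsupp g)"
  shows "phi q I x (\<lambda>z. f z + g z) = (\<lambda>z. phi q I x f z + phi q I x g z)"
proof -
  define S where "S = qsupp f \<union> qsupp g"
  have fS: "finite S" using assms by (simp add: S_def)
  have "qsupp (\<lambda>z. f z + g z) \<subseteq> S" by (auto simp: S_def qsupp_def)
  then have a: "phi q I x (\<lambda>z. f z + g z) = (\<lambda>z. \<Sum>m\<in>S. (f m + g m) * Xm q I x m z)"
    using phi_repr[OF fS] by blast
  have b: "phi q I x f = (\<lambda>z. \<Sum>m\<in>S. f m * Xm q I x m z)" by (rule phi_repr[OF fS]) (auto simp: S_def)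
  have c: "phi q I x g = (\<lambda>z. \<Sum>m\<in>S. g m * Xm q I x m z)" by (rule phi_repr[OF fS]) (auto simp: S_def)
  show ?thesis unfolding a b c by (simp add: distrib_right sum.distrib)
qed

lemma phi_scale:
  assumes "finite (qsupp f)"
  shows "phi q I x (\<lambda>z. c * f z) = (\<lambda>z. c * phi q I x f z)"
proof -
  have a: "phi q I x (\<lambda>z. c * f z) = (\<lambda>z. \<Sum>m\<in>qsupp f. (c * f m) * Xm q I x m z)"
    by (rule phi_repr) (use assms in \<open>auto simp: qsupp_def\<close>)
  show ?thesis unfolding a by (simp add: phi_def sum_distrib_left mult.assoc)
qed

lemma phi_dl: "phi q I x (dl m) = Xm q I x m"
  by (rule ext) (simp add: phi_def qsupp_dl, simp add: dl_def)

lemma phi_one: "phi q I x qone = qone"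
  by (simp add: qone_dl phi_dl Xm_zero)

lemma carrier_qmonos: "f \<in> qcarrier I \<Longrightarrow> m \<in> qsupp f \<Longrightarrow> m \<in> qmonos I"
  by (auto simp: qcarrier_def)

context gens
begin

lemma phi_carrier: "f \<in> qcarrier I \<Longrightarrow> phi q I x f \<in> qcarrier I"
  unfolding phi_def using qcarrier_finite carrier_qmonos X_carrier by (intro qcarrier_sum) blast+

lemma phi_homog: "f \<in> qhomog I d \<Longrightarrow> phi q I x f \<in> qhomog I d"
  unfolding phi_def
  by (rule qhomog_sum) (use X_homog in \<open>auto simp: qhomog_def qcarrier_def deg_def\<close>)

lemma phi_qvar: "i \<in> I \<Longrightarrow> phi q I x (qvar i) = x i"
proof -
  assume i: "i \<in> I"
  have "ev i = madd (ev i) (\<lambda>_. 0)" by (simp add: madd_def)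
  then have "Xm q I x (ev i) = qmult q I (x i) qone"
    using Xm_unfold[OF finI i, of "\<lambda>_. 0" q x] by (simp add: Xm_zero)
  then show ?thesis using qmult_one_right[OF xfin[OF i]] by (simp add: qvar_dl phi_dl)
qed

lemma phi_mult:
  assumes f: "f \<in> qcarrier I" and g: "g \<in> qcarrier I"
  shows "phi q I x (qmult q I f g) = qmult q I (phi q I x f) (phi q I x g)"
proof -
  define Sf where "Sf = qsupp f"
  define Sg where "Sg = qsupp g"
  have fin: "finite Sf" "finite Sg" using f g by (auto simp: Sf_def Sg_def qcarrier_def)
  have mon: "\<And>a. a \<in> Sf \<Longrightarrow> a \<in> qmonos I" "\<And>b. b \<in> Sg \<Longrightarrow> b \<in> qmonos I"
    using f g by (auto simp: Sf_def Sg_def qcarrier_def)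
  have ef: "f = (\<lambda>x. \<Sum>a\<in>Sf. f a * dl a x)" by (rule dl_expand) (use fin in \<open>auto simp: Sf_def\<close>)
  have eg: "g = (\<lambda>x. \<Sum>a\<in>Sg. g a * dl a x)" by (rule dl_expand) (use fin in \<open>auto simp: Sg_def\<close>)
  have "qmult q I f g = qmult q I (\<lambda>x. \<Sum>a\<in>Sf. f a * dl a x) (\<lambda>x. \<Sum>a\<in>Sg. g a * dl a x)"
    using ef eg by simp
  also have "\<dots> = (\<lambda>z. \<Sum>a\<in>Sf. \<Sum>b\<in>Sg. f a * g b * qmult q I (dl a) (dl b) z)"
    by (rule qmult_bilin) (use fin finite_qsupp_dl in auto)
  also have "\<dots> = (\<lambda>z. \<Sum>p\<in>Sf \<times> Sg. (f (fst p) * g (snd p) * twist q I (fst p) (snd p)) * dl (madd (fst p) (snd p)) z)"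
    by (simp add: sum.cartesian_product case_prod_beta qmult_dl mult.assoc)
  finally have e1: "qmult q I f g = \<dots>" .
  have "phi q I x (qmult q I f g) = (\<lambda>z. \<Sum>p\<in>Sf \<times> Sg. (f (fst p) * g (snd p) * twist q I (fst p) (snd p)) * Xm q I x (madd (fst p) (snd p)) z)"
    unfolding e1 by (subst phi_lin) (use fin finite_qsupp_dl in \<open>auto simp: phi_dl\<close>)
  also have "\<dots> = (\<lambda>z. \<Sum>a\<in>Sf. \<Sum>b\<in>Sg. (f a * g b * twist q I a b) * Xm q I x (madd a b) z)"
    by (intro ext) (rule sum_pair_split)
  finally have L: "phi q I x (qmult q I f g) = \<dots>" .
  have pf: "phi q I x f = (\<lambda>z. \<Sum>a\<in>Sf. f a * Xm q I x a z)" by (simp add: phi_def Sf_def)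
  have pg: "phi q I x g = (\<lambda>z. \<Sum>a\<in>Sg. g a * Xm q I x a z)" by (simp add: phi_def Sg_def)
  have "qmult q I (phi q I x f) (phi q I x g) = (\<lambda>z. \<Sum>a\<in>Sf. \<Sum>b\<in>Sg. f a * g b * qmult q I (Xm q I x a) (Xm q I x b) z)"
    unfolding pf pg by (rule qmult_bilin) (use fin mon X_fin in auto)
  also have "\<dots> = (\<lambda>z. \<Sum>a\<in>Sf. \<Sum>b\<in>Sg. (f a * g b * twist q I a b) * Xm q I x (madd a b) z)"
    by (intro ext sum.cong refl) (use mon mainX in \<open>auto simp: mult.assoc\<close>)
  finally show ?thesis using L by simp
qed

end

definition supp_ok :: "nat set \<Rightarrow> (nat \<Rightarrow> nat \<Rightarrow> 'k::zero) \<Rightarrow> bool" where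
  "supp_ok I g \<longleftrightarrow> (\<forall>a b. (a \<notin> I \<or> b \<notin> I) \<longrightarrow> g a b = 0)"

lemma supp_ok_matmul: "supp_ok I (matmul I g h)"
  by (simp add: supp_ok_def matmul_def)

lemma supp_ok_matid: "supp_ok I (matid I)"
  by (simp add: supp_ok_def matid_def)

lemma matmul_assoc: "matmul I (matmul I g h) k = matmul I g (matmul I h k)"
proof (intro ext)
  fix a b
  show "matmul I (matmul I g h) k a b = matmul I g (matmul I h k) a b"
  proof (cases "a \<in> I \<and> b \<in> I")
    case True
    have "matmul I (matmul I g h) k a b = (\<Sum>c\<in>I. (\<Sum>d\<in>I. g a d * h d c) * k c b)"
      using True by (simp add: matmul_def)
    also have "\<dots> = (\<Sum>c\<in>I. \<Sum>d\<in>I. g a d * h d c * k c b)"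
      by (simp add: sum_distrib_right)
    also have "\<dots> = (\<Sum>d\<in>I. \<Sum>c\<in>I. g a d * h d c * k c b)"
      by (rule sum.swap)
    also have "\<dots> = (\<Sum>d\<in>I. g a d * (\<Sum>c\<in>I. h d c * k c b))"
      by (simp add: sum_distrib_left mult.assoc)
    also have "\<dots> = matmul I g (matmul I h k) a b"
      using True by (simp add: matmul_def)
    finally show ?thesis .
  next
    case False then show ?thesis by (auto simp: matmul_def)
  qed
qed

lemma matid_left:
  assumes "supp_ok I g" "finite I" shows "matmul I (matid I) g = g"
proof (intro ext)
  fix a b
  show "matmul I (matid I) g a b = g a b"
  proof (cases "a \<in> I \<and> b \<in> I")
    case True
    have "matmul I (matid I) g a b = (\<Sum>c\<in>I. if c = a then g c b else 0)"
      using True by (simp add: matmul_def matid_def) (intro sum.cong refl, auto)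
    also have "\<dots> = g a b" using True assms by (simp add: sum.delta')
    finally show ?thesis .
  next
    case False then show ?thesis using assms by (auto simp: matmul_def supp_ok_def)
  qed
qed

lemma matid_right:
  assumes "supp_ok I g" "finite I" shows "matmul I g (matid I) = g"
proof (intro ext)
  fix a b
  show "matmul I g (matid I) a b = g a b"
  proof (cases "a \<in> I \<and> b \<in> I")
    case True
    have "matmul I g (matid I) a b = (\<Sum>c\<in>I. if c = b then g a c else 0)"
      using True by (simp add: matmul_def matid_def) (intro sum.cong refl, auto)
    also have "\<dots> = g a b" using True assms by (simp add: sum.delta')
    finally show ?thesis .
  next
    case False then show ?thesis using assms by (auto simp: matmul_def supp_ok_def)
  qed
qed

definition ahom :: "(nat \<Rightarrow> nat \<Rightarrow> 'k::field) \<Rightarrow> nat set \<Rightarrow> (((nat \<Rightarrow> nat) \<Rightarrow> 'k) \<Rightarrow> ((nat \<Rightarrow> nat) \<Rightarrow> 'k)) \<Rightarrow> bool" where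
  "ahom q I \<psi> \<longleftrightarrow> (\<forall>f\<in>qcarrier I. \<psi> f \<in> qcarrier I)
   \<and> (\<forall>f\<in>qcarrier I. \<forall>g\<in>qcarrier I. \<psi> (\<lambda>m. f m + g m) = (\<lambda>m. \<psi> f m + \<psi> g m))
   \<and> (\<forall>c. \<forall>f\<in>qcarrier I. \<psi> (\<lambda>m. c * f m) = (\<lambda>m. c * \<psi> f m))
   \<and> (\<forall>f\<in>qcarrier I. \<forall>g\<in>qcarrier I. \<psi> (qmult q I f g) = qmult q I (\<psi> f) (\<psi> g))
   \<and> \<psi> qone = qone"

lemma graded_aut_ahom: "graded_aut q I \<phi> \<Longrightarrow> ahom q I \<phi>"
  by (auto simp: graded_aut_def ahom_def bij_betw_def)

lemma qone_carrier: "qone \<in> qcarrier I"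
  using qone_qhomog by (auto simp: qhomog_def)

lemma ahom_zero:
  assumes "ahom q I \<psi>" shows "\<psi> (\<lambda>_. 0) = (\<lambda>_. 0)"
proof -
  have "\<psi> (\<lambda>m. 0 * qone m) = (\<lambda>m. 0 * \<psi> qone m)"
    using assms qone_carrier unfolding ahom_def by blast
  then show ?thesis by simp
qed

lemma ahom_sum:
  fixes A :: "'a \<Rightarrow> (nat \<Rightarrow> nat) \<Rightarrow> 'k::field"
  assumes "ahom q I \<psi>" "finite K" "\<And>k. k \<in> K \<Longrightarrow> A k \<in> qcarrier I"
  shows "\<psi> (\<lambda>z. \<Sum>k\<in>K. c k * A k z) = (\<lambda>z. \<Sum>k\<in>K. c k * \<psi> (A k) z)"
  using assms(2,3)
proof (induction K rule: finite_induct)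
  case empty
  then show ?case using ahom_zero[OF assms(1)] by simp
next
  case (insert k K)
  have s1: "(\<lambda>z. c k * A k z) \<in> qcarrier I" using insert by (intro qcarrier_scale) auto
  have s2: "(\<lambda>z. \<Sum>k\<in>K. c k * A k z) \<in> qcarrier I" using insert by (intro qcarrier_sum) auto
  have "\<psi> (\<lambda>z. \<Sum>k\<in>insert k K. c k * A k z) = \<psi> (\<lambda>z. c k * A k z + (\<Sum>k\<in>K. c k * A k z))"
    using insert by simp
  also have "\<dots> = (\<lambda>z. \<psi> (\<lambda>z. c k * A k z) z + \<psi> (\<lambda>z. \<Sum>k\<in>K. c k * A k z) z)"
    using assms(1) s1 s2 by (simp add: ahom_def)
  also have "\<dots> = (\<lambda>z. c k * \<psi> (A k) z + (\<Sum>k\<in>K. c k * \<psi> (A k) z))"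
    using insert assms(1) by (simp add: ahom_def)
  finally show ?case using insert by simp
qed

lemma qhomog_carrier: "f \<in> qhomog I d \<Longrightarrow> f \<in> qcarrier I"
  by (simp add: qhomog_def)

lemma mono_induct2[consumes 2, case_names zero step]:
  assumes "finite I" "m \<in> qmonos I" "P (\<lambda>_. 0)"
    "\<And>i b. i \<in> I \<Longrightarrow> b \<in> qmonos I \<Longrightarrow> (\<forall>j<i. b j = 0) \<Longrightarrow> P b \<Longrightarrow> P (madd (ev i) b)"
  shows "P m"
  using mono_induct[OF assms(1,2)] assms(3,4) by blast

lemma ahom_dl:
  fixes \<psi> :: "((nat \<Rightarrow> nat) \<Rightarrow> 'k::field) \<Rightarrow> ((nat \<Rightarrow> nat) \<Rightarrow> 'k)"
  assumes "ahom q I \<psi>" "finite I" "m \<in> qmonos I"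
  shows "\<psi> (dl m) = Xm q I (\<lambda>i. \<psi> (qvar i)) m"
  using assms(2,3)
proof (induction m rule: mono_induct2)
  case zero
  then show ?case using assms(1) by (simp add: Xm_zero qone_dl[symmetric] ahom_def)
next
  case (step i b)
  have "dl (madd (ev i) b) = qmult q I (qvar i) (dl b)"
    using twist_ev_low[of i b q I] step(3) by (simp add: qvar_dl qmult_dl)
  moreover have "(qvar i :: (nat \<Rightarrow> nat) \<Rightarrow> 'k) \<in> qcarrier I" by (rule qhomog_carrier[OF qvar_qhomog[OF assms(2) step(1)]])
  moreover have "(dl b :: (nat \<Rightarrow> nat) \<Rightarrow> 'k) \<in> qcarrier I" using dl_qcarrier step(2) by blast
  ultimately have "\<psi> (dl (madd (ev i) b)) = qmult q I (\<psi> (qvar i)) (\<psi> (dl b))"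
    using assms(1) unfolding ahom_def by metis
  also have "\<dots> = Xm q I (\<lambda>i. \<psi> (qvar i)) (madd (ev i) b)"
    using Xm_unfold[OF assms(2) step(1) step(3), of q "\<lambda>i. \<psi> (qvar i)"] step(4) by simp
  finally show ?case .
qed

lemma ahom_unique:
  assumes "ahom q I \<psi>" "finite I" "f \<in> qcarrier I"
  shows "\<psi> f = phi q I (\<lambda>i. \<psi> (qvar i)) f"
proof -
  have fin: "finite (qsupp f)" using assms by (simp add: qcarrier_def)
  have e: "f = (\<lambda>x. \<Sum>a\<in>qsupp f. f a * dl a x)" by (rule dl_expand[OF fin]) simp
  have "\<psi> f = (\<lambda>x. \<Sum>a\<in>qsupp f. f a * \<psi> (dl a) x)"
    by (subst e, rule ahom_sum[OF assms(1) fin]) (use assms in \<open>auto intro: dl_qcarrier carrier_qmonos\<close>)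
  also have "\<dots> = phi q I (\<lambda>i. \<psi> (qvar i)) f"
    unfolding phi_def by (intro ext sum.cong refl) (simp add: ahom_dl[OF assms(1,2)] carrier_qmonos[OF assms(3)])
  finally show ?thesis .
qed

lemma ahom_id: "ahom q I id"
  by (simp add: ahom_def qcarrier_add qcarrier_scale qcarrier_qmult)

lemma ahom_comp: "ahom q I \<psi>1 \<Longrightarrow> ahom q I \<psi>2 \<Longrightarrow> ahom q I (\<psi>1 \<circ> \<psi>2)"
  by (simp add: ahom_def)

lemma Xm_cong:
  assumes "finite I" "\<forall>i\<in>I. x i = y i" "m \<in> qmonos I"
  shows "Xm q I x m = Xm q I y m"
  using assms(1,3)
proof (induction m rule: mono_induct2)
  case zero then show ?case by (simp add: Xm_zero)
next
  case (step i b) then show ?case using Xm_unfold[OF assms(1) step(1) step(3), of q x] Xm_unfold[OF assms(1) step(1) step(3), of q y] assms(2) by simp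
qed

lemma phi_cong:
  assumes "finite I" "\<forall>i\<in>I. x i = y i" "f \<in> qcarrier I"
  shows "phi q I x f = phi q I y f"
  unfolding phi_def by (intro ext sum.cong refl) (simp add: Xm_cong[OF assms(1,2)] carrier_qmonos[OF assms(3)])

lemma ahom_fix_qvar:
  assumes "ahom q I \<psi>" "finite I" "\<forall>i\<in>I. \<psi> (qvar i) = qvar i" "f \<in> qcarrier I"
  shows "\<psi> f = f"
proof -
  have "\<psi> f = phi q I (\<lambda>i. \<psi> (qvar i)) f" by (rule ahom_unique) fact+
  also have "\<dots> = phi q I (\<lambda>i. id (qvar i)) f" by (rule phi_cong) (use assms in auto)
  also have "\<dots> = id f" by (rule ahom_unique[symmetric]) (use assms ahom_id in \<open>auto simp: id_def\<close>)
  finally show ?thesis by simp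
qed

definition REL :: "(nat \<Rightarrow> nat \<Rightarrow> 'k::field) \<Rightarrow> nat set \<Rightarrow> (nat \<Rightarrow> nat \<Rightarrow> 'k) \<Rightarrow> bool" where
  "REL q I g \<longleftrightarrow> (\<forall>i\<in>I. \<forall>j\<in>I. qmult q I (lin_of I g j) (lin_of I g i)
       = (\<lambda>z. q i j * qmult q I (lin_of I g i) (lin_of I g j) z))"

lemma lin_of_homog:
  fixes g :: "nat \<Rightarrow> nat \<Rightarrow> 'k::field"
  assumes "finite I" shows "lin_of I g i \<in> qhomog I 1"
  unfolding lin_of_def by (rule qhomog_sum) (use assms qvar_qhomog in auto)

lemma lin_of_carrier:
  fixes g :: "nat \<Rightarrow> nat \<Rightarrow> 'k::field"
  assumes "finite I" shows "lin_of I g i \<in> qcarrier I"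
  by (rule qhomog_carrier[OF lin_of_homog[OF assms]])

lemma qvar_carrier: "finite I \<Longrightarrow> i \<in> I \<Longrightarrow> (qvar i :: _ \<Rightarrow> 'k::field) \<in> qcarrier I"
  by (rule qhomog_carrier[OF qvar_qhomog])

lemma ahom_lin_of:
  fixes u :: "nat \<Rightarrow> nat \<Rightarrow> 'k::field"
  assumes "ahom q I \<psi>" "finite I"
  shows "\<psi> (lin_of I u i) = (\<lambda>z. \<Sum>a\<in>I. u a i * \<psi> (qvar a) z)"
  unfolding lin_of_def by (rule ahom_sum[OF assms(1,2)]) (use assms qvar_carrier in auto)

lemma lin_of_matmul:
  fixes u :: "nat \<Rightarrow> nat \<Rightarrow> 'k::field"
  assumes "ahom q I \<psi>" "finite I" "i \<in> I" "\<forall>a\<in>I. \<psi> (qvar a) = lin_of I g a"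
  shows "\<psi> (lin_of I u i) = lin_of I (matmul I g u) i"
proof
  fix z
  have "\<psi> (lin_of I u i) z = (\<Sum>a\<in>I. u a i * (\<Sum>c\<in>I. g c a * qvar c z))"
    using ahom_lin_of[OF assms(1,2), of u i] assms(4) by (simp add: lin_of_def)
  also have "\<dots> = (\<Sum>a\<in>I. \<Sum>c\<in>I. u a i * g c a * qvar c z)"
    by (simp add: sum_distrib_left mult.assoc)
  also have "\<dots> = (\<Sum>c\<in>I. \<Sum>a\<in>I. u a i * g c a * qvar c z)" by (rule sum.swap)
  also have "\<dots> = (\<Sum>c\<in>I. matmul I g u c i * qvar c z)"
    using assms(3) by (simp add: matmul_def sum_distrib_right sum_distrib_left mult_ac)
  finally show "\<psi> (lin_of I u i) z = lin_of I (matmul I g u) i z" by (simp add: lin_of_def)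
qed

lemma lin_of_matid:
  assumes "finite I" "i \<in> I" shows "lin_of I (matid I :: _ \<Rightarrow> _ \<Rightarrow> 'k::field) i = qvar i"
proof
  fix z
  have "lin_of I (matid I :: _ \<Rightarrow> _ \<Rightarrow> 'k::field) i z = (\<Sum>a\<in>I. if a = i then qvar i z else 0)"
    unfolding lin_of_def matid_def by (intro sum.cong refl) auto
  then show "lin_of I (matid I :: _ \<Rightarrow> _ \<Rightarrow> 'k::field) i z = qvar i z" using assms by (simp add: sum.delta')
qed

lemma gens_lin:
  fixes g :: "nat \<Rightarrow> nat \<Rightarrow> 'k::field"
  assumes "finite I" "qpm I q" "REL q I g"
  shows "gens q I (lin_of I g)"
proof (unfold_locales)
  show "finite I" by fact
  show "qpm I q" by fact
  fix i assume "i \<in> I"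
  show "lin_of I g i \<in> qhomog I 1" by (rule lin_of_homog[OF assms(1)])
next
  fix i j assume "i \<in> I" "j \<in> I"
  then show "qmult q I (lin_of I g j) (lin_of I g i) = (\<lambda>z. q i j * qmult q I (lin_of I g i) (lin_of I g j) z)"
    using assms(3) unfolding REL_def by blast
qed

lemma ahom_phi:
  fixes x :: "nat \<Rightarrow> (nat \<Rightarrow> nat) \<Rightarrow> 'k::field"
  assumes "gens q I x" shows "ahom q I (phi q I x)"
proof -
  interpret gens q I x by fact
  show ?thesis
    unfolding ahom_def
  proof (intro conjI ballI allI)
    fix f g :: "(nat \<Rightarrow> nat) \<Rightarrow> 'k" assume f: "f \<in> qcarrier I" and g: "g \<in> qcarrier I"
    show "phi q I x (\<lambda>m. f m + g m) = (\<lambda>m. phi q I x f m + phi q I x g m)"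
      by (rule phi_add) (use f g qcarrier_finite in blast)+
    show "phi q I x (qmult q I f g) = qmult q I (phi q I x f) (phi q I x g)"
      by (rule phi_mult[OF f g])
  next
    fix c and f :: "(nat \<Rightarrow> nat) \<Rightarrow> 'k" assume f: "f \<in> qcarrier I"
    show "phi q I x (\<lambda>m. c * f m) = (\<lambda>m. c * phi q I x f m)"
      by (rule phi_scale) (use f qcarrier_finite in blast)
  next
    fix f :: "(nat \<Rightarrow> nat) \<Rightarrow> 'k" assume f: "f \<in> qcarrier I"
    show "phi q I x f \<in> qcarrier I" by (rule phi_carrier[OF f])
  next
    show "phi q I x qone = qone" by (rule phi_one)
  qed
qed

theorem ET:
  fixes g h :: "nat \<Rightarrow> nat \<Rightarrow> 'k::field"
  assumes fin: "finite I" and qpm: "qpm I q" and sg: "supp_ok I g"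
    and gh: "matmul I g h = matid I" and hg: "matmul I h g = matid I"
    and rg: "REL q I g" and rh: "REL q I h"
  shows "g \<in> AutGr_set q I"
proof -
  interpret G: gens q I "lin_of I g" by (rule gens_lin[OF fin qpm rg])
  interpret H: gens q I "lin_of I h" by (rule gens_lin[OF fin qpm rh])
  define \<phi> where "\<phi> = phi q I (lin_of I g)"
  define \<phi>' where "\<phi>' = phi q I (lin_of I h)"
  have a1: "ahom q I \<phi>" unfolding \<phi>_def by (rule ahom_phi) unfold_locales
  have a2: "ahom q I \<phi>'" unfolding \<phi>'_def by (rule ahom_phi) unfold_locales
  have v1: "\<forall>a\<in>I. \<phi> (qvar a) = lin_of I g a" unfolding \<phi>_def using G.phi_qvar by blast
  have v2: "\<forall>a\<in>I. \<phi>' (qvar a) = lin_of I h a" unfolding \<phi>'_def using H.phi_qvar by blast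
  have c1: "\<forall>f\<in>qcarrier I. \<phi> f \<in> qcarrier I" using a1 by (simp add: ahom_def)
  have c2: "\<forall>f\<in>qcarrier I. \<phi>' f \<in> qcarrier I" using a2 by (simp add: ahom_def)
  have i1: "\<phi> (\<phi>' f) = f" if "f \<in> qcarrier I" for f
  proof -
    have "(\<phi> \<circ> \<phi>') f = f"
    proof (rule ahom_fix_qvar[OF ahom_comp[OF a1 a2] fin _ that], intro ballI)
      fix i assume i: "i \<in> I"
      have "(\<phi> \<circ> \<phi>') (qvar i) = \<phi> (lin_of I h i)" using v2 i by simp
      also have "\<dots> = lin_of I (matmul I g h) i" by (rule lin_of_matmul[OF a1 fin i v1])
      also have "\<dots> = qvar i" using gh lin_of_matid[OF fin i] by simp
      finally show "(\<phi> \<circ> \<phi>') (qvar i) = qvar i" .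
    qed
    then show ?thesis by simp
  qed
  have i2: "\<phi>' (\<phi> f) = f" if "f \<in> qcarrier I" for f
  proof -
    have "(\<phi>' \<circ> \<phi>) f = f"
    proof (rule ahom_fix_qvar[OF ahom_comp[OF a2 a1] fin _ that], intro ballI)
      fix i assume i: "i \<in> I"
      have "(\<phi>' \<circ> \<phi>) (qvar i) = \<phi>' (lin_of I g i)" using v1 i by simp
      also have "\<dots> = lin_of I (matmul I h g) i" by (rule lin_of_matmul[OF a2 fin i v2])
      also have "\<dots> = qvar i" using hg lin_of_matid[OF fin i] by simp
      finally show "(\<phi>' \<circ> \<phi>) (qvar i) = qvar i" .
    qed
    then show ?thesis by simp
  qed
  have bij: "bij_betw \<phi> (qcarrier I) (qcarrier I)"
    by (rule bij_betw_byWitness[where f'=\<phi>']) (use i1 i2 c1 c2 in auto)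
  have hom: "\<forall>d. \<forall>f\<in>qhomog I d. \<phi> f \<in> qhomog I d" unfolding \<phi>_def using G.phi_homog by blast
  have "graded_aut q I \<phi>" using bij hom a1 by (simp add: graded_aut_def ahom_def)
  moreover have "\<forall>a b. (a \<notin> I \<or> b \<notin> I) \<longrightarrow> g a b = 0" using sg by (simp add: supp_ok_def)
  ultimately show ?thesis using v1 unfolding AutGr_set_def by blast
qed

lemma madd_comm: "madd a b = madd b a"
  by (auto simp: madd_def)

lemma qvar_rel:
  assumes "finite I" "qpm I q" "i \<in> I" "j \<in> I"
  shows "qmult q I (qvar j) (qvar i) = (\<lambda>z. q i j * qmult q I (qvar i) (qvar j) (z::nat\<Rightarrow>nat))"
proof -
  have qij: "q i j * q j i = 1" "q i i = 1" using assms(2-4) by (auto simp: qpm_def)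
  have "twist q I (ev j) (ev i) = q i j * twist q I (ev i) (ev j)"
    using twist_ev_ev[OF assms(1) assms(4) assms(3), of q] twist_ev_ev[OF assms(1) assms(3) assms(4), of q] qij
    by (cases i j rule: linorder_cases) auto
  then show ?thesis by (simp add: qvar_dl qmult_dl madd_comm[of "ev j"] mult.assoc)
qed

lemma ev_inj: "ev a = ev c \<longleftrightarrow> a = c"
proof
  assume "ev a = ev c"
  then have "ev a a = ev c a" by simp
  then show "a = c" by (simp add: ev_def split: if_splits)
qed simp

lemma lin_of_ev:
  assumes "finite I" "a \<in> I"
  shows "lin_of I u i (ev a) = u a i"
proof -
  have "lin_of I u i (ev a) = (\<Sum>c\<in>I. if c = a then u a i else 0)"
    unfolding lin_of_def qvar_dl dl_def by (intro sum.cong refl) (auto simp: ev_inj)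
  then show ?thesis using assms by (simp add: sum.delta')
qed

lemma deg1:
  assumes "finite I" "m \<in> qmonos I" "deg I m = 1"
  shows "\<exists>c\<in>I. m = ev c"
proof -
  obtain c where c: "c \<in> I" "m c = Suc 0" "\<forall>b\<in>I. b \<noteq> c \<longrightarrow> m b = 0"
    using assms(3) sum_eq_Suc0_iff[OF assms(1), of m] by (auto simp: deg_def)
  have "m = ev c"
  proof
    fix b show "m b = ev c b"
      using c assms(2) by (cases "b \<in> I") (auto simp: ev_def qmonos_def)
  qed
  then show ?thesis using c by blast
qed

lemma AutGr_REL:
  fixes g :: "nat \<Rightarrow> nat \<Rightarrow> 'k::field"
  assumes "finite I" "qpm I q" "g \<in> AutGr_set q I"
  shows "REL q I g"
proof -
  obtain \<phi> where ga: "graded_aut q I \<phi>" and v: "\<forall>i\<in>I. \<phi> (qvar i) = lin_of I g i"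
    using assms(3) by (auto simp: AutGr_set_def)
  have a: "ahom q I \<phi>" by (rule graded_aut_ahom[OF ga])
  have mult: "\<And>f g. f \<in> qcarrier I \<Longrightarrow> g \<in> qcarrier I \<Longrightarrow> \<phi> (qmult q I f g) = qmult q I (\<phi> f) (\<phi> g)"
    using a by (simp add: ahom_def)
  have scale: "\<And>c f. f \<in> qcarrier I \<Longrightarrow> \<phi> (\<lambda>z. c * f z) = (\<lambda>z. c * \<phi> f z)"
    using a by (simp add: ahom_def)
  show ?thesis unfolding REL_def
  proof (intro ballI)
    fix i j assume i: "i \<in> I" and j: "j \<in> I"
    have ci: "(qvar i :: _ \<Rightarrow> 'k) \<in> qcarrier I" and cj: "(qvar j :: _ \<Rightarrow> 'k) \<in> qcarrier I"
      using qvar_carrier[OF assms(1)] i j by auto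
    have cij: "qmult q I (qvar i) (qvar j) \<in> qcarrier I" using ci cj by (rule qcarrier_qmult)
    have "qmult q I (lin_of I g j) (lin_of I g i) = \<phi> (qmult q I (qvar j) (qvar i))"
      using mult[OF cj ci] v i j by simp
    also have "\<dots> = \<phi> (\<lambda>z. q i j * qmult q I (qvar i) (qvar j) z)"
      using qvar_rel[OF assms(1,2) i j] by simp
    also have "\<dots> = (\<lambda>z. q i j * \<phi> (qmult q I (qvar i) (qvar j)) z)"
      by (rule scale[OF cij])
    also have "\<phi> (qmult q I (qvar i) (qvar j)) = qmult q I (lin_of I g i) (lin_of I g j)"
      using mult[OF ci cj] v i j by simp
    finally show "qmult q I (lin_of I g j) (lin_of I g i) = (\<lambda>z. q i j * qmult q I (lin_of I g i) (lin_of I g j) z)" .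
  qed
qed

lemma AutGr_supp: "g \<in> AutGr_set q I \<Longrightarrow> supp_ok I g"
  by (auto simp: AutGr_set_def supp_ok_def)

lemma AutGr_inv:
  fixes g :: "nat \<Rightarrow> nat \<Rightarrow> 'k::field"
  assumes fin: "finite I" and gA: "g \<in> AutGr_set q I"
  shows "\<exists>h. supp_ok I h \<and> matmul I g h = matid I \<and> matmul I h g = matid I"
proof -
  obtain \<phi> where ga: "graded_aut q I \<phi>" and v: "\<forall>i\<in>I. \<phi> (qvar i) = lin_of I g i"
    using gA by (auto simp: AutGr_set_def)
  have ah: "ahom q I \<phi>" by (rule graded_aut_ahom[OF ga])
  have bij: "bij_betw \<phi> (qcarrier I) (qcarrier I)" using ga by (simp add: graded_aut_def)
  have hom: "\<And>d f. f \<in> qhomog I d \<Longrightarrow> \<phi> f \<in> qhomog I d" using ga by (simp add: graded_aut_def)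
  have sg: "supp_ok I g" by (rule AutGr_supp[OF gA])
  have "\<forall>i\<in>I. \<exists>u\<in>qcarrier I. \<phi> u = qvar i"
  proof
    fix i assume i: "i \<in> I"
    have "(qvar i :: _ \<Rightarrow> 'k) \<in> qcarrier I" by (rule qvar_carrier[OF fin i])
    then have "(qvar i :: _ \<Rightarrow> 'k) \<in> \<phi> ` qcarrier I" using bij by (simp add: bij_betw_def)
    then show "\<exists>u\<in>qcarrier I. \<phi> u = qvar i" by (metis imageE)
  qed
  then obtain U where U: "\<And>i. i \<in> I \<Longrightarrow> U i \<in> qcarrier I \<and> \<phi> (U i) = qvar i" by metis
  define h where "h = (\<lambda>a i. if a \<in> I \<and> i \<in> I then U i (ev a) else (0::'k))"
  have sh: "supp_ok I h" by (simp add: supp_ok_def h_def)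
  have key: "(\<Sum>c\<in>I. g a c * U i (ev c)) = (if a = i then 1 else 0)" if a: "a \<in> I" and i: "i \<in> I" for a i
  proof -
    define S where "S = qsupp (U i) \<union> ev ` I"
    have fS: "finite S" using U[OF i] fin by (auto simp: S_def qcarrier_def)
    have e: "U i = (\<lambda>x. \<Sum>m\<in>S. U i m * dl m x)" by (rule dl_expand[OF fS]) (auto simp: S_def)
    have mS: "m \<in> qmonos I" if "m \<in> S" for m
      using that U[OF i] qmonos_ev by (auto simp: S_def qcarrier_def)
    have "\<phi> (U i) = (\<lambda>z. \<Sum>m\<in>S. U i m * \<phi> (dl m) z)"
      by (subst e, rule ahom_sum[OF ah fS]) (use mS dl_qcarrier in blast)
    then have "qvar i (ev a) = (\<Sum>m\<in>S. U i m * \<phi> (dl m) (ev a))" using U[OF i] by metis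
    also have "\<dots> = (\<Sum>m\<in>ev ` I. U i m * \<phi> (dl m) (ev a))"
    proof (rule sum.mono_neutral_right[OF fS])
      show "ev ` I \<subseteq> S" by (auto simp: S_def)
      show "\<forall>m\<in>S - ev ` I. U i m * \<phi> (dl m) (ev a) = 0"
      proof
        fix m assume m: "m \<in> S - ev ` I"
        have hm: "\<phi> (dl m) \<in> qhomog I (deg I m)" using hom dl_qhomog mS m by blast
        show "U i m * \<phi> (dl m) (ev a) = 0"
        proof (rule ccontr)
          assume "U i m * \<phi> (dl m) (ev a) \<noteq> 0"
          then have "ev a \<in> qsupp (\<phi> (dl m))" by (auto simp: qsupp_def)
          then have "deg I m = 1" using hm deg_ev[OF fin a] by (auto simp: qhomog_def deg_def)
          then show False using deg1[OF fin mS] m by auto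
        qed
      qed
    qed
    also have "\<dots> = (\<Sum>c\<in>I. U i (ev c) * \<phi> (dl (ev c)) (ev a))"
      by (subst sum.reindex) (auto simp: inj_on_def ev_inj)
    also have "\<dots> = (\<Sum>c\<in>I. g a c * U i (ev c))"
      by (intro sum.cong refl) (use v a fin in \<open>auto simp: qvar_dl[symmetric] lin_of_ev\<close>)
    finally show ?thesis by (simp add: qvar_dl dl_def ev_inj)
  qed
  have gh: "matmul I g h = matid I"
  proof (intro ext)
    fix a i show "matmul I g h a i = matid I a i"
      using key by (auto simp: matmul_def matid_def h_def)
  qed
  have hg: "matmul I h g = matid I"
  proof (intro ext)
    fix a i
    show "matmul I h g a i = matid I a i"
    proof (cases "a \<in> I \<and> i \<in> I")
      case False then show ?thesis by (auto simp: matmul_def matid_def)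
    next
      case True
      then have aI: "a \<in> I" and iI: "i \<in> I" by auto
      have w: "lin_of I (matmul I h g) i \<in> qcarrier I" by (rule lin_of_carrier[OF fin])
      have "\<phi> (lin_of I (matmul I h g) i) = lin_of I (matmul I g (matmul I h g)) i"
        by (rule lin_of_matmul[OF ah fin iI v])
      also have "matmul I g (matmul I h g) = g"
        using gh matid_left[OF sg fin] by (simp add: matmul_assoc[symmetric])
      also have "lin_of I g i = \<phi> (qvar i)" using v iI by simp
      finally have "lin_of I (matmul I h g) i = qvar i"
        using bij w qvar_carrier[OF fin iI] by (auto simp: bij_betw_def inj_on_def)
      then have "lin_of I (matmul I h g) i (ev a) = qvar i (ev a)" by simp
      then show ?thesis using aI iI by (simp add: lin_of_ev[OF fin aI] matid_def qvar_dl dl_def ev_inj)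
    qed
  qed
  show ?thesis using sh gh hg by blast
qed

definition lv :: "nat set \<Rightarrow> (nat \<Rightarrow> 'k::field) \<Rightarrow> (nat \<Rightarrow> nat) \<Rightarrow> 'k" where
  "lv I u = (\<lambda>z. \<Sum>a\<in>I. u a * qvar a z)"

lemma lin_of_lv: "lin_of I g i = lv I (\<lambda>a. g a i)"
  by (simp add: lin_of_def lv_def)

lemma madd_ev_eq:
  "madd (ev a') (ev c') = madd (ev a) (ev c) \<longleftrightarrow> (a' = a \<and> c' = c) \<or> (a' = c \<and> c' = a)"
proof
  assume h: "madd (ev a') (ev c') = madd (ev a) (ev c)"
  have p: "ev a' k + ev c' k = ev a k + ev c k" for k
    using fun_cong[OF h, of k] by (simp add: madd_def)
  have p1: "a' = a \<or> a' = c"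
  proof (rule ccontr)
    assume "\<not> (a' = a \<or> a' = c)"
    then show False using p[of a'] by (simp add: ev_def)
  qed
  show "(a' = a \<and> c' = c) \<or> (a' = c \<and> c' = a)"
  proof (cases "a' = a")
    case True
    then have "c' = c" using p[of c'] by (simp add: ev_def split: if_splits)
    then show ?thesis using True by simp
  next
    case False
    then have ac: "a' = c" using p1 by simp
    then have "c' = a" using p[of c'] False by (simp add: ev_def split: if_splits)
    then show ?thesis using ac by simp
  qed
qed (auto simp: madd_def)

lemma qmult_lv:
  fixes u w :: "nat \<Rightarrow> 'k::field"
  assumes "finite I"
  shows "qmult q I (lv I u) (lv I w) = (\<lambda>z. \<Sum>a\<in>I. \<Sum>c\<in>I. u a * w c * (twist q I (ev a) (ev c) * dl (madd (ev a) (ev c)) z))"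
proof -
  have "qmult q I (lv I u) (lv I w) = (\<lambda>z. \<Sum>a\<in>I. \<Sum>c\<in>I. u a * w c * qmult q I (qvar a) (qvar c) z)"
    unfolding lv_def by (rule qmult_bilin) (use assms qvar_carrier qcarrier_finite in blast)+
  then show ?thesis by (simp add: qvar_dl qmult_dl)
qed

lemma qmult_lv_at:
  fixes u w :: "nat \<Rightarrow> 'k::field"
  assumes fin: "finite I" and a: "a \<in> I" and c: "c \<in> I"
  shows "qmult q I (lv I u) (lv I w) (madd (ev a) (ev c)) =
    (if a = c then u a * w a else u a * w c * twist q I (ev a) (ev c) + u c * w a * twist q I (ev c) (ev a))"
proof -
  define F where "F = (\<lambda>a' c'. u a' * w c' * twist q I (ev a') (ev c'))"
  have "qmult q I (lv I u) (lv I w) (madd (ev a) (ev c)) =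
      (\<Sum>a'\<in>I. \<Sum>c'\<in>I. if madd (ev a') (ev c') = madd (ev a) (ev c) then F a' c' else 0)"
    unfolding qmult_lv[OF fin] F_def by (intro sum.cong refl) (auto simp: dl_def)
  also have "\<dots> = (\<Sum>a'\<in>I. if a' = a then F a c else if a' = c then F c a else 0)"
  proof (intro sum.cong refl)
    fix a' assume a': "a' \<in> I"
    show "(\<Sum>c'\<in>I. if madd (ev a') (ev c') = madd (ev a) (ev c) then F a' c' else 0) =
        (if a' = a then F a c else if a' = c then F c a else 0)"
    proof (cases "a' = a")
      case True
      then have "(\<Sum>c'\<in>I. if madd (ev a') (ev c') = madd (ev a) (ev c) then F a' c' else 0)
          = (\<Sum>c'\<in>I. if c' = c then F a c else 0)"
        by (intro sum.cong refl) (auto simp: madd_ev_eq)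
      then show ?thesis using True c fin by (simp add: sum.delta')
    next
      case False
      then have "(\<Sum>c'\<in>I. if madd (ev a') (ev c') = madd (ev a) (ev c) then F a' c' else 0)
          = (\<Sum>c'\<in>I. if a' = c \<and> c' = a then F c a else 0)"
        by (intro sum.cong refl) (auto simp: madd_ev_eq)
      then show ?thesis using False a fin by (cases "a' = c") (simp_all add: sum.delta')
    qed
  qed
  also have "\<dots> = (\<Sum>a'\<in>I. (if a' = a then F a c else 0) + (if a' = c then (if a \<noteq> c then F c a else 0) else 0))"
    by (intro sum.cong refl) auto
  also have "\<dots> = F a c + (if a \<noteq> c then F c a else 0)"
    using fin a c by (simp only: sum.distrib sum.delta if_True)
  finally show ?thesis
    using twist_ev_ev[OF fin a a, of q] by (auto simp: F_def)
qed


lemma qmult_lv_diag: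
  fixes u w :: "nat \<Rightarrow> 'k::field"
  assumes "finite I" "c \<in> I"
  shows "qmult q I (lv I u) (lv I w) (madd (ev c) (ev c)) = u c * w c"
  using qmult_lv_at[OF assms(1,2,2)] by simp

lemma qmult_lv_off:
  fixes u w :: "nat \<Rightarrow> 'k::field"
  assumes "finite I" "a \<in> I" "c \<in> I" "a < c"
  shows "qmult q I (lv I u) (lv I w) (madd (ev a) (ev c)) = u a * w c + u c * w a * q a c"
  using qmult_lv_at[OF assms(1,2,3), of q u w] twist_ev_ev[OF assms(1,2,3), of q] twist_ev_ev[OF assms(1,3,2), of q] assms(4)
  by simp

lemma lv_carrier: "finite I \<Longrightarrow> lv I u \<in> qcarrier I"
  unfolding lv_def by (rule qcarrier_sum) (auto intro: qvar_carrier)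

lemma KEY:
  fixes g h :: "nat \<Rightarrow> nat \<Rightarrow> 'k::field"
  assumes fin: "finite I" and qpm: "qpm I q"
    and gh: "matmul I g h = matid I" and hg: "matmul I h g = matid I"
    and rg: "REL q I g"
    and iI: "i \<in> I" and jI: "j \<in> I" and aI: "a \<in> I" and bI: "b \<in> I"
    and gai: "g a i \<noteq> 0" and hjb: "h j b \<noteq> 0"
  shows "q i j = q a b"
proof -
  define xv where "xv = (\<lambda>c. g c i)"
  define yv where "yv = (\<lambda>c. \<Sum>l\<in>I. g c l * (h l b * q i l))"
  define eb where "eb = (\<lambda>c. if c = b then 1 else (0::'k))"
  have lc: "\<And>l. finite (qsupp (lin_of I g l))" using lin_of_carrier[OF fin] qcarrier_finite by blast
  have qb: "qvar b = (\<lambda>z. \<Sum>l\<in>I. h l b * lin_of I g l z)"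
  proof
    fix z
    have lm: "lin_of I (matid I) b = (qvar b :: _ \<Rightarrow> 'k)" by (rule lin_of_matid[OF fin bI])
    have "qvar b z = lin_of I (matmul I g h) b z" using gh lm by simp
    also have "\<dots> = (\<Sum>c\<in>I. (\<Sum>l\<in>I. g c l * h l b) * qvar c z)"
      using bI by (simp add: lin_of_def matmul_def)
    also have "\<dots> = (\<Sum>c\<in>I. \<Sum>l\<in>I. h l b * (g c l * qvar c z))"
      by (simp add: sum_distrib_right sum_distrib_left mult_ac)
    also have "\<dots> = (\<Sum>l\<in>I. \<Sum>c\<in>I. h l b * (g c l * qvar c z))" by (rule sum.swap)
    also have "\<dots> = (\<Sum>l\<in>I. h l b * lin_of I g l z)"
      by (simp add: lin_of_def sum_distrib_left)
    finally show "qvar b z = (\<Sum>l\<in>I. h l b * lin_of I g l z)" .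
  qed
  have E0: "qmult q I (qvar b) (lin_of I g i) = qmult q I (lin_of I g i) (\<lambda>z. \<Sum>l\<in>I. (h l b * q i l) * lin_of I g l z)"
  proof -
    have "qmult q I (qvar b) (lin_of I g i) = (\<lambda>z. \<Sum>l\<in>I. qmult q I (\<lambda>z. h l b * lin_of I g l z) (lin_of I g i) z)"
      unfolding qb by (rule qmult_sum_left) (use fin lc finite_qsupp_scale in auto)
    also have "\<dots> = (\<lambda>z. \<Sum>l\<in>I. h l b * qmult q I (lin_of I g l) (lin_of I g i) z)"
      by (simp add: qmult_scale_left[OF lc lc])
    also have "\<dots> = (\<lambda>z. \<Sum>l\<in>I. h l b * (q i l * qmult q I (lin_of I g i) (lin_of I g l) z))"
    proof (intro ext sum.cong refl)
      fix z l assume l: "l \<in> I"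
      have "qmult q I (lin_of I g l) (lin_of I g i) = (\<lambda>z. q i l * qmult q I (lin_of I g i) (lin_of I g l) z)"
        using rg iI l unfolding REL_def by blast
      from fun_cong[OF this, of z]
      show "h l b * qmult q I (lin_of I g l) (lin_of I g i) z = h l b * (q i l * qmult q I (lin_of I g i) (lin_of I g l) z)"
        by simp
    qed
    also have "\<dots> = (\<lambda>z. \<Sum>l\<in>I. qmult q I (lin_of I g i) (\<lambda>z. (h l b * q i l) * lin_of I g l z) z)"
      by (intro ext sum.cong refl) (simp only: qmult_scale_right[OF lc lc], simp add: mult.assoc)
    also have "\<dots> = qmult q I (lin_of I g i) (\<lambda>z. \<Sum>l\<in>I. (h l b * q i l) * lin_of I g l z)"
      by (rule qmult_sum_right[symmetric]) (use fin lc finite_qsupp_scale in auto)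
    finally show ?thesis .
  qed
  have ly: "(\<lambda>z. \<Sum>l\<in>I. (h l b * q i l) * lin_of I g l z) = lv I yv"
  proof
    fix z
    have "(\<Sum>l\<in>I. (h l b * q i l) * lin_of I g l z) = (\<Sum>l\<in>I. \<Sum>c\<in>I. g c l * (h l b * q i l) * qvar c z)"
      by (simp add: lin_of_def sum_distrib_left mult_ac)
    also have "\<dots> = (\<Sum>c\<in>I. \<Sum>l\<in>I. g c l * (h l b * q i l) * qvar c z)" by (rule sum.swap)
    also have "\<dots> = lv I yv z" by (simp add: lv_def yv_def sum_distrib_right)
    finally show "(\<Sum>l\<in>I. (h l b * q i l) * lin_of I g l z) = lv I yv z" .
  qed
  have le: "qvar b = lv I eb"
  proof
    fix z
    have "lv I eb z = (\<Sum>a\<in>I. if a = b then qvar b z else 0)"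
      unfolding lv_def by (intro sum.cong refl) (auto simp: eb_def)
    then show "qvar b z = lv I eb z" using bI fin by (simp add: sum.delta')
  qed
  have E: "qmult q I (lv I eb) (lv I xv) = qmult q I (lv I xv) (lv I yv)"
  proof -
    have E1: "qmult q I (qvar b) (lin_of I g i) = qmult q I (lin_of I g i) (lv I yv)"
      by (subst ly[symmetric]) (rule E0)
    show ?thesis using E1 unfolding le lin_of_lv xv_def .
  qed
  have Ed: "eb c * xv c = xv c * yv c" if "c \<in> I" for c
  proof -
    have "qmult q I (lv I eb) (lv I xv) (madd (ev c) (ev c)) = qmult q I (lv I xv) (lv I yv) (madd (ev c) (ev c))"
      using E by simp
    then show ?thesis by (simp only: qmult_lv_diag[OF fin that])
  qed
  have Eo: "eb a' * xv c + eb c * xv a' * q a' c = xv a' * yv c + xv c * yv a' * q a' c"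
    if "a' \<in> I" "c \<in> I" "a' < c" for a' c
  proof -
    have "qmult q I (lv I eb) (lv I xv) (madd (ev a') (ev c)) = qmult q I (lv I xv) (lv I yv) (madd (ev a') (ev c))"
      using E by simp
    then show ?thesis by (simp only: qmult_lv_off[OF fin that])
  qed
  have qinv: "q a' c * q c a' = 1" if "a' \<in> I" "c \<in> I" for a' c
    using qpm that by (auto simp: qpm_def)
  have qnz: "q a' c \<noteq> 0" if "a' \<in> I" "c \<in> I" for a' c
    using qinv[OF that] by auto
  have xa: "xv a \<noteq> 0" using gai by (simp add: xv_def)
  have A: "yv c = 0" if cI: "c \<in> I" and cb: "c \<noteq> b" for c
  proof (cases "xv c = 0")
    case False
    then show ?thesis using Ed[OF cI] cb by (simp add: eb_def)
  next
    case True
    then have ac: "a \<noteq> c" using xa by auto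
    show ?thesis
    proof (cases "a < c")
      case True
      then show ?thesis using Eo[OF aI cI True] \<open>xv c = 0\<close> cb xa by (simp add: eb_def)
    next
      case False
      then have "c < a" using ac by simp
      then show ?thesis using Eo[OF cI aI \<open>c < a\<close>] \<open>xv c = 0\<close> cb xa qnz[OF cI aI] by (simp add: eb_def)
    qed
  qed
  have B: "yv b = q a b"
  proof (cases "a = b")
    case True
    then have "yv b = 1" using Ed[OF bI] xa by (simp add: eb_def)
    then show ?thesis using True qpm bI by (simp add: qpm_def)
  next
    case False
    show ?thesis
    proof (cases "a < b")
      case True
      have "eb a * xv b + eb b * xv a * q a b = xv a * yv b + xv b * yv a * q a b" by (rule Eo[OF aI bI True])
      then show ?thesis using A[OF aI False] False xa by (simp add: eb_def)
    next
      case nlt: False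
      then have ba: "b < a" using False by simp
      have "eb b * xv a + eb a * xv b * q b a = xv b * yv a + xv a * yv b * q b a" by (rule Eo[OF bI aI ba])
      then have "1 = yv b * q b a" using A[OF aI False] False xa by (simp add: eb_def)
      then have "q a b * 1 = q a b * q b a * yv b" by (simp add: mult_ac)
      then show ?thesis using qinv[OF aI bI] by simp
    qed
  qed
  have C: "(\<Sum>c\<in>I. h j c * yv c) = h j b * yv b"
  proof -
    have "(\<Sum>c\<in>I. h j c * yv c) = (\<Sum>c\<in>I. if c = b then h j b * yv b else 0)"
      by (intro sum.cong refl) (use A in auto)
    then show ?thesis using bI fin by (simp add: sum.delta')
  qed
  have D: "(\<Sum>c\<in>I. h j c * yv c) = h j b * q i j"
  proof -
    have "(\<Sum>c\<in>I. h j c * yv c) = (\<Sum>c\<in>I. \<Sum>l\<in>I. h j c * g c l * (h l b * q i l))"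
      by (simp add: yv_def sum_distrib_left mult_ac)
    also have "\<dots> = (\<Sum>l\<in>I. \<Sum>c\<in>I. h j c * g c l * (h l b * q i l))" by (rule sum.swap)
    also have "\<dots> = (\<Sum>l\<in>I. matmul I h g j l * (h l b * q i l))"
      using jI by (simp add: matmul_def sum_distrib_right)
    also have "\<dots> = (\<Sum>l\<in>I. if l = j then h j b * q i j else 0)"
      unfolding hg by (intro sum.cong refl) (use jI in \<open>auto simp: matid_def\<close>)
    also have "\<dots> = h j b * q i j" using jI fin by (simp add: sum.delta')
    finally show ?thesis .
  qed
  have "h j b * q i j = h j b * q a b" using C D B by simp
  then show ?thesis using hjb by simp
qed

definition MC :: "(nat \<Rightarrow> nat \<Rightarrow> 'k::field) \<Rightarrow> nat set \<Rightarrow> (nat \<Rightarrow> nat \<Rightarrow> 'k) \<Rightarrow> bool" where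
  "MC q I g \<longleftrightarrow> (\<forall>i\<in>I. \<forall>j\<in>I. \<forall>a\<in>I. \<forall>b\<in>I. g a i \<noteq> 0 \<longrightarrow> g b j \<noteq> 0 \<longrightarrow> q a b = q i j)"

definition invpair :: "nat set \<Rightarrow> (nat \<Rightarrow> nat \<Rightarrow> 'k::field) \<Rightarrow> (nat \<Rightarrow> nat \<Rightarrow> 'k) \<Rightarrow> bool" where
  "invpair I g h \<longleftrightarrow> supp_ok I g \<and> supp_ok I h \<and> matmul I g h = matid I \<and> matmul I h g = matid I"

lemma qpm_inv: "qpm I q \<Longrightarrow> a \<in> I \<Longrightarrow> b \<in> I \<Longrightarrow> q a b = inverse (q b a)"
proof -
  assume "qpm I q" "a \<in> I" "b \<in> I"
  then have "q b a * q a b = 1" by (simp add: qpm_def)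
  then show ?thesis by (simp add: inverse_unique)
qed

lemma inv_ex:
  fixes g h :: "nat \<Rightarrow> nat \<Rightarrow> 'k::field"
  assumes "matmul I g h = matid I" "a \<in> I"
  shows "\<exists>i\<in>I. g a i \<noteq> 0 \<and> h i a \<noteq> 0"
proof (rule ccontr)
  assume "\<not> ?thesis"
  then have "(\<Sum>i\<in>I. g a i * h i a) = 0" by (intro sum.neutral) auto
  moreover have "matmul I g h a a = 1" using assms by (simp add: matid_def)
  ultimately show False using assms(2) by (simp add: matmul_def)
qed

lemma KEY_MC:
  fixes g h :: "nat \<Rightarrow> nat \<Rightarrow> 'k::field"
  assumes fin: "finite I" and qpm: "qpm I q" and ip: "invpair I g h"
    and key: "\<And>i j a b. i \<in> I \<Longrightarrow> j \<in> I \<Longrightarrow> a \<in> I \<Longrightarrow> b \<in> I \<Longrightarrow> g a i \<noteq> 0 \<Longrightarrow> h j b \<noteq> 0 \<Longrightarrow> q i j = q a b"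
  shows "MC q I g \<and> MC q I h"
proof -
  have gh: "matmul I g h = matid I" and hg: "matmul I h g = matid I" using ip by (auto simp: invpair_def)
  have F1: "\<exists>a\<in>I. g a i \<noteq> 0 \<and> h i a \<noteq> 0" if "i \<in> I" for i
    using inv_ex[OF hg that] by auto
  have F2: "\<exists>j\<in>I. g b j \<noteq> 0 \<and> h j b \<noteq> 0" if "b \<in> I" for b
    using inv_ex[OF gh that] by auto
  have D1: "q a l = q a' l" if H: "i \<in> I" "a \<in> I" "a' \<in> I" "l \<in> I" "g a i \<noteq> 0" "g a' i \<noteq> 0" for i a a' l
  proof -
    obtain j where j: "j \<in> I" "h j l \<noteq> 0" using F2[OF H(4)] by auto
    show ?thesis using key[OF H(1) j(1) H(2) H(4) H(5) j(2)] key[OF H(1) j(1) H(3) H(4) H(6) j(2)] by simp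
  qed
  have D2: "q l j = q l j'" if H: "b \<in> I" "j \<in> I" "j' \<in> I" "l \<in> I" "h j b \<noteq> 0" "h j' b \<noteq> 0" for b j j' l
  proof -
    obtain a where a: "a \<in> I" "g a l \<noteq> 0" using F1[OF H(4)] by auto
    show ?thesis using key[OF H(4) H(2) a(1) H(1) a(2) H(5)] key[OF H(4) H(3) a(1) H(1) a(2) H(6)] by simp
  qed
  have MCg: "MC q I g" unfolding MC_def
  proof (intro ballI impI)
    fix i j a b assume ij: "i \<in> I" "j \<in> I" "a \<in> I" "b \<in> I" and ga: "g a i \<noteq> 0" and gb: "g b j \<noteq> 0"
    obtain b0 where b0: "b0 \<in> I" "h j b0 \<noteq> 0" "g b0 j \<noteq> 0"
    proof -
      obtain b0 where "b0 \<in> I" "g b0 j \<noteq> 0 \<and> h j b0 \<noteq> 0" using F1[OF ij(2)] by auto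
      then show ?thesis using that by auto
    qed
    have "q i j = q a b0" by (rule key[OF ij(1,2,3) b0(1) ga b0(2)])
    moreover have "q b a = q b0 a" by (rule D1[OF ij(2) ij(4) b0(1) ij(3) gb b0(3)])
    then have "q a b = q a b0" using qpm_inv[OF qpm ij(3) ij(4)] qpm_inv[OF qpm ij(3) b0(1)] by simp
    ultimately show "q a b = q i j" by simp
  qed
  have MCh: "MC q I h" unfolding MC_def
  proof (intro ballI impI)
    fix i j a b assume ij: "i \<in> I" "j \<in> I" "a \<in> I" "b \<in> I" and ha: "h a i \<noteq> 0" and hb: "h b j \<noteq> 0"
    obtain a0 where a0: "a0 \<in> I" "g i a0 \<noteq> 0" "h a0 i \<noteq> 0" using F2[OF ij(1)] by auto
    have "q a0 b = q i j" using key[OF a0(1) ij(4) ij(1) ij(2) a0(2) hb] by simp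
    moreover have "q b a = q b a0" by (rule D2[OF ij(1) ij(3) a0(1) ij(4) ha a0(3)])
    then have "q a b = q a0 b" using qpm_inv[OF qpm ij(3) ij(4)] qpm_inv[OF qpm a0(1) ij(4)] by simp
    ultimately show "q a b = q i j" by simp
  qed
  show ?thesis using MCg MCh by simp
qed

lemma MC_REL:
  fixes g :: "nat \<Rightarrow> nat \<Rightarrow> 'k::field"
  assumes fin: "finite I" and qpm: "qpm I q" and mc: "MC q I g"
  shows "REL q I g"
  unfolding REL_def
proof (intro ballI)
  fix i j assume i: "i \<in> I" and j: "j \<in> I"
  define T where "T = (\<lambda>a c. (twist q I (ev a) (ev c) :: 'k))"
  define D where "D = (\<lambda>a c. (dl (madd (ev a) (ev c)) :: _ \<Rightarrow> 'k))"
  have dc: "D a c = D c a" for a c by (simp add: D_def madd_comm)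
  have L: "qmult q I (lin_of I g j) (lin_of I g i) = (\<lambda>z. \<Sum>a\<in>I. \<Sum>c\<in>I. g a j * g c i * (T a c * D a c z))"
    unfolding lin_of_lv qmult_lv[OF fin] T_def D_def by simp
  have R: "qmult q I (lin_of I g i) (lin_of I g j) = (\<lambda>z. \<Sum>c\<in>I. \<Sum>a\<in>I. g c i * g a j * (T c a * D c a z))"
    unfolding lin_of_lv qmult_lv[OF fin] T_def D_def by simp
  have trm: "g a j * g c i * T a c = q i j * (g c i * g a j * T c a)" if a: "a \<in> I" and c: "c \<in> I" for a c
  proof (cases "g a j * g c i = 0")
    case True then show ?thesis by (auto simp: mult_ac)
  next
    case False
    then have acji: "q a c = q j i" using mc a c i j by (auto simp: MC_def)
    have ij: "q i j * q j i = 1" and aa: "q a a = 1" using qpm i j a by (auto simp: qpm_def)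
    have ac: "q a c * q c a = 1" using qpm a c by (auto simp: qpm_def)
    have tac: "T a c = (if c < a then q c a else 1)" using twist_ev_ev[OF fin a c, of q] by (simp add: T_def)
    have tca: "T c a = (if a < c then q a c else 1)" using twist_ev_ev[OF fin c a, of q] by (simp add: T_def)
    have "T a c = q i j * T c a"
    proof (cases a c rule: linorder_cases)
      case less
      then show ?thesis using tac tca acji ij by simp
    next
      case equal
      then have "q j i = 1" using acji aa by simp
      then have "q i j = 1" using ij by simp
      then show ?thesis using tac tca equal by simp
    next
      case greater
      have "q c a = q c a * (q i j * q j i)" using ij by simp
      also have "\<dots> = q i j * (q a c * q c a)" using acji by (simp add: mult_ac)
      also have "\<dots> = q i j" using ac by simp
      finally show ?thesis using tac tca greater by simp
    qed
    then show ?thesis by (simp add: mult_ac)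
  qed
  show "qmult q I (lin_of I g j) (lin_of I g i) = (\<lambda>z. q i j * qmult q I (lin_of I g i) (lin_of I g j) z)"
  proof
    fix z
    have "(\<Sum>a\<in>I. \<Sum>c\<in>I. g a j * g c i * (T a c * D a c z)) = (\<Sum>a\<in>I. \<Sum>c\<in>I. q i j * (g c i * g a j * (T c a * D c a z)))"
      by (intro sum.cong refl) (use trm dc in \<open>simp add: mult.assoc[symmetric]\<close>)
    also have "\<dots> = q i j * (\<Sum>c\<in>I. \<Sum>a\<in>I. g c i * g a j * (T c a * D c a z))"
      by (subst sum.swap) (simp add: sum_distrib_left)
    finally show "qmult q I (lin_of I g j) (lin_of I g i) z = q i j * qmult q I (lin_of I g i) (lin_of I g j) z"
      unfolding L R by simp
  qed
qed

theorem AutGr_char: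
  fixes g :: "nat \<Rightarrow> nat \<Rightarrow> 'k::field"
  assumes fin: "finite I" and qpm: "qpm I q"
  shows "g \<in> AutGr_set q I \<longleftrightarrow> (\<exists>h. invpair I g h) \<and> MC q I g"
proof
  assume gA: "g \<in> AutGr_set q I"
  obtain h where h: "supp_ok I h" "matmul I g h = matid I" "matmul I h g = matid I"
    using AutGr_inv[OF fin gA] by blast
  have ip: "invpair I g h" using h AutGr_supp[OF gA] by (simp add: invpair_def)
  have rg: "REL q I g" by (rule AutGr_REL[OF fin qpm gA])
  have "MC q I g \<and> MC q I h"
    by (rule KEY_MC[OF fin qpm ip]) (rule KEY[OF fin qpm h(2) h(3) rg])
  then show "(\<exists>h. invpair I g h) \<and> MC q I g" using ip by blast
next
  assume "(\<exists>h. invpair I g h) \<and> MC q I g"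
  then obtain h where ip: "invpair I g h" and mc: "MC q I g" by blast
  have gh: "matmul I g h = matid I" and hg: "matmul I h g = matid I" and sg: "supp_ok I g"
    using ip by (auto simp: invpair_def)
  have rg: "REL q I g" by (rule MC_REL[OF fin qpm mc])
  have "MC q I g \<and> MC q I h"
    by (rule KEY_MC[OF fin qpm ip]) (rule KEY[OF fin qpm gh hg rg])
  then have rh: "REL q I h" using MC_REL[OF fin qpm] by blast
  show "g \<in> AutGr_set q I" by (rule ET[OF fin qpm sg gh hg rg rh])
qed

lemma invpair_MC:
  fixes g :: "nat \<Rightarrow> nat \<Rightarrow> 'k::field"
  assumes fin: "finite I" and qpm: "qpm I q" and ip: "invpair I g h" and mc: "MC q I g"
  shows "MC q I h"
proof -
  have gh: "matmul I g h = matid I" and hg: "matmul I h g = matid I"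
    using ip by (auto simp: invpair_def)
  have rg: "REL q I g" by (rule MC_REL[OF fin qpm mc])
  have "MC q I g \<and> MC q I h"
    by (rule KEY_MC[OF fin qpm ip]) (rule KEY[OF fin qpm gh hg rg])
  then show ?thesis by simp
qed

lemma MC_matmul:
  fixes g g' :: "nat \<Rightarrow> nat \<Rightarrow> 'k::field"
  assumes "MC q I g" "MC q I g'"
  shows "MC q I (matmul I g g')"
  unfolding MC_def
proof (intro ballI impI)
  fix i j a b assume ij: "i \<in> I" "j \<in> I" "a \<in> I" "b \<in> I"
    and n1: "matmul I g g' a i \<noteq> 0" and n2: "matmul I g g' b j \<noteq> 0"
  obtain c where c: "c \<in> I" "g a c \<noteq> 0" "g' c i \<noteq> 0"
    using n1 ij by (auto simp: matmul_def intro: sum.not_neutral_contains_not_neutral)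
  obtain d where d: "d \<in> I" "g b d \<noteq> 0" "g' d j \<noteq> 0"
    using n2 ij by (auto simp: matmul_def intro: sum.not_neutral_contains_not_neutral)
  have "q a b = q c d" using assms(1) ij c d by (auto simp: MC_def)
  also have "\<dots> = q i j" using assms(2) ij c d by (auto simp: MC_def)
  finally show "q a b = q i j" .
qed

lemma MC_matid: "MC q I (matid I)"
  by (auto simp: MC_def matid_def)

lemma invpair_matmul:
  fixes g g' :: "nat \<Rightarrow> nat \<Rightarrow> 'k::field"
  assumes fin: "finite I" and "invpair I g h" "invpair I g' h'"
  shows "invpair I (matmul I g g') (matmul I h' h)"
proof -
  have s: "supp_ok I g" "supp_ok I h" "supp_ok I g'" "supp_ok I h'"
    and e: "matmul I g h = matid I" "matmul I h g = matid I" "matmul I g' h' = matid I" "matmul I h' g' = matid I"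
    using assms by (auto simp: invpair_def)
  have "matmul I (matmul I g g') (matmul I h' h) = matmul I g (matmul I (matmul I g' h') h)"
    by (simp add: matmul_assoc)
  also have "\<dots> = matid I" using e s fin by (simp add: matid_left)
  finally have 1: "matmul I (matmul I g g') (matmul I h' h) = matid I" .
  have "matmul I (matmul I h' h) (matmul I g g') = matmul I h' (matmul I (matmul I h g) g')"
    by (simp add: matmul_assoc)
  also have "\<dots> = matid I" using e s fin by (simp add: matid_left)
  finally have 2: "matmul I (matmul I h' h) (matmul I g g') = matid I" .
  show ?thesis using 1 2 by (simp add: invpair_def supp_ok_matmul)
qed

lemma invpair_matid: "invpair I (matid I :: nat \<Rightarrow> nat \<Rightarrow> 'k::field) (matid I)" if "finite I"
  using that by (simp add: invpair_def supp_ok_matid matid_left)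

lemma invpair_sym: "invpair I g h \<Longrightarrow> invpair I h g"
  by (auto simp: invpair_def)

lemma AutGr_carrier: "carrier (AutGr q I) = AutGr_set q I"
  by (simp add: AutGr_def)

lemma AutGr_mult: "x \<otimes>\<^bsub>AutGr q I\<^esub> y = matmul I x y"
  by (simp add: AutGr_def)

lemma AutGr_one: "\<one>\<^bsub>AutGr q I\<^esub> = matid I"
  by (simp add: AutGr_def)

lemma AutGr_group:
  fixes q :: "nat \<Rightarrow> nat \<Rightarrow> 'k::field"
  assumes fin: "finite I" and qpm: "qpm I q"
  shows "group (AutGr q I)"
proof (rule groupI)
  note ch = AutGr_char[OF fin qpm]
  fix x y assume "x \<in> carrier (AutGr q I)" "y \<in> carrier (AutGr q I)"
  then obtain hx hy where h: "invpair I x hx" "MC q I x" "invpair I y hy" "MC q I y"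
    by (auto simp: AutGr_carrier ch)
  have "invpair I (matmul I x y) (matmul I hy hx)" by (rule invpair_matmul[OF fin h(1) h(3)])
  moreover have "MC q I (matmul I x y)" by (rule MC_matmul[OF h(2) h(4)])
  ultimately show "x \<otimes>\<^bsub>AutGr q I\<^esub> y \<in> carrier (AutGr q I)"
    by (auto simp: AutGr_carrier ch AutGr_mult)
next
  show "\<one>\<^bsub>AutGr q I\<^esub> \<in> carrier (AutGr q I)"
    using invpair_matid[OF fin] MC_matid by (auto simp: AutGr_carrier AutGr_char[OF fin qpm] AutGr_one)
next
  fix x y z show "x \<otimes>\<^bsub>AutGr q I\<^esub> y \<otimes>\<^bsub>AutGr q I\<^esub> z = x \<otimes>\<^bsub>AutGr q I\<^esub> (y \<otimes>\<^bsub>AutGr q I\<^esub> z)"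
    by (simp add: AutGr_mult matmul_assoc)
next
  fix x assume "x \<in> carrier (AutGr q I)"
  then have "supp_ok I x" by (auto simp: AutGr_carrier AutGr_char[OF fin qpm] invpair_def)
  then show "\<one>\<^bsub>AutGr q I\<^esub> \<otimes>\<^bsub>AutGr q I\<^esub> x = x" by (simp add: AutGr_one AutGr_mult matid_left fin)
next
  fix x assume "x \<in> carrier (AutGr q I)"
  then obtain h where ip: "invpair I x h" and mc: "MC q I x" by (auto simp: AutGr_carrier AutGr_char[OF fin qpm])
  have "MC q I h" by (rule invpair_MC[OF fin qpm ip mc])
  then have "h \<in> carrier (AutGr q I)" using invpair_sym[OF ip] by (auto simp: AutGr_carrier AutGr_char[OF fin qpm])
  moreover have "h \<otimes>\<^bsub>AutGr q I\<^esub> x = \<one>\<^bsub>AutGr q I\<^esub>" using ip by (simp add: invpair_def AutGr_mult AutGr_one)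
  ultimately show "\<exists>y\<in>carrier (AutGr q I). y \<otimes>\<^bsub>AutGr q I\<^esub> x = \<one>\<^bsub>AutGr q I\<^esub>" by blast
qed

lemma Gperm_carrier: "carrier (Gperm n q P) = Gperm_set n q P"
  by (simp add: Gperm_def)

lemma Gperm_mult: "x \<otimes>\<^bsub>Gperm n q P\<^esub> y = x \<circ> y"
  by (simp add: Gperm_def)

lemma Gperm_one: "\<one>\<^bsub>Gperm n q P\<^esub> = id"
  by (simp add: Gperm_def)

lemma Gperm_group: "group (Gperm n q P)"
proof (rule groupI)
  fix x y assume x: "x \<in> carrier (Gperm n q P)" and y: "y \<in> carrier (Gperm n q P)"
  then obtain \<tau>x \<tau>y where x1: "x permutes P" "\<forall>D\<in>P. card (x D) = card D" "\<tau>x permutes {1..n}"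
      "\<forall>D\<in>P. \<tau>x ` D = x D" "\<forall>i\<in>{1..n}. \<forall>j\<in>{1..n}. q (\<tau>x i) (\<tau>x j) = q i j"
    and y1: "y permutes P" "\<forall>D\<in>P. card (y D) = card D" "\<tau>y permutes {1..n}"
      "\<forall>D\<in>P. \<tau>y ` D = y D" "\<forall>i\<in>{1..n}. \<forall>j\<in>{1..n}. q (\<tau>y i) (\<tau>y j) = q i j"
    by (auto simp: Gperm_carrier Gperm_set_def)
  have yD: "y D \<in> P" if "D \<in> P" for D using y1(1) that by (simp add: permutes_in_image)
  have "x \<circ> y permutes P" using y1(1) x1(1) by (rule permutes_compose)
  moreover have "\<forall>D\<in>P. card ((x \<circ> y) D) = card D" using x1(2) y1(2) yD by simp
  moreover have "\<tau>x \<circ> \<tau>y permutes {1..n}" using y1(3) x1(3) by (rule permutes_compose)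
  moreover have "\<forall>D\<in>P. (\<tau>x \<circ> \<tau>y) ` D = (x \<circ> y) D"
  proof
    fix D assume D: "D \<in> P"
    have "(\<tau>x \<circ> \<tau>y) ` D = \<tau>x ` (\<tau>y ` D)" by (simp add: image_comp)
    also have "\<dots> = \<tau>x ` (y D)" using y1(4) D by simp
    also have "\<dots> = x (y D)" using x1(4) yD[OF D] by simp
    finally show "(\<tau>x \<circ> \<tau>y) ` D = (x \<circ> y) D" by simp
  qed
  moreover have "\<forall>i\<in>{1..n}. \<forall>j\<in>{1..n}. q ((\<tau>x \<circ> \<tau>y) i) ((\<tau>x \<circ> \<tau>y) j) = q i j"
  proof (intro ballI)
    fix i j assume i: "i \<in> {1..n}" and j: "j \<in> {1..n}"
    have "\<tau>y i \<in> {1..n}" "\<tau>y j \<in> {1..n}" using permutes_in_image[OF y1(3)] i j by blast+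
    then have "q (\<tau>x (\<tau>y i)) (\<tau>x (\<tau>y j)) = q (\<tau>y i) (\<tau>y j)" using x1(5) by blast
    also have "\<dots> = q i j" using y1(5) i j by blast
    finally show "q ((\<tau>x \<circ> \<tau>y) i) ((\<tau>x \<circ> \<tau>y) j) = q i j" by simp
  qed
  ultimately show "x \<otimes>\<^bsub>Gperm n q P\<^esub> y \<in> carrier (Gperm n q P)"
    unfolding Gperm_carrier Gperm_mult Gperm_set_def by blast
next
  show "\<one>\<^bsub>Gperm n q P\<^esub> \<in> carrier (Gperm n q P)"
    unfolding Gperm_carrier Gperm_one Gperm_set_def
    using permutes_id by fastforce
next
  fix x y z show "x \<otimes>\<^bsub>Gperm n q P\<^esub> y \<otimes>\<^bsub>Gperm n q P\<^esub> z = x \<otimes>\<^bsub>Gperm n q P\<^esub> (y \<otimes>\<^bsub>Gperm n q P\<^esub> z)"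
    by (simp add: Gperm_mult o_assoc)
next
  fix x show "\<one>\<^bsub>Gperm n q P\<^esub> \<otimes>\<^bsub>Gperm n q P\<^esub> x = x" by (simp add: Gperm_mult Gperm_one)
next
  fix x assume x: "x \<in> carrier (Gperm n q P)"
  then obtain \<tau> where x1: "x permutes P" "\<forall>D\<in>P. card (x D) = card D" "\<tau> permutes {1..n}"
      "\<forall>D\<in>P. \<tau> ` D = x D" "\<forall>i\<in>{1..n}. \<forall>j\<in>{1..n}. q (\<tau> i) (\<tau> j) = q i j"
    by (auto simp: Gperm_carrier Gperm_set_def)
  have ip: "Hilbert_Choice.inv x permutes P" using x1(1) by (rule permutes_inv)
  have iD: "Hilbert_Choice.inv x D \<in> P" if "D \<in> P" for D using ip that by (simp add: permutes_in_image)
  have xi: "x (Hilbert_Choice.inv x D) = D" for D using x1(1) by (simp add: permutes_inverses)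
  have c: "\<forall>D\<in>P. card (Hilbert_Choice.inv x D) = card D" using x1(2) iD xi by metis
  have it: "Hilbert_Choice.inv \<tau> permutes {1..n}" using x1(3) by (rule permutes_inv)
  have im: "\<forall>D\<in>P. Hilbert_Choice.inv \<tau> ` D = Hilbert_Choice.inv x D"
  proof
    fix D assume D: "D \<in> P"
    have "\<tau> ` Hilbert_Choice.inv x D = D" using x1(4) iD[OF D] xi by metis
    then have "Hilbert_Choice.inv \<tau> ` D = Hilbert_Choice.inv \<tau> ` \<tau> ` Hilbert_Choice.inv x D" by simp
    also have "\<dots> = Hilbert_Choice.inv x D" using x1(3) by (simp add: image_comp permutes_inv_o(2))
    finally show "Hilbert_Choice.inv \<tau> ` D = Hilbert_Choice.inv x D" .
  qed
  have qq: "\<forall>i\<in>{1..n}. \<forall>j\<in>{1..n}. q (Hilbert_Choice.inv \<tau> i) (Hilbert_Choice.inv \<tau> j) = q i j"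
  proof (intro ballI)
    fix i j assume i: "i \<in> {1..n}" and j: "j \<in> {1..n}"
    have "Hilbert_Choice.inv \<tau> i \<in> {1..n}" "Hilbert_Choice.inv \<tau> j \<in> {1..n}" using permutes_in_image[OF it] i j by blast+
    then have "q (\<tau> (Hilbert_Choice.inv \<tau> i)) (\<tau> (Hilbert_Choice.inv \<tau> j)) = q (Hilbert_Choice.inv \<tau> i) (Hilbert_Choice.inv \<tau> j)" using x1(5) by blast
    then show "q (Hilbert_Choice.inv \<tau> i) (Hilbert_Choice.inv \<tau> j) = q i j" using x1(3) by (simp add: permutes_inverses)
  qed
  have "Hilbert_Choice.inv x \<in> carrier (Gperm n q P)"
    unfolding Gperm_carrier Gperm_set_def using ip c it im qq by blast
  moreover have "Hilbert_Choice.inv x \<circ> x = id" using x1(1) by (rule permutes_inv_o(2))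
  ultimately show "\<exists>y\<in>carrier (Gperm n q P). y \<otimes>\<^bsub>Gperm n q P\<^esub> x = \<one>\<^bsub>Gperm n q P\<^esub>"
    by (auto simp: Gperm_mult Gperm_one)
qed

interpretation fvs: vector_space "\<lambda>(c::'k::field) (f::nat \<Rightarrow> 'k). (\<lambda>x. c * f x)"
  by unfold_locales (auto simp: fun_eq_iff algebra_simps)

lemma fsum_apply: "(\<Sum>v\<in>t. F v) x = (\<Sum>v\<in>t. F v x)"
  by (induction t rule: infinite_finite_induct) auto

lemma dim_bound:
  fixes w G :: "nat \<Rightarrow> nat \<Rightarrow> 'k::field"
  assumes fR: "finite R" and fC: "finite C" and supp: "\<And>a j. a \<in> R \<Longrightarrow> w a j \<noteq> 0 \<Longrightarrow> j \<in> C"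
    and li: "\<And>a b. a \<in> R \<Longrightarrow> b \<in> R \<Longrightarrow> (\<Sum>j\<in>C. G b j * w a j) = (if a = b then 1 else 0)"
  shows "card R \<le> card C"
proof -
  define E where "E = (\<lambda>j. (\<lambda>x. if x = j then 1 else (0::'k))) ` C"
  have inj: "inj_on w R"
  proof (rule inj_onI)
    fix a b assume a: "a \<in> R" and b: "b \<in> R" and e: "w a = w b"
    have "(\<Sum>j\<in>C. G b j * w a j) = 1" using li[OF b b] e by simp
    then show "a = b" using li[OF a b] by (auto split: if_splits)
  qed
  have indep: "\<not> fvs.dependent (w ` R)"
  proof
    assume "fvs.dependent (w ` R)"
    then obtain t u where t: "finite t" "t \<subseteq> w ` R" and z: "(\<Sum>v\<in>t. (\<lambda>x. u v * v x)) = 0"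
      and v0: "\<exists>v\<in>t. u v \<noteq> 0"
      unfolding fvs.dependent_explicit by blast
    obtain v where v: "v \<in> t" "u v \<noteq> 0" using v0 by blast
    obtain b where b: "b \<in> R" "v = w b" using v t by blast
    have zj: "(\<Sum>v\<in>t. u v * v j) = 0" for j
      using fun_cong[OF z, of j] by (simp add: fsum_apply)
    have "0 = (\<Sum>j\<in>C. G b j * (\<Sum>v\<in>t. u v * v j))" by (simp add: zj)
    also have "\<dots> = (\<Sum>v\<in>t. u v * (\<Sum>j\<in>C. G b j * v j))"
      by (simp add: sum_distrib_left sum_distrib_right mult_ac sum.swap[of _ C])
    also have "\<dots> = (\<Sum>v'\<in>t. if v' = v then u v else 0)"
    proof (intro sum.cong refl)
      fix v' assume v': "v' \<in> t"
      then obtain a where a: "a \<in> R" "v' = w a" using t by blast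
      have "(\<Sum>j\<in>C. G b j * v' j) = (if a = b then 1 else 0)" using li[OF a(1) b(1)] a by simp
      also have "\<dots> = (if v' = v then 1 else 0)" using inj a b by (auto simp: inj_on_def)
      finally show "u v' * (\<Sum>j\<in>C. G b j * v' j) = (if v' = v then u v else 0)" by simp
    qed
    also have "\<dots> = u v" using v t by (simp add: sum.delta')
    finally show False using v by simp
  qed
  have span: "w ` R \<subseteq> fvs.span E"
  proof
    fix v assume "v \<in> w ` R"
    then obtain a where a: "a \<in> R" "v = w a" by blast
    have "w a = (\<Sum>j\<in>C. (\<lambda>x. w a j * (if x = j then 1 else 0)))"
    proof
      fix x
      have "(\<Sum>j\<in>C. (\<lambda>x. w a j * (if x = j then 1 else 0))) x = (\<Sum>j\<in>C. if j = x then w a x else 0)"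
        by (simp add: fsum_apply) (intro sum.cong refl, auto)
      also have "\<dots> = w a x" using supp[OF a(1), of x] fC by (auto simp: sum.delta)
      finally show "w a x = (\<Sum>j\<in>C. (\<lambda>x. w a j * (if x = j then 1 else 0))) x" by simp
    qed
    also have "\<dots> \<in> fvs.span E"
    proof (rule fvs.span_sum)
      fix j assume j: "j \<in> C"
      have "(\<lambda>x. if x = j then 1 else (0::'k)) \<in> fvs.span E" by (rule fvs.span_base) (use j in \<open>auto simp: E_def\<close>)
      then show "(\<lambda>x. w a j * (if x = j then 1 else 0)) \<in> fvs.span E" by (rule fvs.span_scale)
    qed
    finally show "v \<in> fvs.span E" using a by simp
  qed
  have fE: "finite E" using fC by (simp add: E_def)
  have "card (w ` R) \<le> card E" using fvs.independent_span_bound[OF fE indep span] by simp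
  also have "\<dots> \<le> card C" unfolding E_def by (rule card_image_le[OF fC])
  finally show ?thesis using card_image[OF inj] by simp
qed

definition rq :: "nat set \<Rightarrow> (nat \<Rightarrow> nat \<Rightarrow> 'k) \<Rightarrow> nat \<Rightarrow> nat \<Rightarrow> bool" where
  "rq I q a b \<longleftrightarrow> (\<forall>l\<in>I. q a l = q b l)"

definition cls :: "nat set \<Rightarrow> (nat \<Rightarrow> nat \<Rightarrow> 'k) \<Rightarrow> nat \<Rightarrow> nat set" where
  "cls I q a = {b\<in>I. rq I q a b}"

lemma rq_refl: "rq I q a a" by (simp add: rq_def)
lemma rq_sym: "rq I q a b \<Longrightarrow> rq I q b a" by (simp add: rq_def)
lemma rq_trans: "rq I q a b \<Longrightarrow> rq I q b c \<Longrightarrow> rq I q a c" by (simp add: rq_def)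

lemma cls_eq: "rq I q a b \<Longrightarrow> cls I q a = cls I q b"
  unfolding cls_def using rq_trans rq_sym by blast

lemma mem_cls: "b \<in> cls I q a \<longleftrightarrow> b \<in> I \<and> rq I q a b"
  by (simp add: cls_def)

locale ipctx =
  fixes q :: "nat \<Rightarrow> nat \<Rightarrow> 'k::field" and I :: "nat set" and g h :: "nat \<Rightarrow> nat \<Rightarrow> 'k"
  assumes fin: "finite I" and qpm: "qpm I q" and ip: "invpair I g h" and mc: "MC q I g"
begin

lemma gh: "matmul I g h = matid I" and hg: "matmul I h g = matid I"
  and sg: "supp_ok I g" and sh: "supp_ok I h"
  using ip by (auto simp: invpair_def)

lemma mch: "MC q I h" by (rule invpair_MC[OF fin qpm ip mc])

lemma colnz: "i \<in> I \<Longrightarrow> \<exists>a\<in>I. g a i \<noteq> 0 \<and> h i a \<noteq> 0"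
  using inv_ex[OF hg] by blast

lemma rownz: "a \<in> I \<Longrightarrow> \<exists>i\<in>I. g a i \<noteq> 0 \<and> h i a \<noteq> 0"
  using inv_ex[OF gh] by blast

lemma gI: "g a i \<noteq> 0 \<Longrightarrow> a \<in> I \<and> i \<in> I"
  using sg by (auto simp: supp_ok_def)

lemma hI: "h a i \<noteq> 0 \<Longrightarrow> a \<in> I \<and> i \<in> I"
  using sh by (auto simp: supp_ok_def)

lemma L2: "g a i \<noteq> 0 \<Longrightarrow> g a' i' \<noteq> 0 \<Longrightarrow> rq I q i i' \<Longrightarrow> rq I q a a'"
  unfolding rq_def
proof
  fix l assume ga: "g a i \<noteq> 0" and ga': "g a' i' \<noteq> 0" and r: "\<forall>l\<in>I. q i l = q i' l" and l: "l \<in> I"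
  obtain j where j: "j \<in> I" "g l j \<noteq> 0" using rownz[OF l] by blast
  have "q a l = q i j" using mc ga j gI[OF ga] l by (auto simp: MC_def)
  also have "\<dots> = q i' j" using r j by simp
  also have "\<dots> = q a' l" using mc ga' j gI[OF ga'] l by (auto simp: MC_def)
  finally show "q a l = q a' l" .
qed

lemma L3: "g a i \<noteq> 0 \<Longrightarrow> g a' j \<noteq> 0 \<Longrightarrow> rq I q a a' \<Longrightarrow> rq I q i j"
  unfolding rq_def
proof
  fix l assume ga: "g a i \<noteq> 0" and ga': "g a' j \<noteq> 0" and r: "\<forall>l\<in>I. q a l = q a' l" and l: "l \<in> I"
  obtain b where b: "b \<in> I" "g b l \<noteq> 0" using colnz[OF l] by blast
  have "q i l = q a b" using mc ga b gI[OF ga] l by (auto simp: MC_def)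
  also have "\<dots> = q a' b" using r b by simp
  also have "\<dots> = q j l" using mc ga' b gI[OF ga'] l by (auto simp: MC_def)
  finally show "q i l = q j l" .
qed

lemma hL1: "h j a \<noteq> 0 \<Longrightarrow> h j' a \<noteq> 0 \<Longrightarrow> rq I q j j'"
  unfolding rq_def
proof
  fix l assume ha: "h j a \<noteq> 0" and ha': "h j' a \<noteq> 0" and l: "l \<in> I"
  obtain b where b: "b \<in> I" "h l b \<noteq> 0" using inv_ex[OF hg l] by blast
  have "q j l = q a b" using mch ha b hI[OF ha] l by (auto simp: MC_def)
  also have "\<dots> = q j' l" using mch ha' b hI[OF ha'] l by (auto simp: MC_def)
  finally show "q j l = q j' l" .
qed

definition Tc :: "nat set \<Rightarrow> nat set" where
  "Tc C = cls I q (SOME a. a \<in> I \<and> (\<exists>i\<in>C. g a i \<noteq> 0))"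

lemma Tc_char:
  assumes "g a i \<noteq> 0" shows "Tc (cls I q i) = cls I q a"
proof -
  have ex: "\<exists>a. a \<in> I \<and> (\<exists>i'\<in>cls I q i. g a i' \<noteq> 0)"
  proof -
    have "i \<in> cls I q i" using gI[OF assms] rq_refl[of I q i] by (simp add: mem_cls)
    then show ?thesis using assms gI[OF assms] by blast
  qed
  define a0 where "a0 = (SOME a. a \<in> I \<and> (\<exists>i'\<in>cls I q i. g a i' \<noteq> 0))"
  have "a0 \<in> I \<and> (\<exists>i'\<in>cls I q i. g a0 i' \<noteq> 0)" unfolding a0_def by (rule someI_ex[OF ex])
  then obtain i' where i': "i' \<in> cls I q i" "g a0 i' \<noteq> 0" by blast
  have "rq I q a0 a" using L2[OF i'(2) assms] i'(1) rq_sym by (auto simp: mem_cls)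
  then show ?thesis unfolding Tc_def a0_def[symmetric] by (rule cls_eq)
qed

lemma card_Tc:
  assumes i: "i \<in> I" shows "card (cls I q i) = card (Tc (cls I q i))"
proof -
  obtain a where a: "a \<in> I" "g a i \<noteq> 0" using colnz[OF i] by blast
  have T: "Tc (cls I q i) = cls I q a" by (rule Tc_char[OF a(2)])
  have fC: "finite (cls I q i)" "finite (cls I q a)" using fin by (auto simp: cls_def)
  have le1: "card (cls I q i) \<le> card (cls I q a)"
  proof (rule dim_bound[OF fC(1) fC(2), where w = "\<lambda>i a. g a i" and G = h])
    fix i' a' assume i': "i' \<in> cls I q i" and g': "g a' i' \<noteq> 0"
    have "rq I q a a'" using L2[OF a(2) g'] i' by (auto simp: mem_cls)
    then show "a' \<in> cls I q a" using gI[OF g'] by (simp add: mem_cls)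
  next
    fix i1 i2 assume i1: "i1 \<in> cls I q i" and i2: "i2 \<in> cls I q i"
    have sub: "cls I q a \<subseteq> I" by (auto simp: cls_def)
    have "(\<Sum>j\<in>cls I q a. h i2 j * g j i1) = (\<Sum>j\<in>I. h i2 j * g j i1)"
    proof (rule sum.mono_neutral_left[OF fin sub], intro ballI)
      fix j assume j: "j \<in> I - cls I q a"
      show "h i2 j * g j i1 = 0"
      proof (rule ccontr)
        assume "h i2 j * g j i1 \<noteq> 0"
        then have "g j i1 \<noteq> 0" by auto
        then have "rq I q a j" using L2[OF a(2)] i1 by (auto simp: mem_cls)
        then show False using j by (simp add: mem_cls)
      qed
    qed
    also have "\<dots> = matmul I h g i2 i1" using i1 i2 by (simp add: matmul_def cls_def)
    also have "\<dots> = (if i1 = i2 then 1 else 0)" using hg i1 i2 by (auto simp: matid_def cls_def)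
    finally show "(\<Sum>j\<in>cls I q a. h i2 j * g j i1) = (if i1 = i2 then 1 else 0)" .
  qed
  have le2: "card (cls I q a) \<le> card (cls I q i)"
  proof (rule dim_bound[OF fC(2) fC(1), where w = "\<lambda>a j. h j a" and G = g])
    fix a' j assume a': "a' \<in> cls I q a" and hj: "h j a' \<noteq> 0"
    obtain j0 where j0: "j0 \<in> I" "g a' j0 \<noteq> 0" "h j0 a' \<noteq> 0" using rownz a' by (auto simp: mem_cls)
    have "rq I q i j0" using L3[OF a(2) j0(2)] a' by (auto simp: mem_cls)
    moreover have "rq I q j0 j" using hL1[OF j0(3) hj] .
    ultimately have "rq I q i j" by (rule rq_trans)
    then show "j \<in> cls I q i" using hI[OF hj] by (simp add: mem_cls)
  next
    fix a1 a2 assume a1: "a1 \<in> cls I q a" and a2: "a2 \<in> cls I q a"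
    have sub: "cls I q i \<subseteq> I" by (auto simp: cls_def)
    have "(\<Sum>j\<in>cls I q i. g a2 j * h j a1) = (\<Sum>j\<in>I. g a2 j * h j a1)"
    proof (rule sum.mono_neutral_left[OF fin sub], intro ballI)
      fix j assume j: "j \<in> I - cls I q i"
      show "g a2 j * h j a1 = 0"
      proof (rule ccontr)
        assume "g a2 j * h j a1 \<noteq> 0"
        then have hj: "h j a1 \<noteq> 0" by auto
        obtain j0 where j0: "j0 \<in> I" "g a1 j0 \<noteq> 0" "h j0 a1 \<noteq> 0" using rownz a1 by (auto simp: mem_cls)
        have "rq I q i j0" using L3[OF a(2) j0(2)] a1 by (auto simp: mem_cls)
        moreover have "rq I q j0 j" using hL1[OF j0(3) hj] .
        ultimately have "rq I q i j" by (rule rq_trans)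
        then show False using j by (simp add: mem_cls)
      qed
    qed
    also have "\<dots> = matmul I g h a2 a1" using a1 a2 by (simp add: matmul_def cls_def)
    also have "\<dots> = (if a1 = a2 then 1 else 0)" using gh a1 a2 by (auto simp: matid_def cls_def)
    finally show "(\<Sum>j\<in>cls I q i. g a2 j * h j a1) = (if a1 = a2 then 1 else 0)" .
  qed
  show ?thesis using le1 le2 T by simp
qed

end

context ipctx
begin

definition Bc :: "nat set \<Rightarrow> nat \<Rightarrow> nat" where
  "Bc C = (SOME b. bij_betw b C (Tc C))"

definition tau :: "nat \<Rightarrow> nat" where
  "tau i = (if i \<in> I then Bc (cls I q i) i else i)"

lemma cls_self: "i \<in> I \<Longrightarrow> i \<in> cls I q i"
  by (simp add: mem_cls rq_refl)

lemma Bc_bij: assumes i: "i \<in> I" shows "bij_betw (Bc (cls I q i)) (cls I q i) (Tc (cls I q i))"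
proof -
  obtain a where a: "a \<in> I" "g a i \<noteq> 0" using colnz[OF i] by blast
  have f: "finite (cls I q i)" "finite (Tc (cls I q i))" using fin Tc_char[OF a(2)] by (auto simp: cls_def)
  have "\<exists>b. bij_betw b (cls I q i) (Tc (cls I q i))"
    by (rule finite_same_card_bij[OF f card_Tc[OF i]])
  then show ?thesis unfolding Bc_def by (rule someI_ex)
qed

lemma tau_rq: assumes "g a i \<noteq> 0" shows "rq I q a (tau i)"
proof -
  have i: "i \<in> I" using gI[OF assms] by simp
  have "tau i \<in> Tc (cls I q i)" using Bc_bij[OF i] cls_self[OF i] by (auto simp: tau_def bij_betw_def i)
  then show ?thesis using Tc_char[OF assms] by (simp add: mem_cls)
qed

lemma tau_I: "i \<in> I \<Longrightarrow> tau i \<in> I"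
  using colnz tau_rq by (metis mem_cls Tc_char Bc_bij bij_betw_apply cls_self tau_def)

lemma tau_inj: "inj_on tau I"
proof (rule inj_onI)
  fix i j assume i: "i \<in> I" and j: "j \<in> I" and e: "tau i = tau j"
  obtain a where a: "a \<in> I" "g a i \<noteq> 0" using colnz[OF i] by blast
  obtain b where b: "b \<in> I" "g b j \<noteq> 0" using colnz[OF j] by blast
  have "rq I q a b" using tau_rq[OF a(2)] tau_rq[OF b(2)] e rq_sym rq_trans by metis
  then have r: "rq I q i j" by (rule L3[OF a(2) b(2)])
  then have c: "cls I q i = cls I q j" by (rule cls_eq)
  have "j \<in> cls I q i" using r j by (simp add: mem_cls)
  moreover have "Bc (cls I q i) i = Bc (cls I q i) j" using e i j c by (simp add: tau_def)
  ultimately show "i = j" using Bc_bij[OF i] cls_self[OF i] by (auto simp: bij_betw_def inj_on_def)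
qed

lemma tau_perm: "tau permutes I"
proof (rule bij_imp_permutes)
  have "tau ` I \<subseteq> I" using tau_I by blast
  then have "tau ` I = I" using endo_inj_surj[OF fin _ tau_inj] by blast
  then show "bij_betw tau I I" using tau_inj by (simp add: bij_betw_def)
next
  fix x assume "x \<notin> I" then show "tau x = x" by (simp add: tau_def)
qed

lemma tau_q: assumes i: "i \<in> I" and j: "j \<in> I" shows "q (tau i) (tau j) = q i j"
proof -
  obtain a where a: "a \<in> I" "g a i \<noteq> 0" using colnz[OF i] by blast
  obtain b where b: "b \<in> I" "g b j \<noteq> 0" using colnz[OF j] by blast
  have ra: "rq I q a (tau i)" by (rule tau_rq[OF a(2)])
  have rb: "rq I q b (tau j)" by (rule tau_rq[OF b(2)])
  have ti: "tau i \<in> I" "tau j \<in> I" using tau_I i j by auto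
  have "q (tau i) (tau j) = q a (tau j)" using ra ti by (simp add: rq_def)
  also have "\<dots> = inverse (q (tau j) a)" by (rule qpm_inv[OF qpm a(1) ti(2)])
  also have "q (tau j) a = q b a" using rb a(1) by (simp add: rq_def)
  also have "inverse (q b a) = q a b" using qpm_inv[OF qpm a(1) b(1)] by simp
  also have "\<dots> = q i j" using mc a b i j by (auto simp: MC_def)
  finally show ?thesis .
qed

end

locale mctx =
  fixes q :: "nat \<Rightarrow> nat \<Rightarrow> 'k::field" and n :: nat and P :: "nat set set"
  assumes qpm: "qpm {1..n} q"
    and part: "partition_on {1..n} P"
    and refd: "refined_by_Bq n q P"
    and cst: "\<forall>D\<in>P. \<forall>E\<in>P. D \<noteq> E \<longrightarrow> (\<exists>c. \<forall>i\<in>D. \<forall>j\<in>E. q i j = c)"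
    and sep: "\<forall>D\<in>P. \<forall>E\<in>P. \<forall>F\<in>P. D \<noteq> E \<longrightarrow> (\<forall>i\<in>D. \<forall>j\<in>E. \<forall>a\<in>F. \<forall>b\<in>F. q i j \<noteq> q a b)"
begin

lemma finI: "finite {1..n}" by simp

lemma P_sub: "D \<in> P \<Longrightarrow> D \<subseteq> {1..n}"
  using part by (auto simp: partition_on_def)

lemma P_ne: "D \<in> P \<Longrightarrow> D \<noteq> {}"
  using part by (auto simp: partition_on_def)

lemma P_disj: "D \<in> P \<Longrightarrow> E \<in> P \<Longrightarrow> x \<in> D \<Longrightarrow> x \<in> E \<Longrightarrow> D = E"
  using part unfolding partition_on_def disjoint_def by blast

lemma P_cover: "i \<in> {1..n} \<Longrightarrow> \<exists>D\<in>P. i \<in> D"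
  using part by (auto simp: partition_on_def)

lemma P_fin: "finite P"
proof -
  have "P \<subseteq> Pow {1..n}" using P_sub by auto
  then show ?thesis by (rule finite_subset) simp
qed

definition blk :: "nat \<Rightarrow> nat set" where
  "blk i = (THE D. D \<in> P \<and> i \<in> D)"

lemma blk_eq: assumes "D \<in> P" "i \<in> D" shows "blk i = D"
  unfolding blk_def
proof (rule the_equality)
  show "D \<in> P \<and> i \<in> D" using assms by simp
  fix E assume "E \<in> P \<and> i \<in> E"
  then show "E = D" using P_disj assms by blast
qed

lemma blk: "i \<in> {1..n} \<Longrightarrow> blk i \<in> P \<and> i \<in> blk i"
  using P_cover blk_eq by metis

lemma sep_same:
  assumes "i \<in> {1..n}" "j \<in> {1..n}" "a \<in> {1..n}" "b \<in> {1..n}" "q a b = q i j" "blk i = blk j"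
  shows "blk a = blk b"
proof (rule ccontr)
  assume "blk a \<noteq> blk b"
  then have "q a b \<noteq> q i j"
    using sep blk[OF assms(1)] blk[OF assms(2)] blk[OF assms(3)] blk[OF assms(4)] assms(6) by metis
  then show False using assms(5) by simp
qed

lemma sep_diff:
  assumes "i \<in> {1..n}" "j \<in> {1..n}" "a \<in> {1..n}" "b \<in> {1..n}" "q a b = q i j" "blk i \<noteq> blk j"
  shows "blk a \<noteq> blk b"
proof
  assume "blk a = blk b"
  then have "q i j \<noteq> q a b"
    using sep blk[OF assms(1)] blk[OF assms(2)] blk[OF assms(3)] blk[OF assms(4)] assms(6) by metis
  then show False using assms(5) by simp
qed

lemma AutGr_ip:
  assumes "g \<in> AutGr_set q {1..n}"
  obtains h where "ipctx q {1..n} g h"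
proof -
  obtain h where "invpair {1..n} g h" "MC q {1..n} g"
    using assms AutGr_char[OF finI qpm] by blast
  then show ?thesis using that qpm by (auto simp: ipctx_def)
qed

definition sig :: "(nat \<Rightarrow> nat \<Rightarrow> 'k) \<Rightarrow> nat set \<Rightarrow> nat set" where
  "sig g D = (if D \<in> P then blk (SOME a. a \<in> {1..n} \<and> (\<exists>i\<in>D. g a i \<noteq> 0)) else D)"

lemma sig_some:
  assumes gA: "g \<in> AutGr_set q {1..n}" and D: "D \<in> P"
  shows "\<exists>a0 i0. a0 \<in> {1..n} \<and> i0 \<in> D \<and> g a0 i0 \<noteq> 0 \<and> sig g D = blk a0"
proof -
  obtain h where "ipctx q {1..n} g h" using AutGr_ip[OF gA] by blast
  then interpret ipctx q "{1..n}" g h .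
  obtain i where i: "i \<in> D" using P_ne[OF D] by blast
  obtain a where a: "a \<in> {1..n}" "g a i \<noteq> 0" using colnz P_sub[OF D] i by blast
  have ex: "\<exists>a. a \<in> {1..n} \<and> (\<exists>i\<in>D. g a i \<noteq> 0)" using a i by blast
  define a0 where "a0 = (SOME a. a \<in> {1..n} \<and> (\<exists>i\<in>D. g a i \<noteq> 0))"
  have "a0 \<in> {1..n} \<and> (\<exists>i\<in>D. g a0 i \<noteq> 0)" unfolding a0_def by (rule someI_ex[OF ex])
  moreover have "sig g D = blk a0" using D by (simp add: sig_def a0_def)
  ultimately show ?thesis by blast
qed

lemma sig_P: "D \<in> P \<Longrightarrow> g \<in> AutGr_set q {1..n} \<Longrightarrow> sig g D \<in> P"
  using sig_some blk by metis

lemma sig_prop: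
  assumes gA: "g \<in> AutGr_set q {1..n}" and D: "D \<in> P" and i: "i \<in> D" and ga: "g a i \<noteq> 0"
  shows "a \<in> sig g D"
proof -
  obtain h where "ipctx q {1..n} g h" using AutGr_ip[OF gA] by blast
  then interpret ipctx q "{1..n}" g h .
  obtain a0 i0 where a0: "a0 \<in> {1..n}" "i0 \<in> D" "g a0 i0 \<noteq> 0" "sig g D = blk a0"
    using sig_some[OF gA D] by blast
  have iI: "i \<in> {1..n}" "i0 \<in> {1..n}" "a \<in> {1..n}" using gI ga a0 by auto
  have "q a a0 = q i i0" using mc ga a0 iI by (auto simp: MC_def)
  moreover have "blk i = blk i0" using blk_eq[OF D i] blk_eq[OF D a0(2)] by simp
  ultimately have "blk a = blk a0" using sep_same iI a0(1) by blast
  then show ?thesis using blk[OF iI(3)] a0(4) by simp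
qed

lemma sig_eq:
  assumes gA: "g \<in> AutGr_set q {1..n}" and D: "D \<in> P" and i: "i \<in> D" and ga: "g a i \<noteq> 0"
  shows "sig g D = blk a"
  using blk_eq[OF sig_P[OF D gA] sig_prop[OF gA D i ga]] by simp

lemma sig_inj:
  assumes gA: "g \<in> AutGr_set q {1..n}"
  shows "inj_on (sig g) P"
proof (rule inj_onI)
  fix D E assume D: "D \<in> P" and E: "E \<in> P" and e: "sig g D = sig g E"
  obtain h where "ipctx q {1..n} g h" using AutGr_ip[OF gA] by blast
  then interpret ipctx q "{1..n}" g h .
  obtain i where i: "i \<in> D" using P_ne[OF D] by blast
  obtain j where j: "j \<in> E" using P_ne[OF E] by blast
  obtain a where a: "a \<in> {1..n}" "g a i \<noteq> 0" using colnz P_sub[OF D] i by blast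
  obtain b where b: "b \<in> {1..n}" "g b j \<noteq> 0" using colnz P_sub[OF E] j by blast
  have iI: "i \<in> {1..n}" "j \<in> {1..n}" using P_sub[OF D] P_sub[OF E] i j by blast+
  have q: "q a b = q i j" using mc a b iI by (auto simp: MC_def)
  show "D = E"
  proof (rule ccontr)
    assume "D \<noteq> E"
    then have "blk i \<noteq> blk j" using blk_eq D E i j by metis
    then have "blk a \<noteq> blk b" using sep_diff iI a(1) b(1) q by blast
    then show False using e sig_eq[OF gA D i a(2)] sig_eq[OF gA E j b(2)] by simp
  qed
qed

lemma sig_perm:
  assumes gA: "g \<in> AutGr_set q {1..n}"
  shows "sig g permutes P"
proof (rule bij_imp_permutes)
  have "sig g ` P \<subseteq> P" using sig_P gA by blast
  then have "sig g ` P = P" using endo_inj_surj[OF P_fin _ sig_inj[OF gA]] by blast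
  then show "bij_betw (sig g) P P" using sig_inj[OF gA] by (simp add: bij_betw_def)
next
  fix x assume "x \<notin> P" then show "sig g x = x" by (simp add: sig_def)
qed

end

context mctx
begin

lemma AG: "group (AutGr q {1..n})" by (rule AutGr_group[OF finI qpm])

lemma AG_closed: "g \<in> AutGr_set q {1..n} \<Longrightarrow> g' \<in> AutGr_set q {1..n} \<Longrightarrow> matmul {1..n} g g' \<in> AutGr_set q {1..n}"
  using group.subgroup_self[OF AG] by (metis AutGr_carrier AutGr_mult subgroup.m_closed)

lemma matid_AG: "matid {1..n} \<in> AutGr_set q {1..n}"
  using group.subgroup_self[OF AG] by (metis AutGr_carrier AutGr_one subgroup.one_closed)

lemma sig_Gperm:
  assumes gA: "g \<in> AutGr_set q {1..n}"
  shows "sig g \<in> Gperm_set n q P"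
proof -
  obtain h where "ipctx q {1..n} g h" using AutGr_ip[OF gA] by blast
  then interpret ipctx q "{1..n}" g h .
  have tb: "tau i \<in> sig g (blk i)" if i: "i \<in> {1..n}" for i
  proof -
    obtain a where a: "a \<in> {1..n}" "g a i \<noteq> 0" using colnz[OF i] by blast
    have aS: "a \<in> sig g (blk i)" using sig_prop[OF gA _ _ a(2)] blk[OF i] by blast
    have r: "\<forall>l\<in>{1..n}. q a l = q (tau i) l" using tau_rq[OF a(2)] by (simp add: rq_def)
    have "tau i \<in> {1..n}" using tau_I[OF i] .
    then show ?thesis using refd sig_P[OF _ gA] blk[OF i] aS r unfolding refined_by_Bq_def by blast
  qed
  have img: "tau ` D = sig g D" if D: "D \<in> P" for D
  proof
    show "tau ` D \<subseteq> sig g D"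
    proof
      fix y assume "y \<in> tau ` D"
      then obtain x where x: "x \<in> D" "y = tau x" by blast
      have "x \<in> {1..n}" using P_sub[OF D] x(1) by blast
      then show "y \<in> sig g D" using tb blk_eq[OF D x(1)] x(2) by metis
    qed
  next
    show "sig g D \<subseteq> tau ` D"
    proof
      fix y assume y: "y \<in> sig g D"
      have yI: "y \<in> {1..n}" using y P_sub[OF sig_P[OF D gA]] by blast
      then obtain x where x: "x \<in> {1..n}" "y = tau x"
        using permutes_image[OF tau_perm] by (metis imageE)
      have "y \<in> sig g (blk x)" using tb[OF x(1)] x(2) by simp
      then have "sig g (blk x) = sig g D" using P_disj sig_P[OF _ gA] blk[OF x(1)] D y by blast
      then have "blk x = D" using sig_inj[OF gA] blk[OF x(1)] D by (auto simp: inj_on_def)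
      then show "y \<in> tau ` D" using x blk[OF x(1)] by auto
    qed
  qed
  have card: "card (sig g D) = card D" if D: "D \<in> P" for D
  proof -
    have "inj_on tau D" using inj_on_subset[OF tau_inj P_sub[OF D]] .
    then show ?thesis using img[OF D] card_image by metis
  qed
  show ?thesis unfolding Gperm_set_def using sig_perm[OF gA] card tau_perm img tau_q by blast
qed

lemma sig_mult:
  assumes gA: "g \<in> AutGr_set q {1..n}" and gA': "g' \<in> AutGr_set q {1..n}"
  shows "sig (matmul {1..n} g g') = sig g \<circ> sig g'"
proof
  fix D
  show "sig (matmul {1..n} g g') D = (sig g \<circ> sig g') D"
  proof (cases "D \<in> P")
    case False then show ?thesis by (simp add: sig_def)
  next
    case D: True
    have gg: "matmul {1..n} g g' \<in> AutGr_set q {1..n}" by (rule AG_closed[OF gA gA'])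
    obtain h where "ipctx q {1..n} (matmul {1..n} g g') h" using AutGr_ip[OF gg] by blast
    then interpret G2: ipctx q "{1..n}" "matmul {1..n} g g'" h .
    obtain i where i: "i \<in> D" using P_ne[OF D] by blast
    obtain b where b: "b \<in> {1..n}" "matmul {1..n} g g' b i \<noteq> 0" using G2.colnz P_sub[OF D] i by blast
    obtain c where c: "c \<in> {1..n}" "g b c \<noteq> 0" "g' c i \<noteq> 0"
      using b by (auto simp: matmul_def split: if_splits intro: sum.not_neutral_contains_not_neutral)
    have "c \<in> sig g' D" by (rule sig_prop[OF gA' D i c(3)])
    then have "b \<in> sig g (sig g' D)" using sig_prop[OF gA sig_P[OF D gA'] _ c(2)] by blast
    moreover have "b \<in> sig (matmul {1..n} g g') D" by (rule sig_prop[OF gg D i b(2)])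
    ultimately show ?thesis using P_disj sig_P D gA gA' gg by (metis comp_apply)
  qed
qed

lemma sig_one: "sig (matid {1..n}) = id"
proof
  fix D
  show "sig (matid {1..n}) D = id D"
  proof (cases "D \<in> P")
    case False then show ?thesis by (simp add: sig_def)
  next
    case D: True
    obtain i where i: "i \<in> D" using P_ne[OF D] by blast
    have "matid {1..n} i i \<noteq> (0::'k)" using P_sub[OF D] i by (auto simp: matid_def)
    then have "i \<in> sig (matid {1..n}) D" using sig_prop[OF matid_AG D i] by blast
    then show ?thesis using P_disj sig_P[OF D matid_AG] D i by auto
  qed
qed

lemma GP: "group (Gperm n q P)" by (rule Gperm_group)

lemma sig_hom: "sig \<in> hom (AutGr q {1..n}) (Gperm n q P)"
  unfolding hom_def using sig_Gperm sig_mult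
  by (auto simp: AutGr_carrier Gperm_carrier AutGr_mult Gperm_mult)

lemma sig_group_hom: "group_hom (AutGr q {1..n}) (Gperm n q P) sig"
  using AG GP sig_hom by (simp add: group_hom_def group_hom_axioms_def)

end

context mctx
begin

definition pm :: "(nat \<Rightarrow> nat) \<Rightarrow> nat \<Rightarrow> nat \<Rightarrow> 'k" where
  "pm \<tau> = (\<lambda>a b. if b \<in> {1..n} \<and> a = \<tau> b then 1 else 0)"

lemma pm_mult:
  assumes t: "\<tau> ` {1..n} \<subseteq> {1..n}" and t': "\<tau>' ` {1..n} \<subseteq> {1..n}"
  shows "matmul {1..n} (pm \<tau>) (pm \<tau>') = pm (\<tau> \<circ> \<tau>')"
proof (intro ext)
  fix a b
  show "matmul {1..n} (pm \<tau>) (pm \<tau>') a b = pm (\<tau> \<circ> \<tau>') a b"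
  proof (cases "a \<in> {1..n} \<and> b \<in> {1..n}")
    case True
    then have tb: "\<tau>' b \<in> {1..n}" using t' by blast
    have "matmul {1..n} (pm \<tau>) (pm \<tau>') a b = (\<Sum>c\<in>{1..n}. pm \<tau> a c * pm \<tau>' c b)"
      using True by (simp add: matmul_def)
    also have "\<dots> = (\<Sum>c\<in>{1..n}. if c = \<tau>' b then (if a = \<tau> c then 1 else 0) else 0)"
      by (intro sum.cong refl) (use True in \<open>auto simp: pm_def\<close>)
    also have "\<dots> = (if a = \<tau> (\<tau>' b) then 1 else 0)" using tb by (simp add: sum.delta')
    finally show ?thesis using True by (simp add: pm_def)
  next
    case False
    show ?thesis
    proof (cases "b \<in> {1..n}")
      case True
      then have "a \<notin> {1..n}" using False by simp
      moreover have "\<tau> (\<tau>' b) \<in> {1..n}" using t t' True by blast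
      ultimately show ?thesis using False by (auto simp: matmul_def pm_def)
    next
      case False then show ?thesis by (auto simp: matmul_def pm_def)
    qed
  qed
qed

lemma pm_id: "pm id = matid {1..n}"
  by (auto simp: pm_def matid_def fun_eq_iff)

lemma pm_cong: "(\<And>i. i \<in> {1..n} \<Longrightarrow> \<tau> i = \<tau>' i) \<Longrightarrow> pm \<tau> = pm \<tau>'"
  by (auto simp: pm_def fun_eq_iff)

lemma pm_AG:
  assumes p: "\<tau> permutes {1..n}" and qq: "\<And>i j. i \<in> {1..n} \<Longrightarrow> j \<in> {1..n} \<Longrightarrow> q (\<tau> i) (\<tau> j) = q i j"
  shows "pm \<tau> \<in> AutGr_set q {1..n}"
proof -
  have ip: "Hilbert_Choice.inv \<tau> permutes {1..n}" by (rule permutes_inv[OF p])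
  have im: "\<tau> ` {1..n} \<subseteq> {1..n}" "Hilbert_Choice.inv \<tau> ` {1..n} \<subseteq> {1..n}"
    using permutes_image[OF p] permutes_image[OF ip] by auto
  have s1: "supp_ok {1..n} (pm \<tau>)" "supp_ok {1..n} (pm (Hilbert_Choice.inv \<tau>))"
    using im unfolding supp_ok_def pm_def image_subset_iff by (auto simp del: atLeastAtMost_iff)
  have e1: "matmul {1..n} (pm \<tau>) (pm (Hilbert_Choice.inv \<tau>)) = matid {1..n}"
    using pm_mult[OF im(1) im(2)] permutes_inv_o(1)[OF p] pm_id by simp
  have e2: "matmul {1..n} (pm (Hilbert_Choice.inv \<tau>)) (pm \<tau>) = matid {1..n}"
    using pm_mult[OF im(2) im(1)] permutes_inv_o(2)[OF p] pm_id by simp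
  have "invpair {1..n} (pm \<tau>) (pm (Hilbert_Choice.inv \<tau>))"
    unfolding invpair_def using s1 e1 e2 by blast
  moreover have "MC q {1..n} (pm \<tau>)"
    unfolding MC_def using qq by (auto simp: pm_def)
  ultimately show ?thesis using AutGr_char[OF finI qpm] by blast
qed

lemma sig_pm:
  assumes p: "\<tau> permutes {1..n}" and qq: "\<And>i j. i \<in> {1..n} \<Longrightarrow> j \<in> {1..n} \<Longrightarrow> q (\<tau> i) (\<tau> j) = q i j"
    and s: "\<sigma> permutes P" and blk: "\<And>D i. D \<in> P \<Longrightarrow> i \<in> D \<Longrightarrow> \<tau> i \<in> \<sigma> D"
  shows "sig (pm \<tau>) = \<sigma>"
proof
  fix D
  show "sig (pm \<tau>) D = \<sigma> D"
  proof (cases "D \<in> P")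
    case False then show ?thesis using s by (simp add: sig_def permutes_not_in)
  next
    case D: True
    obtain i where i: "i \<in> D" using P_ne[OF D] by blast
    have "pm \<tau> (\<tau> i) i \<noteq> 0" using P_sub[OF D] i by (auto simp: pm_def)
    then have "\<tau> i \<in> sig (pm \<tau>) D" using sig_prop[OF pm_AG[OF p qq] D i] by blast
    moreover have "\<tau> i \<in> \<sigma> D" by (rule blk[OF D i])
    moreover have "\<sigma> D \<in> P" using s D by (simp add: permutes_in_image)
    ultimately show ?thesis using P_disj sig_P[OF D pm_AG[OF p qq]] by blast
  qed
qed

end

context mctx
begin

lemma G_elem:
  assumes "\<sigma> \<in> Gperm_set n q P"
  obtains \<tau> where "\<sigma> permutes P" "\<tau> permutes {1..n}" "\<And>D. D \<in> P \<Longrightarrow> \<tau> ` D = \<sigma> D"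
    "\<And>i j. i \<in> {1..n} \<Longrightarrow> j \<in> {1..n} \<Longrightarrow> q (\<tau> i) (\<tau> j) = q i j"
proof -
  have h: "\<sigma> permutes P \<and> (\<forall>D\<in>P. card (\<sigma> D) = card D) \<and> (\<exists>\<tau>. \<tau> permutes {1..n} \<and> (\<forall>D\<in>P. \<tau> ` D = \<sigma> D)
             \<and> (\<forall>i\<in>{1..n}. \<forall>j\<in>{1..n}. q (\<tau> i) (\<tau> j) = q i j))"
    using assms unfolding Gperm_set_def by (rule CollectD)
  then have "\<exists>\<tau>. \<tau> permutes {1..n} \<and> (\<forall>D\<in>P. \<tau> ` D = \<sigma> D)
             \<and> (\<forall>i\<in>{1..n}. \<forall>j\<in>{1..n}. q (\<tau> i) (\<tau> j) = q i j)" by (rule conjunct2[THEN conjunct2])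
  then obtain \<tau> where t0: "\<tau> permutes {1..n} \<and> (\<forall>D\<in>P. \<tau> ` D = \<sigma> D)
             \<and> (\<forall>i\<in>{1..n}. \<forall>j\<in>{1..n}. q (\<tau> i) (\<tau> j) = q i j)" by (rule exE)
  have t: "\<tau> permutes {1..n}" "\<forall>D\<in>P. \<tau> ` D = \<sigma> D"
    "\<forall>i\<in>{1..n}. \<forall>j\<in>{1..n}. q (\<tau> i) (\<tau> j) = q i j" using t0 by simp_all
  show ?thesis
  proof (rule that[of \<tau>])
    show "\<sigma> permutes P" using h by (rule conjunct1)
    show "\<tau> permutes {1..n}" by (rule t(1))
    fix D assume "D \<in> P" then show "\<tau> ` D = \<sigma> D" using t(2) by blast
  next
    fix i j assume "i \<in> {1..n}" "j \<in> {1..n}" then show "q (\<tau> i) (\<tau> j) = q i j" using t(3) by blast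
  qed
qed

lemma G_comp: "\<sigma> \<in> Gperm_set n q P \<Longrightarrow> \<rho> \<in> Gperm_set n q P \<Longrightarrow> \<sigma> \<circ> \<rho> \<in> Gperm_set n q P"
  using group.subgroup_self[OF GP] by (metis Gperm_carrier Gperm_mult subgroup.m_closed)

lemma G_id: "id \<in> Gperm_set n q P"
  using group.subgroup_self[OF GP] by (metis Gperm_carrier Gperm_one subgroup.one_closed)

lemma G_inv: "\<rho> \<in> Gperm_set n q P \<Longrightarrow> \<exists>\<rho>'\<in>Gperm_set n q P. \<rho>' \<circ> \<rho> = id"
  using group.l_inv[OF GP] group.inv_closed[OF GP] by (metis Gperm_carrier Gperm_mult Gperm_one)

lemma G_P: "\<sigma> \<in> Gperm_set n q P \<Longrightarrow> D \<in> P \<Longrightarrow> \<sigma> D \<in> P"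
  by (metis G_elem permutes_in_image)

definition orb :: "nat set \<Rightarrow> nat set set" where
  "orb D = {\<sigma> D | \<sigma>. \<sigma> \<in> Gperm_set n q P}"

definition rep :: "nat set \<Rightarrow> nat set" where
  "rep D = (SOME E. E \<in> orb D)"

lemma orb_self: "D \<in> orb D"
proof -
  have "D = id D" by simp
  then show ?thesis using G_id unfolding orb_def by blast
qed

lemma orb_act:
  assumes r: "\<rho> \<in> Gperm_set n q P" shows "orb (\<rho> D) = orb D"
proof
  show "orb (\<rho> D) \<subseteq> orb D"
  proof
    fix E assume "E \<in> orb (\<rho> D)"
    then obtain \<sigma> where s: "\<sigma> \<in> Gperm_set n q P" "E = \<sigma> (\<rho> D)" unfolding orb_def by blast
    have "E = (\<sigma> \<circ> \<rho>) D" using s by simp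
    then show "E \<in> orb D" unfolding orb_def using G_comp[OF s(1) r] by blast
  qed
next
  obtain \<rho>' where r': "\<rho>' \<in> Gperm_set n q P" "\<rho>' \<circ> \<rho> = id" using G_inv[OF r] by blast
  show "orb D \<subseteq> orb (\<rho> D)"
  proof
    fix E assume "E \<in> orb D"
    then obtain \<sigma> where s: "\<sigma> \<in> Gperm_set n q P" "E = \<sigma> D" by (auto simp: orb_def)
    have "E = (\<sigma> \<circ> \<rho>') (\<rho> D)" using s r'(2) by (metis comp_apply id_apply)
    then show "E \<in> orb (\<rho> D)" unfolding orb_def using G_comp[OF s(1) r'(1)] by blast
  qed
qed

lemma rep_orb: "rep D \<in> orb D"
  unfolding rep_def using orb_self by (rule someI)

lemma rep_act: "\<rho> \<in> Gperm_set n q P \<Longrightarrow> rep (\<rho> D) = rep D"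
  by (simp add: rep_def orb_act)

lemma rep_P: assumes D: "D \<in> P" shows "rep D \<in> P"
proof -
  obtain \<sigma> where "\<sigma> \<in> Gperm_set n q P" "rep D = \<sigma> D" using rep_orb[of D] unfolding orb_def by blast
  then show ?thesis using G_P D by simp
qed

definition iota :: "nat set \<Rightarrow> nat \<Rightarrow> nat" where
  "iota D = (SOME f. bij_betw f (rep D) D \<and> (\<forall>x\<in>rep D. \<forall>y\<in>rep D. q (f x) (f y) = q x y))"

lemma iota_prop:
  assumes D: "D \<in> P"
  shows "bij_betw (iota D) (rep D) D \<and> (\<forall>x\<in>rep D. \<forall>y\<in>rep D. q (iota D x) (iota D y) = q x y)"
proof -
  obtain \<sigma>0 where s0: "\<sigma>0 \<in> Gperm_set n q P" "rep D = \<sigma>0 D" using rep_orb unfolding orb_def by blast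
  obtain \<tau> where t: "\<tau> permutes {1..n}" "\<And>D. D \<in> P \<Longrightarrow> \<tau> ` D = \<sigma>0 D"
    "\<And>i j. i \<in> {1..n} \<Longrightarrow> j \<in> {1..n} \<Longrightarrow> q (\<tau> i) (\<tau> j) = q i j"
    using G_elem[OF s0(1)] by metis
  have injD: "inj_on \<tau> D" by (rule permutes_inj_on[OF t(1)])
  have b: "bij_betw \<tau> D (rep D)" using injD t(2)[OF D] s0(2) by (simp add: bij_betw_def)
  define f where "f = inv_into D \<tau>"
  have bf: "bij_betw f (rep D) D" unfolding f_def by (rule bij_betw_inv_into[OF b])
  have qf: "\<forall>x\<in>rep D. \<forall>y\<in>rep D. q (f x) (f y) = q x y"
  proof (intro ballI)
    fix x y assume x: "x \<in> rep D" and y: "y \<in> rep D"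
    have fx: "f x \<in> D" "f y \<in> D" using bf x y by (auto simp: bij_betw_def)
    have "q (\<tau> (f x)) (\<tau> (f y)) = q (f x) (f y)" using t(3) fx P_sub[OF D] by blast
    moreover have "\<tau> (f x) = x" "\<tau> (f y) = y" using b x y unfolding f_def
      by (auto simp: bij_betw_def f_inv_into_f)
    ultimately show "q (f x) (f y) = q x y" by simp
  qed
  have ex: "\<exists>f. bij_betw f (rep D) D \<and> (\<forall>x\<in>rep D. \<forall>y\<in>rep D. q (f x) (f y) = q x y)"
    using bf qf by blast
  show ?thesis unfolding iota_def by (rule someI_ex[OF ex])
qed

definition kap :: "nat set \<Rightarrow> nat \<Rightarrow> nat" where
  "kap D = inv_into (rep D) (iota D)"

lemma kap_bij: "D \<in> P \<Longrightarrow> bij_betw (kap D) D (rep D)"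
  unfolding kap_def using iota_prop bij_betw_inv_into by blast

lemma iota_kap: "D \<in> P \<Longrightarrow> i \<in> D \<Longrightarrow> iota D (kap D i) = i"
  unfolding kap_def using iota_prop by (metis bij_betw_def f_inv_into_f)

definition tauS :: "(nat set \<Rightarrow> nat set) \<Rightarrow> nat \<Rightarrow> nat" where
  "tauS \<sigma> i = (if i \<in> {1..n} then iota (\<sigma> (blk i)) (kap (blk i) i) else i)"

lemma tauS_in:
  assumes s: "\<sigma> \<in> Gperm_set n q P" and D: "D \<in> P" and i: "i \<in> D"
  shows "tauS \<sigma> i \<in> \<sigma> D"
proof -
  have iI: "i \<in> {1..n}" using P_sub[OF D] i by blast
  have k: "kap D i \<in> rep (\<sigma> D)" using kap_bij[OF D] i rep_act[OF s] by (auto simp: bij_betw_def)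
  have "iota (\<sigma> D) (kap D i) \<in> \<sigma> D" using iota_prop[OF G_P[OF s D]] k by (auto simp: bij_betw_def)
  then show ?thesis using iI blk_eq[OF D i] by (simp add: tauS_def)
qed

lemma tauS_I: "\<sigma> \<in> Gperm_set n q P \<Longrightarrow> i \<in> {1..n} \<Longrightarrow> tauS \<sigma> i \<in> {1..n}"
  using tauS_in blk P_sub G_P by blast

lemma tauS_inj:
  assumes s: "\<sigma> \<in> Gperm_set n q P"
  shows "inj_on (tauS \<sigma>) {1..n}"
proof (rule inj_onI)
  fix i j assume i: "i \<in> {1..n}" and j: "j \<in> {1..n}" and e: "tauS \<sigma> i = tauS \<sigma> j"
  have Di: "blk i \<in> P" "i \<in> blk i" and Dj: "blk j \<in> P" "j \<in> blk j" using blk i j by auto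
  have "tauS \<sigma> i \<in> \<sigma> (blk i)" "tauS \<sigma> j \<in> \<sigma> (blk j)" using tauS_in[OF s] Di Dj by auto
  then have "\<sigma> (blk i) = \<sigma> (blk j)" using e P_disj G_P[OF s] Di Dj by metis
  then have bij: "blk i = blk j" using G_elem[OF s] permutes_inj by (metis injD)
  define D where "D = blk i"
  have D: "D \<in> P" "i \<in> D" "j \<in> D" using Di Dj bij by (auto simp: D_def)
  have ki: "kap D i \<in> rep D" "kap D j \<in> rep D" using kap_bij[OF D(1)] D by (auto simp: bij_betw_def)
  have "iota (\<sigma> D) (kap D i) = iota (\<sigma> D) (kap D j)" using e i j bij by (simp add: tauS_def D_def)
  moreover have "inj_on (iota (\<sigma> D)) (rep D)"
    using iota_prop[OF G_P[OF s D(1)]] rep_act[OF s] by (simp add: bij_betw_def)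
  ultimately have "kap D i = kap D j" using ki by (auto simp: inj_on_def)
  then show "i = j" using kap_bij[OF D(1)] D by (auto simp: bij_betw_def inj_on_def)
qed

lemma tauS_perm:
  assumes s: "\<sigma> \<in> Gperm_set n q P"
  shows "tauS \<sigma> permutes {1..n}"
proof (rule bij_imp_permutes)
  have "tauS \<sigma> ` {1..n} \<subseteq> {1..n}" using tauS_I[OF s] by blast
  then have "tauS \<sigma> ` {1..n} = {1..n}" using endo_inj_surj[OF finI _ tauS_inj[OF s]] by blast
  then show "bij_betw (tauS \<sigma>) {1..n} {1..n}" using tauS_inj[OF s] by (simp add: bij_betw_def)
next
  fix x assume "x \<notin> {1..n}" then show "tauS \<sigma> x = x" unfolding tauS_def by (rule if_not_P)
qed

lemma tauS_q:
  assumes s: "\<sigma> \<in> Gperm_set n q P" and i: "i \<in> {1..n}" and j: "j \<in> {1..n}"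
  shows "q (tauS \<sigma> i) (tauS \<sigma> j) = q i j"
proof (cases "blk i = blk j")
  case True
  define D where "D = blk i"
  have D: "D \<in> P" "i \<in> D" "j \<in> D" using blk i j True by (auto simp: D_def)
  have ki: "kap D i \<in> rep D" "kap D j \<in> rep D" using kap_bij[OF D(1)] D by (auto simp: bij_betw_def)
  have "q (tauS \<sigma> i) (tauS \<sigma> j) = q (iota (\<sigma> D) (kap D i)) (iota (\<sigma> D) (kap D j))"
    using i j True by (simp add: tauS_def D_def)
  also have "\<dots> = q (kap D i) (kap D j)" using iota_prop[OF G_P[OF s D(1)]] rep_act[OF s] ki by simp
  also have "\<dots> = q (iota D (kap D i)) (iota D (kap D j))" using iota_prop[OF D(1)] ki by simp
  also have "\<dots> = q i j" using iota_kap[OF D(1)] D by simp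
  finally show ?thesis .
next
  case False
  obtain \<tau> where t: "\<sigma> permutes P" "\<tau> permutes {1..n}" "\<And>D. D \<in> P \<Longrightarrow> \<tau> ` D = \<sigma> D"
    "\<And>i j. i \<in> {1..n} \<Longrightarrow> j \<in> {1..n} \<Longrightarrow> q (\<tau> i) (\<tau> j) = q i j"
    using G_elem[OF s] by metis
  have Di: "blk i \<in> P" "i \<in> blk i" and Dj: "blk j \<in> P" "j \<in> blk j" using blk i j by auto
  have ne: "\<sigma> (blk i) \<noteq> \<sigma> (blk j)" using False permutes_inj[OF t(1)] by (metis injD)
  obtain c where c: "\<forall>x\<in>\<sigma> (blk i). \<forall>y\<in>\<sigma> (blk j). q x y = c"
    using cst G_P[OF s Di(1)] G_P[OF s Dj(1)] ne by blast
  have "\<tau> i \<in> \<sigma> (blk i)" "\<tau> j \<in> \<sigma> (blk j)" using t(3) Di Dj by blast+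
  then have "q (\<tau> i) (\<tau> j) = c" using c by blast
  moreover have "q (tauS \<sigma> i) (tauS \<sigma> j) = c" using c tauS_in[OF s] Di Dj by blast
  ultimately show ?thesis using t(4)[OF i j] by simp
qed

lemma tauS_comp:
  assumes s: "\<sigma> \<in> Gperm_set n q P" and r: "\<rho> \<in> Gperm_set n q P" and i: "i \<in> {1..n}"
  shows "tauS (\<sigma> \<circ> \<rho>) i = tauS \<sigma> (tauS \<rho> i)"
proof -
  define D where "D = blk i"
  have D: "D \<in> P" "i \<in> D" using blk i by (auto simp: D_def)
  have ri: "tauS \<rho> i \<in> \<rho> D" by (rule tauS_in[OF r D])
  have rD: "\<rho> D \<in> P" by (rule G_P[OF r D(1)])
  have ri': "tauS \<rho> i \<in> {1..n}" using ri P_sub[OF rD] by blast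
  have bri: "blk (tauS \<rho> i) = \<rho> D" by (rule blk_eq[OF rD ri])
  have k: "kap D i \<in> rep (\<rho> D)" using kap_bij[OF D(1)] D(2) rep_act[OF r] by (auto simp: bij_betw_def)
  have "kap (\<rho> D) (tauS \<rho> i) = kap (\<rho> D) (iota (\<rho> D) (kap D i))"
    using i by (simp add: tauS_def D_def)
  also have "\<dots> = kap D i"
  proof -
    have "inj_on (iota (\<rho> D)) (rep (\<rho> D))" using iota_prop[OF rD] by (simp add: bij_betw_def)
    then show ?thesis unfolding kap_def[of "\<rho> D"] using k by (rule inv_into_f_f)
  qed
  finally have kk: "kap (\<rho> D) (tauS \<rho> i) = kap D i" .
  show ?thesis using i ri' bri kk by (simp add: tauS_def D_def)
qed

lemma tauS_id: "i \<in> {1..n} \<Longrightarrow> tauS id i = i"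
  using iota_kap blk by (simp add: tauS_def)

definition sec :: "(nat set \<Rightarrow> nat set) \<Rightarrow> nat \<Rightarrow> nat \<Rightarrow> 'k" where
  "sec \<sigma> = pm (tauS \<sigma>)"

lemma sec_AG: "\<sigma> \<in> Gperm_set n q P \<Longrightarrow> sec \<sigma> \<in> AutGr_set q {1..n}"
  unfolding sec_def using pm_AG tauS_perm tauS_q by blast

lemma sig_sec: "\<sigma> \<in> Gperm_set n q P \<Longrightarrow> sig (sec \<sigma>) = \<sigma>"
  unfolding sec_def using sig_pm tauS_perm tauS_q tauS_in G_elem by metis

lemma sec_comp:
  assumes s: "\<sigma> \<in> Gperm_set n q P" and r: "\<rho> \<in> Gperm_set n q P"
  shows "sec (\<sigma> \<circ> \<rho>) = matmul {1..n} (sec \<sigma>) (sec \<rho>)"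
proof -
  have im: "tauS \<sigma> ` {1..n} \<subseteq> {1..n}" "tauS \<rho> ` {1..n} \<subseteq> {1..n}" using tauS_I s r by blast+
  have "sec (\<sigma> \<circ> \<rho>) = pm (tauS \<sigma> \<circ> tauS \<rho>)"
    unfolding sec_def by (rule pm_cong) (simp add: tauS_comp[OF s r])
  also have "\<dots> = matmul {1..n} (sec \<sigma>) (sec \<rho>)" unfolding sec_def by (rule pm_mult[OF im, symmetric])
  finally show ?thesis .
qed

lemma sec_id: "sec id = matid {1..n}"
  unfolding sec_def pm_id[symmetric] by (rule pm_cong) (simp add: tauS_id)

end

context mctx
begin

definition Hs :: "(nat \<Rightarrow> nat \<Rightarrow> 'k) set" where
  "Hs = {g \<in> AutGr_set q {1..n}. sig g = id}"

definition rho :: "(nat \<Rightarrow> nat \<Rightarrow> 'k) \<Rightarrow> nat set \<Rightarrow> nat \<Rightarrow> nat \<Rightarrow> 'k" where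
  "rho g = (\<lambda>D\<in>P. (\<lambda>a b. if a \<in> D \<and> b \<in> D then g a b else 0))"

lemma AG_supp: "g \<in> AutGr_set q I \<Longrightarrow> a \<notin> I \<or> b \<notin> I \<Longrightarrow> g a b = 0"
  by (auto simp: AutGr_set_def)

lemma H_blk:
  assumes g: "g \<in> Hs" and ga: "g a i \<noteq> 0"
  shows "i \<in> {1..n}" "a \<in> blk i"
proof -
  have gA: "g \<in> AutGr_set q {1..n}" and s: "sig g = id" using g by (auto simp: Hs_def)
  show i: "i \<in> {1..n}" using AG_supp[OF gA] ga by blast
  have "a \<in> sig g (blk i)" using sig_prop[OF gA _ _ ga] blk[OF i] by blast
  then show "a \<in> blk i" using s by simp
qed

lemma Hs_inv:
  assumes g: "g \<in> Hs"
  obtains h where "invpair {1..n} g h" "h \<in> Hs"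
proof -
  have gA: "g \<in> AutGr_set q {1..n}" and s: "sig g = id" using g by (auto simp: Hs_def)
  obtain h where ip: "invpair {1..n} g h" and mc: "MC q {1..n} g" using gA AutGr_char[OF finI qpm] by blast
  have mh: "MC q {1..n} h" by (rule invpair_MC[OF finI qpm ip mc])
  have hA: "h \<in> AutGr_set q {1..n}" using invpair_sym[OF ip] mh AutGr_char[OF finI qpm] by blast
  have "sig h = sig h \<circ> sig g" using s by simp
  also have "\<dots> = sig (matmul {1..n} h g)" by (rule sig_mult[OF hA gA, symmetric])
  also have "matmul {1..n} h g = matid {1..n}" using ip by (simp add: invpair_def)
  finally have "sig h = sig (matid {1..n})" .
  from this sig_one have "sig h = id" by (rule trans)
  then show ?thesis using that ip hA by (auto simp: Hs_def)
qed

lemma restr_mult: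
  assumes g: "g \<in> Hs" and g': "g' \<in> Hs" and D: "D \<in> P"
  shows "matmul D (rho g D) (rho g' D) = rho (matmul {1..n} g g') D"
proof (intro ext)
  fix a b
  show "matmul D (rho g D) (rho g' D) a b = rho (matmul {1..n} g g') D a b"
  proof (cases "a \<in> D \<and> b \<in> D")
    case True
    have sub: "D \<subseteq> {1..n}" by (rule P_sub[OF D])
    have "matmul D (rho g D) (rho g' D) a b = (\<Sum>c\<in>D. g a c * g' c b)"
      using True D by (simp add: matmul_def rho_def)
    also have "\<dots> = (\<Sum>c\<in>{1..n}. g a c * g' c b)"
    proof (rule sum.mono_neutral_left[OF finI sub], intro ballI)
      fix c assume c: "c \<in> {1..n} - D"
      show "g a c * g' c b = 0"
      proof (rule ccontr)
        assume "g a c * g' c b \<noteq> 0"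
        then have "g' c b \<noteq> 0" by auto
        then have "c \<in> blk b" using H_blk[OF g'] by blast
        then show False using blk_eq[OF D] True c by auto
      qed
    qed
    also have "\<dots> = rho (matmul {1..n} g g') D a b"
      using True D sub by (auto simp: matmul_def rho_def)
    finally show ?thesis .
  next
    case False then show ?thesis using D by (auto simp: matmul_def rho_def)
  qed
qed

lemma qpm_sub: assumes D: "D \<in> P" shows "qpm D q"
proof -
  have s: "D \<subseteq> {1..n}" by (rule P_sub[OF D])
  show ?thesis using qpm s unfolding qpm_def by blast
qed

lemma finD: "D \<in> P \<Longrightarrow> finite D"
  using P_sub finite_subset finI by blast

lemma rho_AG:
  assumes g: "g \<in> Hs" and D: "D \<in> P"
  shows "rho g D \<in> AutGr_set q D"
proof -
  obtain h where ip: "invpair {1..n} g h" and h: "h \<in> Hs" by (rule Hs_inv[OF g])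
  have gA: "g \<in> AutGr_set q {1..n}" using g by (simp add: Hs_def)
  have mc: "MC q {1..n} g" using gA AutGr_char[OF finI qpm] by blast
  have e1: "matmul D (rho g D) (rho h D) = matid D"
    using restr_mult[OF g h D] ip D P_sub[OF D] by (auto simp: invpair_def rho_def matid_def fun_eq_iff)
  have e2: "matmul D (rho h D) (rho g D) = matid D"
    using restr_mult[OF h g D] ip D P_sub[OF D] by (auto simp: invpair_def rho_def matid_def fun_eq_iff)
  have "invpair D (rho g D) (rho h D)"
    using e1 e2 D by (simp add: invpair_def supp_ok_def rho_def)
  moreover have "MC q D (rho g D)" unfolding MC_def
  proof (intro ballI impI)
    fix i j a b assume ij: "i \<in> D" "j \<in> D" "a \<in> D" "b \<in> D"
      and n1: "rho g D a i \<noteq> 0" and n2: "rho g D b j \<noteq> 0"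
    have "g a i \<noteq> 0" "g b j \<noteq> 0" using n1 n2 ij D by (auto simp: rho_def)
    moreover have "i \<in> {1..n}" "j \<in> {1..n}" "a \<in> {1..n}" "b \<in> {1..n}" using ij P_sub[OF D] by blast+
    ultimately show "q a b = q i j" using mc unfolding MC_def by blast
  qed
  ultimately show ?thesis using AutGr_char[OF finD[OF D] qpm_sub[OF D]] by blast
qed

lemma rho_inj: "inj_on rho Hs"
proof (rule inj_onI)
  fix g g' assume g: "g \<in> Hs" and g': "g' \<in> Hs" and e: "rho g = rho g'"
  have gA: "g \<in> AutGr_set q {1..n}" "g' \<in> AutGr_set q {1..n}" using g g' by (auto simp: Hs_def)
  show "g = g'"
  proof (intro ext)
    fix a b
    show "g a b = g' a b"
    proof (cases "b \<in> {1..n} \<and> a \<in> blk b")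
      case True
      then have D: "blk b \<in> P" "b \<in> blk b" using blk by auto
      have "rho g (blk b) a b = rho g' (blk b) a b" using e by simp
      then show ?thesis using True D by (simp add: rho_def)
    next
      case False
      then have "g a b = 0" "g' a b = 0" using H_blk[OF g] H_blk[OF g'] by blast+
      then show ?thesis by simp
    qed
  qed
qed

definition glue :: "(nat set \<Rightarrow> nat \<Rightarrow> nat \<Rightarrow> 'k) \<Rightarrow> nat \<Rightarrow> nat \<Rightarrow> 'k" where
  "glue f = (\<lambda>a b. if a \<in> {1..n} \<and> b \<in> {1..n} \<and> blk a = blk b then f (blk b) a b else 0)"

lemma glue_mult:
  assumes f: "\<And>D. D \<in> P \<Longrightarrow> supp_ok D (f D)" and f': "\<And>D. D \<in> P \<Longrightarrow> supp_ok D (f' D)"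
  shows "matmul {1..n} (glue f) (glue f') = glue (\<lambda>D. matmul D (f D) (f' D))"
proof (intro ext)
  fix a b
  show "matmul {1..n} (glue f) (glue f') a b = glue (\<lambda>D. matmul D (f D) (f' D)) a b"
  proof (cases "a \<in> {1..n} \<and> b \<in> {1..n}")
    case False then show ?thesis by (auto simp: matmul_def glue_def)
  next
    case True
    have Db: "blk b \<in> P" "b \<in> blk b" using blk True by auto
    have sub: "blk b \<subseteq> {1..n}" by (rule P_sub[OF Db(1)])
    have "matmul {1..n} (glue f) (glue f') a b = (\<Sum>c\<in>{1..n}. glue f a c * glue f' c b)"
      using True by (simp add: matmul_def)
    also have "\<dots> = (\<Sum>c\<in>blk b. glue f a c * glue f' c b)"
    proof (rule sum.mono_neutral_right[OF finI sub], intro ballI)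
      fix c assume c: "c \<in> {1..n} - blk b"
      have "blk c \<noteq> blk b" using c blk by auto
      then show "glue f a c * glue f' c b = 0" by (simp add: glue_def)
    qed
    also have "\<dots> = (if blk a = blk b then (\<Sum>c\<in>blk b. f (blk b) a c * f' (blk b) c b) else 0)"
    proof (cases "blk a = blk b")
      case True
      have "(\<Sum>c\<in>blk b. glue f a c * glue f' c b) = (\<Sum>c\<in>blk b. f (blk b) a c * f' (blk b) c b)"
      proof (intro sum.cong refl)
        fix c assume c: "c \<in> blk b"
        have "blk c = blk b" using blk_eq[OF Db(1) c] .
        then show "glue f a c * glue f' c b = f (blk b) a c * f' (blk b) c b"
          using True \<open>a \<in> {1..n} \<and> b \<in> {1..n}\<close> c sub by (auto simp: glue_def)
      qed
      then show ?thesis using True by simp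
    next
      case False
      have "(\<Sum>c\<in>blk b. glue f a c * glue f' c b) = 0"
      proof (intro sum.neutral ballI)
        fix c assume c: "c \<in> blk b"
        have "blk c = blk b" using blk_eq[OF Db(1) c] .
        then show "glue f a c * glue f' c b = 0" using False by (simp add: glue_def)
      qed
      then show ?thesis using False by simp
    qed
    also have "\<dots> = glue (\<lambda>D. matmul D (f D) (f' D)) a b"
    proof (cases "blk a = blk b")
      case True
      have "a \<in> blk b" using True blk \<open>a \<in> {1..n} \<and> b \<in> {1..n}\<close> by metis
      then show ?thesis using True \<open>a \<in> {1..n} \<and> b \<in> {1..n}\<close> Db by (simp add: glue_def matmul_def)
    next
      case False then show ?thesis by (simp add: glue_def)
    qed
    finally show ?thesis .
  qed
qed

lemma glue_cong: "(\<And>D. D \<in> P \<Longrightarrow> f D = f' D) \<Longrightarrow> glue f = glue f'"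
  by (auto simp: glue_def fun_eq_iff blk)

lemma glue_matid: "glue (\<lambda>D. matid D) = matid {1..n}"
  by (auto simp: glue_def matid_def fun_eq_iff blk)

lemma glue_H:
  assumes f: "f \<in> (\<Pi>\<^sub>E D\<in>P. AutGr_set q D)"
  shows "glue f \<in> Hs" "rho (glue f) = f"
proof -
  have fD: "f D \<in> AutGr_set q D" if "D \<in> P" for D using f that by auto
  have ex: "\<forall>D\<in>P. \<exists>h. invpair D (f D) h \<and> MC q D (f D)"
    using fD AutGr_char[OF finD qpm_sub] by blast
  then obtain hh where hh: "\<And>D. D \<in> P \<Longrightarrow> invpair D (f D) (hh D) \<and> MC q D (f D)" by metis
  have so: "\<And>D. D \<in> P \<Longrightarrow> supp_ok D (f D)" "\<And>D. D \<in> P \<Longrightarrow> supp_ok D (hh D)"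
    using hh by (auto simp: invpair_def)
  have e1: "matmul {1..n} (glue f) (glue hh) = matid {1..n}"
  proof -
    have "glue (\<lambda>D. matmul D (f D) (hh D)) = glue (\<lambda>D. matid D)"
      by (rule glue_cong) (use hh in \<open>simp add: invpair_def\<close>)
    then show ?thesis using glue_mult[OF so(1) so(2)] glue_matid by simp
  qed
  have e2: "matmul {1..n} (glue hh) (glue f) = matid {1..n}"
  proof -
    have "glue (\<lambda>D. matmul D (hh D) (f D)) = glue (\<lambda>D. matid D)"
      by (rule glue_cong) (use hh in \<open>simp add: invpair_def\<close>)
    then show ?thesis using glue_mult[OF so(2) so(1)] glue_matid by simp
  qed
  have ip: "invpair {1..n} (glue f) (glue hh)"
    using e1 e2 by (simp add: invpair_def supp_ok_def glue_def)
  have mc: "MC q {1..n} (glue f)"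
    unfolding MC_def
  proof (intro ballI impI)
    fix i j a b assume ij: "i \<in> {1..n}" "j \<in> {1..n}" "a \<in> {1..n}" "b \<in> {1..n}"
      and ga: "glue f a i \<noteq> 0" and gb: "glue f b j \<noteq> 0"
    have bi: "blk a = blk i" "blk b = blk j" using ga gb by (auto simp: glue_def split: if_splits)
    have Di: "blk i \<in> P" "i \<in> blk i" "a \<in> blk i" and Dj: "blk j \<in> P" "j \<in> blk j" "b \<in> blk j"
      using blk ij bi by metis+
    show "q a b = q i j"
    proof (cases "blk i = blk j")
      case True
      have "f (blk i) a i \<noteq> 0" "f (blk i) b j \<noteq> 0" using ga gb ij bi True by (auto simp: glue_def)
      then show ?thesis using hh[OF Di(1)] Di Dj True unfolding MC_def by metis
    next
      case False
      obtain c where "\<forall>x\<in>blk i. \<forall>y\<in>blk j. q x y = c" using cst Di(1) Dj(1) False by blast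
      then show ?thesis using Di Dj by metis
    qed
  qed
  have gA: "glue f \<in> AutGr_set q {1..n}" using ip mc AutGr_char[OF finI qpm] by blast
  have "sig (glue f) = id"
  proof
    fix D show "sig (glue f) D = id D"
    proof (cases "D \<in> P")
      case False then show ?thesis by (simp add: sig_def)
    next
      case D: True
      obtain i where i: "i \<in> D" using P_ne[OF D] by blast
      have iI: "i \<in> {1..n}" using P_sub[OF D] i by blast
      obtain h0 where "ipctx q {1..n} (glue f) h0" using AutGr_ip[OF gA] by blast
      then interpret G0: ipctx q "{1..n}" "glue f" h0 .
      obtain a where a: "a \<in> {1..n}" "glue f a i \<noteq> 0" using G0.colnz[OF iI] by blast
      have "blk a = blk i" using a by (auto simp: glue_def split: if_splits)
      then have "a \<in> D" using blk[OF a(1)] blk_eq[OF D i] by simp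
      then show ?thesis using sig_eq[OF gA D i a(2)] blk_eq[OF D] by simp
    qed
  qed
  then show "glue f \<in> Hs" using gA by (simp add: Hs_def)
  show "rho (glue f) = f"
  proof
    fix D
    show "rho (glue f) D = f D"
    proof (cases "D \<in> P")
      case False then show ?thesis using f by (simp add: rho_def PiE_def extensional_def)
    next
      case D: True
      have sD: "supp_ok D (f D)" by (rule so(1)[OF D])
      show ?thesis
      proof (intro ext)
        fix a b
        show "rho (glue f) D a b = f D a b"
        proof (cases "a \<in> D \<and> b \<in> D")
          case True
          then show ?thesis using D blk_eq[OF D] P_sub[OF D] by (auto simp: rho_def glue_def)
        next
          case False
          then show ?thesis using D sD by (auto simp: rho_def supp_ok_def)
        qed
      qed
    qed
  qed
qed

end

context mctx
begin

lemma Hs_kernel: "Hs = kernel (AutGr q {1..n}) (Gperm n q P) sig"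
  by (auto simp: Hs_def kernel_def AutGr_carrier Gperm_one)

lemma sec_hom: "sec \<in> hom (Gperm n q P) (AutGr q {1..n})"
  unfolding hom_def using sec_AG sec_comp
  by (auto simp: AutGr_carrier Gperm_carrier AutGr_mult Gperm_mult)

lemma sec_group_hom: "group_hom (Gperm n q P) (AutGr q {1..n}) sec"
  using AG GP sec_hom by (simp add: group_hom_def group_hom_axioms_def)

lemma main_result:
  "\<exists>H K. H \<lhd> AutGr q {1..n} \<and> subgroup K (AutGr q {1..n})
     \<and> H \<inter> K = {\<one>\<^bsub>AutGr q {1..n}\<^esub>}
     \<and> H <#>\<^bsub>AutGr q {1..n}\<^esub> K = carrier (AutGr q {1..n})
     \<and> (AutGr q {1..n})\<lparr>carrier := H\<rparr> \<cong> product_group P (\<lambda>D. AutGr q D)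
     \<and> (AutGr q {1..n})\<lparr>carrier := K\<rparr> \<cong> Gperm n q P"
proof (intro exI conjI)
  define K where "K = sec ` Gperm_set n q P"
  show "Hs \<lhd> AutGr q {1..n}"
    unfolding Hs_kernel by (rule group_hom.normal_kernel[OF sig_group_hom])
  show sK: "subgroup K (AutGr q {1..n})"
    unfolding K_def using group_hom.img_is_subgroup[OF sec_group_hom] by (simp add: Gperm_carrier)
  show "Hs \<inter> K = {\<one>\<^bsub>AutGr q {1..n}\<^esub>}"
  proof
    show "Hs \<inter> K \<subseteq> {\<one>\<^bsub>AutGr q {1..n}\<^esub>}"
    proof
      fix x assume x: "x \<in> Hs \<inter> K"
      then obtain \<sigma> where s: "\<sigma> \<in> Gperm_set n q P" "x = sec \<sigma>" by (auto simp: K_def)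
      have "sig x = id" using x by (simp add: Hs_def)
      then have "\<sigma> = id" using sig_sec[OF s(1)] s(2) by simp
      then show "x \<in> {\<one>\<^bsub>AutGr q {1..n}\<^esub>}" using s(2) sec_id by (simp add: AutGr_one)
    qed
  next
    have "matid {1..n} \<in> Hs" using matid_AG sig_one by (simp add: Hs_def)
    moreover have "matid {1..n} \<in> K" using sec_id G_id unfolding K_def by (metis image_eqI)
    ultimately show "{\<one>\<^bsub>AutGr q {1..n}\<^esub>} \<subseteq> Hs \<inter> K" by (simp add: AutGr_one)
  qed
  show "Hs <#>\<^bsub>AutGr q {1..n}\<^esub> K = carrier (AutGr q {1..n})"
  proof
    show "Hs <#>\<^bsub>AutGr q {1..n}\<^esub> K \<subseteq> carrier (AutGr q {1..n})"
    proof
      fix x assume "x \<in> Hs <#>\<^bsub>AutGr q {1..n}\<^esub> K"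
      then obtain h k where hk: "h \<in> Hs" "k \<in> K" "x = h \<otimes>\<^bsub>AutGr q {1..n}\<^esub> k" by (auto simp: set_mult_def)
      have hc: "h \<in> carrier (AutGr q {1..n})" using hk(1) by (simp add: Hs_def AutGr_carrier)
      have kc: "k \<in> carrier (AutGr q {1..n})" using hk(2) subgroup.subset[OF sK] by blast
      have "h \<otimes>\<^bsub>AutGr q {1..n}\<^esub> k \<in> carrier (AutGr q {1..n})"
        by (rule monoid.m_closed[OF group.is_monoid[OF AG] hc kc])
      then show "x \<in> carrier (AutGr q {1..n})" using hk(3) by simp
    qed
  next
    show "carrier (AutGr q {1..n}) \<subseteq> Hs <#>\<^bsub>AutGr q {1..n}\<^esub> K"
    proof
      fix g assume g: "g \<in> carrier (AutGr q {1..n})"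
      have gA: "g \<in> AutGr_set q {1..n}" using g by (simp add: AutGr_carrier)
      define \<sigma> where "\<sigma> = sig g"
      have s: "\<sigma> \<in> Gperm_set n q P" unfolding \<sigma>_def by (rule sig_Gperm[OF gA])
      define k where "k = sec \<sigma>"
      have kK: "k \<in> K" unfolding k_def K_def using s by blast
      have kc: "k \<in> carrier (AutGr q {1..n})" unfolding k_def using sec_AG[OF s] by (simp add: AutGr_carrier)
      define h where "h = g \<otimes>\<^bsub>AutGr q {1..n}\<^esub> inv\<^bsub>AutGr q {1..n}\<^esub> k"
      have ikc: "inv\<^bsub>AutGr q {1..n}\<^esub> k \<in> carrier (AutGr q {1..n})" by (rule group.inv_closed[OF AG kc])
      have hc: "h \<in> carrier (AutGr q {1..n})" unfolding h_def by (rule monoid.m_closed[OF group.is_monoid[OF AG] g ikc])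
      have "sig h = sig g \<otimes>\<^bsub>Gperm n q P\<^esub> sig (inv\<^bsub>AutGr q {1..n}\<^esub> k)"
        unfolding h_def by (rule group_hom.hom_mult[OF sig_group_hom g ikc])
      also have "sig (inv\<^bsub>AutGr q {1..n}\<^esub> k) = inv\<^bsub>Gperm n q P\<^esub> (sig k)"
        by (rule group_hom.hom_inv[OF sig_group_hom kc])
      also have "sig k = \<sigma>" unfolding k_def by (rule sig_sec[OF s])
      also have "sig g \<otimes>\<^bsub>Gperm n q P\<^esub> inv\<^bsub>Gperm n q P\<^esub> \<sigma> = \<one>\<^bsub>Gperm n q P\<^esub>"
        unfolding \<sigma>_def by (rule group.r_inv[OF GP]) (use s in \<open>simp add: Gperm_carrier \<sigma>_def\<close>)
      finally have "sig h = id" by (simp add: Gperm_one)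
      then have hH: "h \<in> Hs" using hc by (simp add: Hs_def AutGr_carrier)
      have "h \<otimes>\<^bsub>AutGr q {1..n}\<^esub> k = g \<otimes>\<^bsub>AutGr q {1..n}\<^esub> (inv\<^bsub>AutGr q {1..n}\<^esub> k \<otimes>\<^bsub>AutGr q {1..n}\<^esub> k)"
        unfolding h_def by (rule monoid.m_assoc[OF group.is_monoid[OF AG] g ikc kc])
      also have "\<dots> = g" using group.l_inv[OF AG kc] monoid.r_one[OF group.is_monoid[OF AG] g] by simp
      finally have "h \<otimes>\<^bsub>AutGr q {1..n}\<^esub> k = g" .
      then show "g \<in> Hs <#>\<^bsub>AutGr q {1..n}\<^esub> K" using hH kK by (auto simp: set_mult_def)
    qed
  qed
  show "(AutGr q {1..n})\<lparr>carrier := Hs\<rparr> \<cong> product_group P (\<lambda>D. AutGr q D)"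
  proof -
    have hom: "rho \<in> hom ((AutGr q {1..n})\<lparr>carrier := Hs\<rparr>) (product_group P (\<lambda>D. AutGr q D))"
      unfolding hom_def
    proof (intro CollectI conjI ballI)
      show "rho \<in> carrier ((AutGr q {1..n})\<lparr>carrier := Hs\<rparr>) \<rightarrow> carrier (product_group P (\<lambda>D. AutGr q D))"
        using rho_AG by (auto simp: rho_def AutGr_carrier)
    next
      fix x y assume x: "x \<in> carrier ((AutGr q {1..n})\<lparr>carrier := Hs\<rparr>)" and y: "y \<in> carrier ((AutGr q {1..n})\<lparr>carrier := Hs\<rparr>)"
      then have x': "x \<in> Hs" and y': "y \<in> Hs" by auto
      show "rho (x \<otimes>\<^bsub>(AutGr q {1..n})\<lparr>carrier := Hs\<rparr>\<^esub> y) = rho x \<otimes>\<^bsub>product_group P (\<lambda>D. AutGr q D)\<^esub> rho y"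
      proof
        fix D
        show "rho (x \<otimes>\<^bsub>(AutGr q {1..n})\<lparr>carrier := Hs\<rparr>\<^esub> y) D = (rho x \<otimes>\<^bsub>product_group P (\<lambda>D. AutGr q D)\<^esub> rho y) D"
          using restr_mult[OF x' y'] by (cases "D \<in> P") (simp_all add: AutGr_mult, simp add: rho_def)
      qed
    qed
    have bij: "bij_betw rho Hs (\<Pi>\<^sub>E D\<in>P. AutGr_set q D)"
      unfolding bij_betw_def
    proof
      show "inj_on rho Hs" by (rule rho_inj)
      show "rho ` Hs = (\<Pi>\<^sub>E D\<in>P. AutGr_set q D)"
      proof
        show "rho ` Hs \<subseteq> (\<Pi>\<^sub>E D\<in>P. AutGr_set q D)" using rho_AG by (auto simp: rho_def)
        show "(\<Pi>\<^sub>E D\<in>P. AutGr_set q D) \<subseteq> rho ` Hs"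
        proof
          fix f assume f: "f \<in> (\<Pi>\<^sub>E D\<in>P. AutGr_set q D)"
          show "f \<in> rho ` Hs" using glue_H[OF f] by (metis image_eqI)
        qed
      qed
    qed
    have "rho \<in> Group.iso ((AutGr q {1..n})\<lparr>carrier := Hs\<rparr>) (product_group P (\<lambda>D. AutGr q D))"
      unfolding Group.iso_def using hom bij by (simp add: AutGr_carrier)
    then show ?thesis unfolding is_iso_def by blast
  qed
  show "(AutGr q {1..n})\<lparr>carrier := K\<rparr> \<cong> Gperm n q P"
  proof -
    have KA: "K \<subseteq> AutGr_set q {1..n}" using sec_AG by (auto simp: K_def)
    have hom: "sig \<in> hom ((AutGr q {1..n})\<lparr>carrier := K\<rparr>) (Gperm n q P)"
      unfolding hom_def
    proof (intro CollectI conjI ballI)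
      show "sig \<in> carrier ((AutGr q {1..n})\<lparr>carrier := K\<rparr>) \<rightarrow> carrier (Gperm n q P)"
        using sig_Gperm KA by (auto simp: Gperm_carrier)
    next
      fix x y assume x: "x \<in> carrier ((AutGr q {1..n})\<lparr>carrier := K\<rparr>)" and y: "y \<in> carrier ((AutGr q {1..n})\<lparr>carrier := K\<rparr>)"
      then have "x \<in> AutGr_set q {1..n}" "y \<in> AutGr_set q {1..n}" using KA by auto
      then show "sig (x \<otimes>\<^bsub>(AutGr q {1..n})\<lparr>carrier := K\<rparr>\<^esub> y) = sig x \<otimes>\<^bsub>Gperm n q P\<^esub> sig y"
        using sig_mult by (simp add: AutGr_mult Gperm_mult)
    qed
    have bij: "bij_betw sig K (Gperm_set n q P)"
      unfolding bij_betw_def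
    proof
      show "inj_on sig K"
      proof (rule inj_onI)
        fix x y assume "x \<in> K" "y \<in> K" and e: "sig x = sig y"
        then obtain \<sigma> \<rho> where s: "\<sigma> \<in> Gperm_set n q P" "x = sec \<sigma>" "\<rho> \<in> Gperm_set n q P" "y = sec \<rho>"
          unfolding K_def by blast
        then have "\<sigma> = \<rho>" using e sig_sec by metis
        then show "x = y" using s by simp
      qed
      show "sig ` K = Gperm_set n q P"
      proof
        show "sig ` K \<subseteq> Gperm_set n q P" unfolding K_def using sig_sec by (auto simp: image_iff)
        show "Gperm_set n q P \<subseteq> sig ` K"
        proof
          fix \<sigma> assume s: "\<sigma> \<in> Gperm_set n q P"
          then have "sec \<sigma> \<in> K" unfolding K_def by blast
          moreover have "sig (sec \<sigma>) = \<sigma>" by (rule sig_sec[OF s])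
          ultimately show "\<sigma> \<in> sig ` K" by (metis image_eqI)
        qed
      qed
    qed
    have "sig \<in> Group.iso ((AutGr q {1..n})\<lparr>carrier := K\<rparr>) (Gperm n q P)"
      unfolding Group.iso_def using hom bij by (simp add: Gperm_carrier)
    then show ?thesis unfolding is_iso_def by blast
  qed
qed

end

theorem corollary2p16:
  fixes q :: "nat \<Rightarrow> nat \<Rightarrow> 'k::field" and n :: nat and P :: "nat set set"
  assumes "qpm {1..n} q"
    and "partition_on {1..n} P"
    and "refined_by_Bq n q P"
    and "\<forall>D\<in>P. \<forall>E\<in>P. D \<noteq> E \<longrightarrow> (\<exists>c. \<forall>i\<in>D. \<forall>j\<in>E. q i j = c)"
    and "\<forall>D\<in>P. \<forall>E\<in>P. \<forall>F\<in>P. D \<noteq> E \<longrightarrow>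
           (\<forall>i\<in>D. \<forall>j\<in>E. \<forall>a\<in>F. \<forall>b\<in>F. q i j \<noteq> q a b)"
  shows "\<exists>H K. H \<lhd> AutGr q {1..n} \<and> subgroup K (AutGr q {1..n})
     \<and> H \<inter> K = {\<one>\<^bsub>AutGr q {1..n}\<^esub>}
     \<and> H <#>\<^bsub>AutGr q {1..n}\<^esub> K = carrier (AutGr q {1..n})
     \<and> (AutGr q {1..n})\<lparr>carrier := H\<rparr> \<cong> product_group P (\<lambda>D. AutGr q D)
     \<and> (AutGr q {1..n})\<lparr>carrier := K\<rparr> \<cong> Gperm n q P"
proof -
  interpret mctx q n P by (unfold_locales) (use assms in auto)
  show ?thesis by (rule main_result)
qed

end
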